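(* Let $\phi$ be a windowed timed CEL formula. Then there exists a timed CEA $\mathcal{T}$ with two clocks that has synchronous resets such that $[\![\mathcal{T}]\!](\bar S)=[\![\phi]\!](\bar S)$ for every timed stream $\bar S$.
   Context: Events and streams. Events are partial finite-domain maps from attribute names to data values, each with a type in a set $\mathbf{T}$ of event types; predicates are sets of events from a fixed set $\mathbf{P}$ closed under intersection and complement and containing all events. A timed stream is $\bar S=(e_1,t_1)\cdots(e_n,t_n)$, $t_i\in\mathbb{Q}_{\ge0}$ strictly increasing. Fix a finite variable set $\mathbf{X}\supseteq\mathbf{T}$. A complex event is $C=(i,j,\mu)$, $1\le i\le j\le n$, $\mu:\mathbf{X}\to2^{\{i,\dots,j\}}$; $\mathrm{start}(C)=i$, $\mathrm{end}(C)=j$, $C(X)=\mu(X)$; $C_1\cup C_2$ takes min start, max end, pointwise union; $\pi_L(C)$ keeps start/end and $C(X)$ for $X\in L$, empty otherwise. Timed CEL syntax: $\varphi::=R\mid\varphi\ \mathrm{AS}\ X\mid\varphi\ \mathrm{FILTER}\ X[P]\mid\varphi\ \mathrm{OR}\ \varphi\mid\varphi\ \mathrm{AND}\ \varphi\mid\varphi;\varphi\mid\varphi:\varphi\mid\varphi+\mid\varphi\oplus\mid\pi_L(\varphi)\mid\langle\varphi\rangle_I\mid\varphi;_I\varphi\mid\varphi:_I\varphi\mid\varphi+_I\mid\varphi\oplus_I$, $I$ an interval of $\mathbb{Q}_{\ge0}$. The last five are the time operators; the others are CEL operators. Semantics: $[\![R]\!]=\{(i,i,\mu):\mathrm{type}(e_i)=R,\mu(R)=\{i\},\mu(X)=\emptyset\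 (X\ne R)\}$; $\mathrm{AS}\ X$: all $C$ with same start/end as some $C'\in[\![\varphi]\!]$, $C(X)=\bigcup_YC'(Y)$, other variables unchanged; FILTER keeps $C$ with every event indexed by $C(X)$ in $P$; OR/AND = union/intersection; $\varphi_1;\varphi_2$: $C_1\cup C_2$ with $C_k\in[\![\varphi_k]\!]$, $\mathrm{end}(C_1)<\mathrm{start}(C_2)$; $\varphi_1:\varphi_2$: same with $\mathrm{end}(C_1)+1=\mathrm{start}(C_2)$; $\varphi+=\varphi\cup(\varphi;\varphi+)$, $\varphi\oplus=\varphi\cup(\varphi:\varphi\oplus)$; $\pi_L$ projects each output; $\langle\varphi\rangle_I$ keeps $C$ with $t_{\mathrm{end}(C)}-t_{\mathrm{start}(C)}\in I$; $;_I$, $:_I$ are $;$, $:$ additionally requiring $t_{\mathrm{start}(C_2)}-t_{\mathrm{end}(C_1)}\in I$; $\varphi+_I=\varphi\cup(\varphi;_I(\varphi+_I))$, $\varphi\oplus_I=\varphi\cup(\varphi:_I(\varphi\oplus_I))$. A timed CEL formula is simple if it contains no projection $\pi_L$ and no time window $\langle\cdot\rangle_I$ as a subformula. A timed CEL formula is windowed if generated by $\phi::=\varphi\mid\psi\mid\phi\ \mathrm{AS}\ X\mid\phi\ \mathrm{FILTER}\ X[P]\mid\phi\ \mathrm{OR}\ \phi\mid\phi\ \mathrm{AND}\ \phi\mid\langle\phi\rangle_I$ where $\varphi$ is a formula with no time operators and $\psi$ is a simple timed CEL formula. Timed CEA. Clock conditions over a finite clock set $\mathbf{Z}$: $\gamma::=\mathrm{true}\mid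 z\sim c\ (\sim\in\{=,<,\le,\ge,>\},c\in\mathbb{Q}_{\ge0})\mid\gamma\wedge\gamma\mid\gamma\vee\gamma$. Clock valuations are partial maps $\nu:\mathbf{Z}\to\mathbb{R}_{\ge0}$; $\nu\models\gamma$ iff all clocks of $\gamma$ are defined and $\gamma$ holds; $\nu+t$ shifts defined clocks; $\mathrm{reset}_Z(\nu)$ sets clocks of $Z$ to $0$. A timed CEA is $(Q,\mathbf{P},\mathbf{X},\mathbf{Z},\Delta,q_0,F)$ with $\Delta\subseteq Q\times\mathbf{P}\times\mathcal{C}_{\mathbf{Z}}\times2^{\mathbf{X}}\times2^{\mathbf{Z}}\times Q$ finite; it has two clocks if $|\mathbf{Z}|=2$. With $\delta t_k=t_k-t_{k-1}$, $\delta t_1=t_1$, a run from $i$ to $j$ starts at $(q_0,\nu_i)$ with $\nu_i$ everywhere undefined and for each $k\in[i..j]$ uses $(p_k,P_k,\gamma_k,L_k,Z_k,p_{k+1})\in\Delta$ with $e_k\in P_k$, $\nu_k+\delta t_k\models\gamma_k$, $\nu_{k+1}=\mathrm{reset}_{Z_k}(\nu_k+\delta t_k)$; accepting if $p_{j+1}\in F$, outputting $(i,j,\mu)$ with $\mu(X)=\{k:X\in L_k\}$; $[\![\mathcal{T}]\!](\bar S)$ is the set of such outputs. $\mathcal{T}$ has synchronous resets if for every timed stream and every two runs (accepting or not) from the same $i$ to the same $j$ with the same label sequence $L_i,\dots,L_j$, the reset sets coincide: $Z_k=Z'_k$ for all $k$. *)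

theory Defs
  imports Complex_Main
begin

text \<open>A timed stream is a list of pairs (event, timestamp); positions are 1-based.\<close>
type_synonym 'ev tstream = "('ev \<times> rat) list"

definition timed_stream :: "'ev tstream \<Rightarrow> bool" where
  "timed_stream S \<longleftrightarrow> (\<forall>k < length S. 0 \<le> snd (S ! k)) \<and>
     (\<forall>k. Suc k < length S \<longrightarrow> snd (S ! k) < snd (S ! Suc k))"

definition ev :: "'ev tstream \<Rightarrow> nat \<Rightarrow> 'ev" where
  "ev S k = fst (S ! (k - 1))"

text \<open>t_k for 1 <= k <= n, and t_0 = 0 (so that delta t_1 = t_1).\<close>
definition tm :: "'ev tstream \<Rightarrow> nat \<Rightarrow> rat" where
  "tm S k = (if k = 0 then 0 else snd (S ! (k - 1)))"

definition dt :: "'ev tstream \<Rightarrow> nat \<Rightarrow> rat" where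
  "dt S k = tm S k - tm S (k - 1)"

text \<open>Ivl a ac u: lower bound a (closed iff ac), upper bound u (None = infinity,
  Some (b, bc): bound b, closed iff bc).\<close>
datatype interval = Ivl rat bool "(rat \<times> bool) option"

fun in_ivl :: "rat \<Rightarrow> interval \<Rightarrow> bool" where
  "in_ivl q (Ivl a ac u) \<longleftrightarrow> 0 \<le> q \<and> (if ac then a \<le> q else a < q) \<and>
     (case u of None \<Rightarrow> True | Some (b, bc) \<Rightarrow> (if bc then q \<le> b else q < b))"

fun ivl_wf :: "interval \<Rightarrow> bool" where
  "ivl_wf (Ivl a ac u) \<longleftrightarrow> 0 \<le> a \<and> (case u of None \<Rightarrow> True | Some (b, bc) \<Rightarrow> 0 \<le> b)"

type_synonym 'x cevent = "nat \<times> nat \<times> ('x \<Rightarrow> nat set)"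

definition cstart :: "'x cevent \<Rightarrow> nat" where "cstart C = fst C"
definition cend :: "'x cevent \<Rightarrow> nat" where "cend C = fst (snd C)"
definition cmu :: "'x cevent \<Rightarrow> 'x \<Rightarrow> nat set" where "cmu C = snd (snd C)"

definition cunion :: "'x cevent \<Rightarrow> 'x cevent \<Rightarrow> 'x cevent" where
  "cunion C1 C2 = (min (cstart C1) (cstart C2), max (cend C1) (cend C2),
                   \<lambda>X. cmu C1 X \<union> cmu C2 X)"

definition cproj :: "'x set \<Rightarrow> 'x cevent \<Rightarrow> 'x cevent" where
  "cproj L C = (cstart C, cend C, \<lambda>X. if X \<in> L then cmu C X else {})"

definition cas :: "'x \<Rightarrow> 'x cevent \<Rightarrow> 'x cevent" where
  "cas X C = (cstart C, cend C, (cmu C)(X := (\<Union>Y. cmu C Y)))"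

definition seqop :: "('x cevent \<Rightarrow> 'x cevent \<Rightarrow> bool) \<Rightarrow> 'x cevent set \<Rightarrow> 'x cevent set \<Rightarrow> 'x cevent set" where
  "seqop c A B = {cunion C1 C2 | C1 C2. C1 \<in> A \<and> C2 \<in> B \<and> c C1 C2}"

datatype ('x, 'ev) tcel =
    CAtom 'x
  | CAs "('x, 'ev) tcel" 'x
  | CFilter "('x, 'ev) tcel" 'x "'ev set"
  | COr "('x, 'ev) tcel" "('x, 'ev) tcel"
  | CAnd "('x, 'ev) tcel" "('x, 'ev) tcel"
  | CSeq "('x, 'ev) tcel" "('x, 'ev) tcel"
  | CNext "('x, 'ev) tcel" "('x, 'ev) tcel"
  | CPlus "('x, 'ev) tcel"
  | COPlus "('x, 'ev) tcel"
  | CProj "'x set" "('x, 'ev) tcel"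
  | CWin "('x, 'ev) tcel" interval
  | CSeqI "('x, 'ev) tcel" interval "('x, 'ev) tcel"
  | CNextI "('x, 'ev) tcel" interval "('x, 'ev) tcel"
  | CPlusI "('x, 'ev) tcel" interval
  | COPlusI "('x, 'ev) tcel" interval

definition seq_c :: "'x cevent \<Rightarrow> 'x cevent \<Rightarrow> bool" where
  "seq_c C1 C2 \<longleftrightarrow> cend C1 < cstart C2"

definition next_c :: "'x cevent \<Rightarrow> 'x cevent \<Rightarrow> bool" where
  "next_c C1 C2 \<longleftrightarrow> cend C1 + 1 = cstart C2"

definition gap_in :: "'ev tstream \<Rightarrow> interval \<Rightarrow> 'x cevent \<Rightarrow> 'x cevent \<Rightarrow> bool" where
  "gap_in S I C1 C2 \<longleftrightarrow> in_ivl (tm S (cstart C2) - tm S (cend C1)) I"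

primrec cel_sem :: "('ev \<Rightarrow> 'x) \<Rightarrow> 'ev tstream \<Rightarrow> ('x, 'ev) tcel \<Rightarrow> 'x cevent set" where
  "cel_sem tp S (CAtom R) =
     {(i, i, \<lambda>X. if X = R then {i} else {}) | i. 1 \<le> i \<and> i \<le> length S \<and> tp (ev S i) = R}"
| "cel_sem tp S (CAs f X) = cas X ` cel_sem tp S f"
| "cel_sem tp S (CFilter f X P) = {C \<in> cel_sem tp S f. \<forall>k \<in> cmu C X. ev S k \<in> P}"
| "cel_sem tp S (COr f g) = cel_sem tp S f \<union> cel_sem tp S g"
| "cel_sem tp S (CAnd f g) = cel_sem tp S f \<inter> cel_sem tp S g"
| "cel_sem tp S (CSeq f g) = seqop seq_c (cel_sem tp S f) (cel_sem tp S g)"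
| "cel_sem tp S (CNext f g) = seqop next_c (cel_sem tp S f) (cel_sem tp S g)"
| "cel_sem tp S (CPlus f) = lfp (\<lambda>Y. cel_sem tp S f \<union> seqop seq_c (cel_sem tp S f) Y)"
| "cel_sem tp S (COPlus f) = lfp (\<lambda>Y. cel_sem tp S f \<union> seqop next_c (cel_sem tp S f) Y)"
| "cel_sem tp S (CProj L f) = cproj L ` cel_sem tp S f"
| "cel_sem tp S (CWin f I) = {C \<in> cel_sem tp S f. in_ivl (tm S (cend C) - tm S (cstart C)) I}"
| "cel_sem tp S (CSeqI f I g) =
     seqop (\<lambda>C1 C2. seq_c C1 C2 \<and> gap_in S I C1 C2) (cel_sem tp S f) (cel_sem tp S g)"
| "cel_sem tp S (CNextI f I g) =
     seqop (\<lambda>C1 C2. next_c C1 C2 \<and> gap_in S I C1 C2) (cel_sem tp S f) (cel_sem tp S g)"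
| "cel_sem tp S (CPlusI f I) =
     lfp (\<lambda>Y. cel_sem tp S f \<union> seqop (\<lambda>C1 C2. seq_c C1 C2 \<and> gap_in S I C1 C2) (cel_sem tp S f) Y)"
| "cel_sem tp S (COPlusI f I) =
     lfp (\<lambda>Y. cel_sem tp S f \<union> seqop (\<lambda>C1 C2. next_c C1 C2 \<and> gap_in S I C1 C2) (cel_sem tp S f) Y)"

primrec cel_wf :: "'x set \<Rightarrow> 'ev set set \<Rightarrow> ('x, 'ev) tcel \<Rightarrow> bool" where
  "cel_wf T Ps (CAtom R) \<longleftrightarrow> R \<in> T"
| "cel_wf T Ps (CAs f X) \<longleftrightarrow> cel_wf T Ps f"
| "cel_wf T Ps (CFilter f X P) \<longleftrightarrow> cel_wf T Ps f \<and> P \<in> Ps"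
| "cel_wf T Ps (COr f g) \<longleftrightarrow> cel_wf T Ps f \<and> cel_wf T Ps g"
| "cel_wf T Ps (CAnd f g) \<longleftrightarrow> cel_wf T Ps f \<and> cel_wf T Ps g"
| "cel_wf T Ps (CSeq f g) \<longleftrightarrow> cel_wf T Ps f \<and> cel_wf T Ps g"
| "cel_wf T Ps (CNext f g) \<longleftrightarrow> cel_wf T Ps f \<and> cel_wf T Ps g"
| "cel_wf T Ps (CPlus f) \<longleftrightarrow> cel_wf T Ps f"
| "cel_wf T Ps (COPlus f) \<longleftrightarrow> cel_wf T Ps f"
| "cel_wf T Ps (CProj L f) \<longleftrightarrow> cel_wf T Ps f"
| "cel_wf T Ps (CWin f I) \<longleftrightarrow> cel_wf T Ps f \<and> ivl_wf I"
| "cel_wf T Ps (CSeqI f I g) \<longleftrightarrow> cel_wf T Ps f \<and> ivl_wf I \<and> cel_wf T Ps g"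
| "cel_wf T Ps (CNextI f I g) \<longleftrightarrow> cel_wf T Ps f \<and> ivl_wf I \<and> cel_wf T Ps g"
| "cel_wf T Ps (CPlusI f I) \<longleftrightarrow> cel_wf T Ps f \<and> ivl_wf I"
| "cel_wf T Ps (COPlusI f I) \<longleftrightarrow> cel_wf T Ps f \<and> ivl_wf I"

primrec no_time :: "('x, 'ev) tcel \<Rightarrow> bool" where
  "no_time (CAtom R) \<longleftrightarrow> True"
| "no_time (CAs f X) \<longleftrightarrow> no_time f"
| "no_time (CFilter f X P) \<longleftrightarrow> no_time f"
| "no_time (COr f g) \<longleftrightarrow> no_time f \<and> no_time g"
| "no_time (CAnd f g) \<longleftrightarrow> no_time f \<and> no_time g"
| "no_time (CSeq f g) \<longleftrightarrow> no_time f \<and> no_time g"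
| "no_time (CNext f g) \<longleftrightarrow> no_time f \<and> no_time g"
| "no_time (CPlus f) \<longleftrightarrow> no_time f"
| "no_time (COPlus f) \<longleftrightarrow> no_time f"
| "no_time (CProj L f) \<longleftrightarrow> no_time f"
| "no_time (CWin f I) \<longleftrightarrow> False"
| "no_time (CSeqI f I g) \<longleftrightarrow> False"
| "no_time (CNextI f I g) \<longleftrightarrow> False"
| "no_time (CPlusI f I) \<longleftrightarrow> False"
| "no_time (COPlusI f I) \<longleftrightarrow> False"

primrec simple :: "('x, 'ev) tcel \<Rightarrow> bool" where
  "simple (CAtom R) \<longleftrightarrow> True"
| "simple (CAs f X) \<longleftrightarrow> simple f"
| "simple (CFilter f X P) \<longleftrightarrow> simple f"
| "simple (COr f g) \<longleftrightarrow> simple f \<and> simple g"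
| "simple (CAnd f g) \<longleftrightarrow> simple f \<and> simple g"
| "simple (CSeq f g) \<longleftrightarrow> simple f \<and> simple g"
| "simple (CNext f g) \<longleftrightarrow> simple f \<and> simple g"
| "simple (CPlus f) \<longleftrightarrow> simple f"
| "simple (COPlus f) \<longleftrightarrow> simple f"
| "simple (CProj L f) \<longleftrightarrow> False"
| "simple (CWin f I) \<longleftrightarrow> False"
| "simple (CSeqI f I g) \<longleftrightarrow> simple f \<and> simple g"
| "simple (CNextI f I g) \<longleftrightarrow> simple f \<and> simple g"
| "simple (CPlusI f I) \<longleftrightarrow> simple f"
| "simple (COPlusI f I) \<longleftrightarrow> simple f"

inductive windowed :: "('x, 'ev) tcel \<Rightarrow> bool" where
  w_notime: "no_time f \<Longrightarrow> windowed f"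
| w_simple: "simple f \<Longrightarrow> windowed f"
| w_as: "windowed f \<Longrightarrow> windowed (CAs f X)"
| w_filter: "windowed f \<Longrightarrow> windowed (CFilter f X P)"
| w_or: "windowed f \<Longrightarrow> windowed g \<Longrightarrow> windowed (COr f g)"
| w_and: "windowed f \<Longrightarrow> windowed g \<Longrightarrow> windowed (CAnd f g)"
| w_win: "windowed f \<Longrightarrow> windowed (CWin f I)"

datatype cmp = CmpEq | CmpLt | CmpLe | CmpGe | CmpGt

datatype 'z guard = GTrue | GCmp 'z cmp rat | GAnd "'z guard" "'z guard" | GOr "'z guard" "'z guard"

type_synonym 'z valuation = "'z \<Rightarrow> real option"

fun cmp_holds :: "cmp \<Rightarrow> real \<Rightarrow> real \<Rightarrow> bool" where
  "cmp_holds CmpEq v c \<longleftrightarrow> v = c"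
| "cmp_holds CmpLt v c \<longleftrightarrow> v < c"
| "cmp_holds CmpLe v c \<longleftrightarrow> v \<le> c"
| "cmp_holds CmpGe v c \<longleftrightarrow> v \<ge> c"
| "cmp_holds CmpGt v c \<longleftrightarrow> v > c"

primrec gclocks :: "'z guard \<Rightarrow> 'z set" where
  "gclocks GTrue = {}"
| "gclocks (GCmp z op c) = {z}"
| "gclocks (GAnd g h) = gclocks g \<union> gclocks h"
| "gclocks (GOr g h) = gclocks g \<union> gclocks h"

primrec gconsts_ok :: "'z guard \<Rightarrow> bool" where
  "gconsts_ok GTrue = True"
| "gconsts_ok (GCmp z op c) = (0 \<le> c)"
| "gconsts_ok (GAnd g h) = (gconsts_ok g \<and> gconsts_ok h)"
| "gconsts_ok (GOr g h) = (gconsts_ok g \<and> gconsts_ok h)"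

primrec gholds :: "'z valuation \<Rightarrow> 'z guard \<Rightarrow> bool" where
  "gholds \<nu> GTrue = True"
| "gholds \<nu> (GCmp z op c) = (case \<nu> z of None \<Rightarrow> False | Some v \<Rightarrow> cmp_holds op v (of_rat c))"
| "gholds \<nu> (GAnd g h) = (gholds \<nu> g \<and> gholds \<nu> h)"
| "gholds \<nu> (GOr g h) = (gholds \<nu> g \<or> gholds \<nu> h)"

definition models :: "'z valuation \<Rightarrow> 'z guard \<Rightarrow> bool" where
  "models \<nu> g \<longleftrightarrow> (\<forall>z \<in> gclocks g. \<nu> z \<noteq> None) \<and> gholds \<nu> g"

definition vshift :: "'z valuation \<Rightarrow> real \<Rightarrow> 'z valuation" where
  "vshift \<nu> t = (\<lambda>z. map_option (\<lambda>v. v + t) (\<nu> z))"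

definition vreset :: "'z set \<Rightarrow> 'z valuation \<Rightarrow> 'z valuation" where
  "vreset Z \<nu> = (\<lambda>z. if z \<in> Z then Some 0 else \<nu> z)"

type_synonym ('q, 'z, 'x, 'ev) trans = "'q \<times> 'ev set \<times> 'z guard \<times> 'x set \<times> 'z set \<times> 'q"

record ('q, 'z, 'x, 'ev) tcea =
  states :: "'q set"
  clocks :: "'z set"
  delta :: "('q, 'z, 'x, 'ev) trans set"
  init :: 'q
  final :: "'q set"

definition tsrc :: "('q, 'z, 'x, 'ev) trans \<Rightarrow> 'q" where "tsrc t = fst t"
definition tpred :: "('q, 'z, 'x, 'ev) trans \<Rightarrow> 'ev set" where "tpred t = fst (snd t)"
definition tguard :: "('q, 'z, 'x, 'ev) trans \<Rightarrow> 'z guard" where "tguard t = fst (snd (snd t))"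
definition tlabels :: "('q, 'z, 'x, 'ev) trans \<Rightarrow> 'x set" where "tlabels t = fst (snd (snd (snd t)))"
definition tresets :: "('q, 'z, 'x, 'ev) trans \<Rightarrow> 'z set" where "tresets t = fst (snd (snd (snd (snd t))))"
definition ttgt :: "('q, 'z, 'x, 'ev) trans \<Rightarrow> 'q" where "ttgt t = snd (snd (snd (snd (snd t))))"

definition tcea_wf :: "'ev set set \<Rightarrow> ('q, 'z, 'x, 'ev) tcea \<Rightarrow> bool" where
  "tcea_wf Ps A \<longleftrightarrow> finite (states A) \<and> finite (clocks A) \<and> finite (delta A) \<and>
     init A \<in> states A \<and> final A \<subseteq> states A \<and>
     (\<forall>t \<in> delta A. tsrc t \<in> states A \<and> ttgt t \<in> states A \<and> tpred t \<in> Ps \<and>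
        gclocks (tguard t) \<subseteq> clocks A \<and> gconsts_ok (tguard t) \<and> tresets t \<subseteq> clocks A)"

text \<open>Valuation before reading position i+m along a run rho (indexed by position)
  started at position i.\<close>
primrec vals :: "'ev tstream \<Rightarrow> (nat \<Rightarrow> ('q, 'z, 'x, 'ev) trans) \<Rightarrow> nat \<Rightarrow> nat \<Rightarrow> 'z valuation" where
  "vals S \<rho> i 0 = (\<lambda>_. None)"
| "vals S \<rho> i (Suc m) = vreset (tresets (\<rho> (i + m))) (vshift (vals S \<rho> i m) (of_rat (dt S (i + m))))"

text \<open>rho k is the transition used at position k, for k in [i..j].\<close>
definition is_run :: "('q, 'z, 'x, 'ev) tcea \<Rightarrow> 'ev tstream \<Rightarrow> nat \<Rightarrow> nat \<Rightarrow>
                       (nat \<Rightarrow> ('q, 'z, 'x, 'ev) trans) \<Rightarrow> bool" where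
  "is_run A S i j \<rho> \<longleftrightarrow> 1 \<le> i \<and> i \<le> j \<and> j \<le> length S \<and> tsrc (\<rho> i) = init A \<and>
     (\<forall>k \<in> {i..j}. \<rho> k \<in> delta A \<and> ev S k \<in> tpred (\<rho> k) \<and>
         models (vshift (vals S \<rho> i (k - i)) (of_rat (dt S k))) (tguard (\<rho> k))) \<and>
     (\<forall>k \<in> {i..<j}. ttgt (\<rho> k) = tsrc (\<rho> (Suc k)))"

definition run_output :: "nat \<Rightarrow> nat \<Rightarrow> (nat \<Rightarrow> ('q, 'z, 'x, 'ev) trans) \<Rightarrow> 'x cevent" where
  "run_output i j \<rho> = (i, j, \<lambda>X. {k \<in> {i..j}. X \<in> tlabels (\<rho> k)})"

definition cea_sem :: "('q, 'z, 'x, 'ev) tcea \<Rightarrow> 'ev tstream \<Rightarrow> 'x cevent set" where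
  "cea_sem A S = {run_output i j \<rho> | i j \<rho>. is_run A S i j \<rho> \<and> ttgt (\<rho> j) \<in> final A}"

definition sync_resets :: "('q, 'z, 'x, 'ev) tcea \<Rightarrow> bool" where
  "sync_resets A \<longleftrightarrow> (\<forall>S i j \<rho> \<rho>'. timed_stream S \<and> is_run A S i j \<rho> \<and> is_run A S i j \<rho>' \<and>
       (\<forall>k \<in> {i..j}. tlabels (\<rho> k) = tlabels (\<rho>' k)) \<longrightarrow>
       (\<forall>k \<in> {i..j}. tresets (\<rho> k) = tresets (\<rho>' k)))"

end

theory Submission
  imports Defs "HOL-Library.Nat_Bijection"
begin

datatype ('x,'ev) tr = Tr (sr: nat) (pr: "'ev set") (gr: "interval list") (lr: "'x set") (tg: nat)
datatype ('x,'ev) aut = Aut (trs: "('x,'ev) tr set") (fins: "(nat \<times> interval list) set")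

fun path :: "('x,'ev) tr set \<Rightarrow> nat \<Rightarrow> ('x,'ev) tr list \<Rightarrow> nat \<Rightarrow> bool" where
  "path T q [] q' \<longleftrightarrow> q = q'"
| "path T q (t#ts) q' \<longleftrightarrow> t \<in> T \<and> sr t = q \<and> path T (tg t) ts q'"

definition gcond :: "'ev tstream \<Rightarrow> nat \<Rightarrow> nat option \<Rightarrow> interval list \<Rightarrow> bool" where
  "gcond S k p G \<longleftrightarrow> G = [] \<or> (\<exists>p'. p = Some p' \<and> (\<forall>I\<in>set G. in_ivl (tm S k - tm S p') I))"

fun rok :: "'ev tstream \<Rightarrow> nat \<Rightarrow> nat option \<Rightarrow> ('x,'ev) tr list \<Rightarrow> bool" where
  "rok S k p [] = True"
| "rok S k p (t#ts) = (ev S k \<in> pr t \<and> gcond S k p (gr t) \<and>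
      rok S (Suc k) (if lr t = {} then p else Some k) ts)"

fun lastp :: "nat \<Rightarrow> nat option \<Rightarrow> ('x,'ev) tr list \<Rightarrow> nat option" where
  "lastp k p [] = p"
| "lastp k p (t#ts) = lastp (Suc k) (if lr t = {} then p else Some k) ts"

fun outmu :: "nat \<Rightarrow> ('x,'ev) tr list \<Rightarrow> 'x \<Rightarrow> nat set" where
  "outmu k [] = (\<lambda>X. {})"
| "outmu k (t#ts) = (\<lambda>X. (if X \<in> lr t then {k} else {}) \<union> outmu (Suc k) ts X)"

definition acc :: "('x,'ev) aut \<Rightarrow> 'ev tstream \<Rightarrow> nat \<Rightarrow> ('x,'ev) tr list \<Rightarrow> bool" where
  "acc A S i ts \<longleftrightarrow> ts \<noteq> [] \<and> 1 \<le> i \<and> i + length ts \<le> Suc (length S) \<and> rok S i None ts \<and>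
     (\<exists>q Is. path (trs A) 0 ts q \<and> (q,Is) \<in> fins A \<and>
        (\<forall>I\<in>set Is. in_ivl (tm S (i + length ts - 1) - tm S i) I))"

definition lang :: "('x,'ev) aut \<Rightarrow> 'ev tstream \<Rightarrow> 'x cevent set" where
  "lang A S = {(i, i + length ts - 1, outmu i ts) | i ts. acc A S i ts}"

lemma path_append[simp]: "path T q (xs @ ys) q' \<longleftrightarrow> (\<exists>r. path T q xs r \<and> path T r ys q')"
  by (induction xs arbitrary: q) auto

lemma rok_append[simp]: "rok S k p (xs @ ys) \<longleftrightarrow> rok S k p xs \<and> rok S (k + length xs) (lastp k p xs) ys"
  by (induction xs arbitrary: k p) auto

lemma lastp_append[simp]: "lastp k p (xs @ ys) = lastp (k + length xs) (lastp k p xs) ys"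
  by (induction xs arbitrary: k p) auto

lemma outmu_append[simp]: "outmu k (xs @ ys) X = outmu k xs X \<union> outmu (k + length xs) ys X"
  by (induction xs arbitrary: k) auto

lemma outmu_nth: "n \<in> outmu k ts X \<longleftrightarrow> (k \<le> n \<and> n < k + length ts \<and> X \<in> lr (ts ! (n - k)))"
proof (induction ts arbitrary: k)
  case Nil then show ?case by simp
next
  case (Cons t ts)
  show ?case
  proof (cases "n = k")
    case True then show ?thesis using Cons by auto
  next
    case False
    then have "(n \<in> outmu (Suc k) ts X) = (n \<in> outmu k (t#ts) X)" by auto
    moreover have "(t#ts) ! (n-k) = ts ! (n - Suc k)" if "k < n" using that
      by (simp add: nth_Cons')
    ultimately show ?thesis using Cons[of "Suc k"] False by auto
  qed
qed

lemma outmu_range: "outmu k ts X \<subseteq> {k..<k + length ts}"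
  using outmu_nth by fastforce

definition gfl :: "('x,'ev) tr list \<Rightarrow> bool" where "gfl ts \<longleftrightarrow> (\<forall>t\<in>set ts. gr t = [])"

lemma rok_gfree: "gfl ts \<Longrightarrow> rok S k p ts = rok S k p' ts"
  by (induction ts arbitrary: k p p') (auto simp: gfl_def gcond_def)

lemma rok_indep_lab: "lr t \<noteq> {} \<Longrightarrow> gr t = [] \<Longrightarrow> rok S k p (t#ts) = rok S k p' (t#ts)"
  by (auto simp: gcond_def)

lemma path_set: "path T q ts q' \<Longrightarrow> set ts \<subseteq> T"
  by (induction ts arbitrary: q) auto

lemma path_map:
  assumes "\<forall>t\<in>T. sr (f t) = r (sr t) \<and> tg (f t) = r (tg t)"
  shows "path T q ts q' \<Longrightarrow> path (f ` T) (r q) (map f ts) (r q')"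
  using assms by (induction ts arbitrary: q) auto

lemma path_map_inv:
  assumes "inj r" "\<forall>t\<in>T. sr (f t) = r (sr t) \<and> tg (f t) = r (tg t)"
  shows "path (f ` T) (r q) ts q'' \<Longrightarrow> \<exists>ts0 q'. ts = map f ts0 \<and> path T q ts0 q' \<and> q'' = r q'"
proof (induction ts arbitrary: q)
  case Nil then show ?case by auto
next
  case (Cons t ts)
  then obtain t0 where t0: "t0 \<in> T" "t = f t0" "sr t = r q" "path (f ` T) (tg t) ts q''" by auto
  then have "r (sr t0) = r q" using assms(2) by auto
  then have "sr t0 = q" using assms(1) by (simp add: inj_eq)
  have "tg t = r (tg t0)" using t0 assms(2) by auto
  then obtain ts0 q' where "ts = map f ts0" "path T (tg t0) ts0 q'" "q'' = r q'"
    using Cons.IH t0(4) by metis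
  then show ?case using t0 \<open>sr t0 = q\<close> by (intro exI[of _ "t0 # ts0"]) auto
qed

lemma rok_map:
  assumes "\<forall>t\<in>set ts. pr (f t) = pr t \<and> gr (f t) = gr t \<and> (lr (f t) = {}) = (lr t = {})"
  shows "rok S k p (map f ts) = rok S k p ts"
  using assms by (induction ts arbitrary: k p) auto

lemma lastp_map:
  assumes "\<forall>t\<in>set ts. (lr (f t) = {}) = (lr t = {})"
  shows "lastp k p (map f ts) = lastp k p ts"
  using assms by (induction ts arbitrary: k p) auto

definition amap :: "(('x,'ev) tr \<Rightarrow> ('x,'ev) tr) \<Rightarrow> ('x,'ev) aut \<Rightarrow> ('x,'ev) aut" where
  "amap f A = Aut (f ` trs A) (fins A)"

lemma lang_amap:
  assumes "\<forall>t. sr (f t) = sr t \<and> tg (f t) = tg t"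
  shows "lang (amap f A) S = {(i, i + length ts - 1, outmu i (map f ts)) | i ts. ts \<noteq> [] \<and> 1 \<le> i \<and>
     i + length ts \<le> Suc (length S) \<and> rok S i None (map f ts) \<and>
     (\<exists>q Is. path (trs A) 0 ts q \<and> (q,Is) \<in> fins A \<and>
        (\<forall>I\<in>set Is. in_ivl (tm S (i + length ts - 1) - tm S i) I))}" (is "?L = ?R")
proof
  show "?L \<subseteq> ?R"
  proof
    fix C assume "C \<in> ?L"
    then obtain i ts q Is where C: "C = (i, i + length ts - 1, outmu i ts)" "ts \<noteq> []" "1 \<le> i"
      "i + length ts \<le> Suc (length S)" "rok S i None ts" "path (f ` trs A) 0 ts q" "(q,Is) \<in> fins A"
      "\<forall>I\<in>set Is. in_ivl (tm S (i + length ts - 1) - tm S i) I"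
      unfolding lang_def acc_def amap_def by auto
    obtain ts0 q' where "ts = map f ts0" "path (trs A) 0 ts0 q'" "q = q'"
      using path_map_inv[of id "trs A" f 0 ts q] C(6) assms by auto
    then show "C \<in> ?R" using C by (intro CollectI exI[of _ i] exI[of _ ts0]) auto
  qed
next
  show "?R \<subseteq> ?L"
  proof
    fix C assume "C \<in> ?R"
    then obtain i ts q Is where C: "C = (i, i + length ts - 1, outmu i (map f ts))" "ts \<noteq> []" "1 \<le> i"
      "i + length ts \<le> Suc (length S)" "rok S i None (map f ts)" "path (trs A) 0 ts q" "(q,Is) \<in> fins A"
      "\<forall>I\<in>set Is. in_ivl (tm S (i + length ts - 1) - tm S i) I"
      by blast
    have "path (f ` trs A) 0 (map f ts) q"
      using path_map[of "trs A" f id 0 ts q] C(6) assms by auto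
    then show "C \<in> ?L" using C unfolding lang_def acc_def amap_def
      by (intro CollectI exI[of _ i] exI[of _ "map f ts"]) auto
  qed
qed

definition relab :: "'x \<Rightarrow> ('x,'ev) tr \<Rightarrow> ('x,'ev) tr" where
  "relab X t = Tr (sr t) (pr t) (gr t) (if lr t = {} then lr t else insert X (lr t)) (tg t)"

lemma relab_simps[simp]: "sr (relab X t) = sr t" "tg (relab X t) = tg t" "pr (relab X t) = pr t"
  "gr (relab X t) = gr t" "lr (relab X t) = (if lr t = {} then lr t else insert X (lr t))"
  by (auto simp: relab_def)

lemma outmu_relab: "outmu k (map (relab X) ts) = (outmu k ts)(X := (\<Union>Y. outmu k ts Y))"
proof (induction ts arbitrary: k)
  case Nil then show ?case by auto
next
  case (Cons t ts)
  show ?case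
  proof (rule ext)
    fix Z show "outmu k (map (relab X) (t # ts)) Z = ((outmu k (t # ts))(X := \<Union>Y. outmu k (t # ts) Y)) Z"
      using Cons[of "Suc k"] by (cases "Z = X") (auto split: if_splits)
  qed
qed

lemma cas_simp: "cas X (i, j, mu) = (i, j, mu(X := (\<Union>Y. mu Y)))"
  by (simp add: cas_def cstart_def cend_def cmu_def)

lemma lang_as: "lang (amap (relab X) A) S = cas X ` lang A S"
proof -
  have r: "rok S k p (map (relab X) ts) = rok S k p ts" for k p and ts :: "('a,'b) tr list"
    by (rule rok_map) auto
  have e: "\<forall>t. sr (relab X t) = sr t \<and> tg (relab X t) = tg t" by simp
  show ?thesis
    unfolding lang_amap[OF e] r outmu_relab
  proof (intro set_eqI iffI)
    fix C assume "C \<in> {(i, i + length ts - 1, (outmu i ts)(X := \<Union>Y. outmu i ts Y)) |i ts. ts \<noteq> [] \<and>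
           1 \<le> i \<and> i + length ts \<le> Suc (length S) \<and> rok S i None ts \<and>
           (\<exists>q Is. path (trs A) 0 ts q \<and> (q, Is) \<in> fins A \<and>
                   (\<forall>I\<in>set Is. in_ivl (tm S (i + length ts - 1) - tm S i) I))}"
    then obtain i ts where "C = cas X (i, i + length ts - 1, outmu i ts)" "acc A S i ts"
      unfolding acc_def cas_simp by blast
    then show "C \<in> cas X ` lang A S" unfolding lang_def by blast
  next
    fix C assume "C \<in> cas X ` lang A S"
    then obtain i ts where "C = cas X (i, i + length ts - 1, outmu i ts)" "acc A S i ts"
      unfolding lang_def by blast
    then show "C \<in> {(i, i + length ts - 1, (outmu i ts)(X := \<Union>Y. outmu i ts Y)) |i ts. ts \<noteq> [] \<and>
           1 \<le> i \<and> i + length ts \<le> Suc (length S) \<and> rok S i None ts \<and>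
           (\<exists>q Is. path (trs A) 0 ts q \<and> (q, Is) \<in> fins A \<and>
                   (\<forall>I\<in>set Is. in_ivl (tm S (i + length ts - 1) - tm S i) I))}"
      unfolding acc_def cas_simp by blast
  qed
qed

lemma outmu_map_lr: "\<forall>t. lr (f t) = lr t \<Longrightarrow> outmu k (map f ts) = outmu k ts"
  by (induction ts arbitrary: k) auto

definition filt :: "'x \<Rightarrow> 'ev set \<Rightarrow> ('x,'ev) tr \<Rightarrow> ('x,'ev) tr" where
  "filt X P t = Tr (sr t) (if X \<in> lr t then pr t \<inter> P else pr t) (gr t) (lr t) (tg t)"

lemma filt_simps[simp]: "sr (filt X P t) = sr t" "tg (filt X P t) = tg t"
  "pr (filt X P t) = (if X \<in> lr t then pr t \<inter> P else pr t)"
  "gr (filt X P t) = gr t" "lr (filt X P t) = lr t"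
  by (auto simp: filt_def)

lemma rok_filt: "rok S k p (map (filt X P) ts) = (rok S k p ts \<and> (\<forall>n\<in>outmu k ts X. ev S n \<in> P))"
  by (induction ts arbitrary: k p) auto

lemma lang_filter: "lang (amap (filt X P) A) S = {C \<in> lang A S. \<forall>k\<in>cmu C X. ev S k \<in> P}"
proof -
  have e: "\<forall>t. sr (filt X P t) = sr t \<and> tg (filt X P t) = tg t" by simp
  have o: "outmu k (map (filt X P) ts) = outmu k ts" for k ts by (rule outmu_map_lr) simp
  have l: "lang (amap (filt X P) A) S = {(i, i + length ts - 1, outmu i ts) | i ts. ts \<noteq> [] \<and> 1 \<le> i \<and>
     i + length ts \<le> Suc (length S) \<and> (rok S i None ts \<and> (\<forall>n\<in>outmu i ts X. ev S n \<in> P)) \<and>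
     (\<exists>q Is. path (trs A) 0 ts q \<and> (q,Is) \<in> fins A \<and>
        (\<forall>I\<in>set Is. in_ivl (tm S (i + length ts - 1) - tm S i) I))}"
    using lang_amap[OF e, of A S] unfolding rok_filt o .
  show ?thesis
    unfolding l unfolding lang_def acc_def cmu_def
    by (intro set_eqI iffI) fastforce+
qed

definition prj :: "'x set \<Rightarrow> ('x,'ev) tr \<Rightarrow> ('x,'ev) tr" where
  "prj L t = Tr (sr t) (pr t) (gr t) (lr t \<inter> L) (tg t)"

lemma prj_simps[simp]: "sr (prj L t) = sr t" "tg (prj L t) = tg t"
  "pr (prj L t) = pr t" "gr (prj L t) = gr t" "lr (prj L t) = lr t \<inter> L"
  by (auto simp: prj_def)

lemma rok_prj: "gfl ts \<Longrightarrow> rok S k p (map (prj L) ts) = rok S k p' ts"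
  by (induction ts arbitrary: k p p') (auto simp: gfl_def gcond_def)

lemma outmu_prj: "outmu k (map (prj L) ts) X = (if X \<in> L then outmu k ts X else {})"
  by (induction ts arbitrary: k) auto

lemma outmu_prj': "outmu k (map (prj L) ts) = (\<lambda>X. if X \<in> L then outmu k ts X else {})"
  by (rule ext) (rule outmu_prj)

definition gfA :: "('x,'ev) aut \<Rightarrow> bool" where "gfA A \<longleftrightarrow> (\<forall>t\<in>trs A. gr t = [])"

lemma gfA_path: "gfA A \<Longrightarrow> path (trs A) q ts q' \<Longrightarrow> gfl ts"
  using path_set unfolding gfA_def gfl_def by blast

lemma cproj_simp: "cproj L (i, j, mu) = (i, j, \<lambda>X. if X \<in> L then mu X else {})"
  unfolding cproj_def cstart_def cend_def cmu_def apply simp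
  apply (rule ext) apply simp done

lemma lang_proj: assumes "gfA A" shows "lang (amap (prj L) A) S = cproj L ` lang A S"
proof -
  have e: "\<forall>t. sr (prj L t) = sr t \<and> tg (prj L t) = tg t" by simp
  show ?thesis
    unfolding lang_amap[OF e] outmu_prj'
  proof (intro set_eqI iffI)
    fix C assume "C \<in> {(i, i + length ts - 1, \<lambda>X. if X \<in> L then outmu i ts X else {}) |i ts. ts \<noteq> [] \<and>
           1 \<le> i \<and> i + length ts \<le> Suc (length S) \<and> rok S i None (map (prj L) ts) \<and>
           (\<exists>q Is. path (trs A) 0 ts q \<and> (q, Is) \<in> fins A \<and>
                   (\<forall>I\<in>set Is. in_ivl (tm S (i + length ts - 1) - tm S i) I))}"
    then obtain i ts q Is where C: "C = cproj L (i, i + length ts - 1, outmu i ts)" "ts \<noteq> []"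
           "1 \<le> i" "i + length ts \<le> Suc (length S)" "rok S i None (map (prj L) ts)"
           "path (trs A) 0 ts q" "(q, Is) \<in> fins A"
           "\<forall>I\<in>set Is. in_ivl (tm S (i + length ts - 1) - tm S i) I"
      unfolding cproj_simp by blast
    have "rok S i None ts" using rok_prj[OF gfA_path[OF assms C(6)]] C(5) by blast
    then have "acc A S i ts" using C unfolding acc_def by blast
    then show "C \<in> cproj L ` lang A S" unfolding lang_def using C(1) by blast
  next
    fix C assume "C \<in> cproj L ` lang A S"
    then obtain i ts q Is where C: "C = cproj L (i, i + length ts - 1, outmu i ts)" "ts \<noteq> []"
           "1 \<le> i" "i + length ts \<le> Suc (length S)" "rok S i None ts"
           "path (trs A) 0 ts q" "(q, Is) \<in> fins A"
           "\<forall>I\<in>set Is. in_ivl (tm S (i + length ts - 1) - tm S i) I"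
      unfolding lang_def acc_def by blast
    have "rok S i None (map (prj L) ts)" using rok_prj[OF gfA_path[OF assms C(6)]] C(5) by blast
    then show "C \<in> {(i, i + length ts - 1, \<lambda>X. if X \<in> L then outmu i ts X else {}) |i ts. ts \<noteq> [] \<and>
           1 \<le> i \<and> i + length ts \<le> Suc (length S) \<and> rok S i None (map (prj L) ts) \<and>
           (\<exists>q Is. path (trs A) 0 ts q \<and> (q, Is) \<in> fins A \<and>
                   (\<forall>I\<in>set Is. in_ivl (tm S (i + length ts - 1) - tm S i) I))}"
      using C unfolding cproj_simp by blast
  qed
qed

definition awin :: "interval \<Rightarrow> ('x,'ev) aut \<Rightarrow> ('x,'ev) aut" where
  "awin I A = Aut (trs A) ((\<lambda>(q,Is). (q, I # Is)) ` fins A)"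

lemma lang_win: "lang (awin I A) S = {C \<in> lang A S. in_ivl (tm S (cend C) - tm S (cstart C)) I}"
  unfolding lang_def acc_def awin_def cend_def cstart_def by fastforce

definition aatom :: "('ev \<Rightarrow> 'x) \<Rightarrow> 'x \<Rightarrow> ('x,'ev) aut" where
  "aatom tp R = Aut {Tr 0 {e. tp e = R} [] {R} 1} {(1, [])}"

lemma path_atom: "path {Tr 0 P [] L 1} 0 ts q \<Longrightarrow> q = 1 \<Longrightarrow> ts = [Tr 0 P [] L 1]"
  by (cases ts; cases "tl ts") auto

lemma lang_atom: "lang (aatom tp R) S =
     {(i, i, \<lambda>X. if X = R then {i} else {}) | i. 1 \<le> i \<and> i \<le> length S \<and> tp (ev S i) = R}"
proof (intro set_eqI iffI)
  fix C assume "C \<in> lang (aatom tp R) S"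
  then obtain i ts where "C = (i, i + length ts - 1, outmu i ts)" "acc (aatom tp R) S i ts"
    unfolding lang_def by blast
  then show "C \<in> {(i, i, \<lambda>X. if X = R then {i} else {}) | i. 1 \<le> i \<and> i \<le> length S \<and> tp (ev S i) = R}"
    unfolding acc_def aatom_def using path_atom by (fastforce simp: gcond_def)
next
  fix C assume "C \<in> {(i, i, \<lambda>X. if X = R then {i} else {}) | i. 1 \<le> i \<and> i \<le> length S \<and> tp (ev S i) = R}"
  then obtain i where i: "C = (i, i, \<lambda>X. if X = R then {i} else {})" "1 \<le> i" "i \<le> length S" "tp (ev S i) = R"
    by blast
  have "acc (aatom tp R) S i [Tr 0 {e. tp e = R} [] {R} 1]"
    unfolding acc_def aatom_def using i by (auto simp: gcond_def)
  moreover have "C = (i, i + length [Tr 0 {e. tp e = R} [] {R} (1::nat)] - 1, outmu i [Tr 0 {e. tp e = R} [] {R} 1])"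
    using i by auto
  ultimately show "C \<in> lang (aatom tp R) S" unfolding lang_def by blast
qed

definition ainv :: "('x,'ev) aut \<Rightarrow> bool" where
  "ainv A \<longleftrightarrow> finite (trs A) \<and> finite (fins A) \<and> (\<forall>t\<in>trs A. tg t \<noteq> 0) \<and> (\<forall>(q,Is)\<in>fins A. q \<noteq> 0)"

lemma path_restrict:
  "path T q ts q' \<Longrightarrow> \<Phi> q \<Longrightarrow> (\<forall>t\<in>T. \<Phi> (sr t) \<longrightarrow> t \<in> T' \<and> \<Phi> (tg t)) \<Longrightarrow> path T' q ts q' \<and> \<Phi> q'"
  by (induction ts arbitrary: q) auto

definition ren :: "(nat \<Rightarrow> nat) \<Rightarrow> ('x,'ev) tr \<Rightarrow> ('x,'ev) tr" where
  "ren r t = Tr (r (sr t)) (pr t) (gr t) (lr t) (r (tg t))"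

lemma ren_simps[simp]: "sr (ren r t) = r (sr t)" "tg (ren r t) = r (tg t)"
  "pr (ren r t) = pr t" "gr (ren r t) = gr t" "lr (ren r t) = lr t"
  by (auto simp: ren_def)

lemma rok_ren[simp]: "rok S k p (map (ren r) ts) = rok S k p ts"
  by (rule rok_map) auto

lemma outmu_ren[simp]: "outmu k (map (ren r) ts) = outmu k ts"
  by (rule outmu_map_lr) auto

lemma path_ren: "path T q ts q' \<Longrightarrow> path (ren r ` T) (r q) (map (ren r) ts) (r q')"
  by (rule path_map) auto

lemma path_ren_inv:
  assumes "inj r" "path (ren r ` T) (r q) ts q''"
  shows "\<exists>ts0 q'. ts = map (ren r) ts0 \<and> path T q ts0 q' \<and> q'' = r q'"
  using path_map_inv[OF assms(1), of T "ren r"] assms(2) by auto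

lemma path_side:
  assumes "inj r" "r 0 = 0" "\<forall>t\<in>T1. tg t \<noteq> 0"
    "\<forall>u\<in>U. \<forall>m. m \<noteq> 0 \<longrightarrow> sr u \<noteq> r m"
    "path (ren r ` T1 \<union> U) 0 (t # ts) q" "t \<in> ren r ` T1"
  shows "\<exists>ts0 q0. t # ts = map (ren r) ts0 \<and> path T1 0 ts0 q0 \<and> q = r q0"
proof -
  let ?\<Phi> = "\<lambda>n. \<exists>m. m \<noteq> 0 \<and> n = r m"
  obtain t0 where t0: "t0 \<in> T1" "t = ren r t0" using assms(6) by auto
  have "?\<Phi> (tg t)" using t0 assms(3) by auto
  moreover have "path (ren r ` T1 \<union> U) (tg t) ts q" "sr t = 0" using assms(5) by auto
  moreover have "\<forall>u\<in>ren r ` T1 \<union> U. ?\<Phi> (sr u) \<longrightarrow> u \<in> ren r ` T1 \<and> ?\<Phi> (tg u)"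
  proof (intro ballI impI)
    fix u assume u: "u \<in> ren r ` T1 \<union> U" "?\<Phi> (sr u)"
    then have "u \<notin> U" using assms(4) by blast
    then obtain t' where "t' \<in> T1" "u = ren r t'" using u by blast
    then show "u \<in> ren r ` T1 \<and> ?\<Phi> (tg u)" using assms(3) by auto
  qed
  ultimately have "path (ren r ` T1) (tg t) ts q" using path_restrict[of _ "tg t" ts q ?\<Phi>] by blast
  then have "path (ren r ` T1) (r 0) (t # ts) q" using assms(2) \<open>sr t = 0\<close> assms(6) by auto
  then show ?thesis using path_ren_inv[OF assms(1)] by blast
qed

definition r1 :: "nat \<Rightarrow> nat" where "r1 n = 2 * n"
definition r2 :: "nat \<Rightarrow> nat" where "r2 n = (if n = 0 then 0 else 2 * n + 1)"

lemma inj_r1: "inj r1" by (auto simp: inj_def r1_def)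
lemma inj_r2: "inj r2" by (auto simp: inj_def r2_def split: if_splits)
lemma r1_0[simp]: "r1 0 = 0" by (simp add: r1_def)
lemma r2_0[simp]: "r2 0 = 0" by (simp add: r2_def)
lemma r12_ne: "r1 n \<noteq> r2 m \<or> (n = 0 \<and> m = 0)"
  unfolding r1_def r2_def by presburger

definition aor :: "('x,'ev) aut \<Rightarrow> ('x,'ev) aut \<Rightarrow> ('x,'ev) aut" where
  "aor A1 A2 = Aut (ren r1 ` trs A1 \<union> ren r2 ` trs A2)
     ((\<lambda>(q,Is). (r1 q, Is)) ` fins A1 \<union> (\<lambda>(q,Is). (r2 q, Is)) ` fins A2)"

lemma acc_ren_fwd:
  assumes "acc A S i ts" "\<forall>(q,Is)\<in>fins A. (r q, Is) \<in> fins B" "ren r ` trs A \<subseteq> trs B" "r 0 = 0"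
  shows "acc B S i (map (ren r) ts)"
proof -
  obtain q Is where q: "path (trs A) 0 ts q" "(q,Is) \<in> fins A"
     "\<forall>I\<in>set Is. in_ivl (tm S (i + length ts - 1) - tm S i) I"
    using assms(1) unfolding acc_def by blast
  have "path (ren r ` trs A) 0 (map (ren r) ts) (r q)" using path_ren[OF q(1), of r] assms(4) by simp
  then have "path (trs B) 0 (map (ren r) ts) (r q)"
    using path_restrict[of _ 0 _ _ "\<lambda>_. True" "trs B"] assms(3) by blast
  moreover have "(r q, Is) \<in> fins B" using assms(2) q(2) by blast
  moreover have "rok S i None (map (ren r) ts)" using assms(1) unfolding acc_def by simp
  ultimately show ?thesis using assms(1) q(3) unfolding acc_def by auto
qed

lemma lang_or:
  assumes "ainv A1" "ainv A2"
  shows "lang (aor A1 A2) S = lang A1 S \<union> lang A2 S"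
proof (intro set_eqI iffI)
  fix C assume "C \<in> lang (aor A1 A2) S"
  then obtain i ts where C: "C = (i, i + length ts - 1, outmu i ts)" "acc (aor A1 A2) S i ts"
    unfolding lang_def by blast
  then obtain q Is where q0: "ts \<noteq> []" "path (ren r1 ` trs A1 \<union> ren r2 ` trs A2) 0 ts q"
    "(q,Is) \<in> (\<lambda>(q,Is). (r1 q, Is)) ` fins A1 \<union> (\<lambda>(q,Is). (r2 q, Is)) ` fins A2"
    "\<forall>I\<in>set Is. in_ivl (tm S (i + length ts - 1) - tm S i) I"
    unfolding acc_def aor_def aut.sel by blast
  then obtain t ts' where "ts = t # ts'" by (cases ts) auto
  then have q: "ts = t # ts'" "path (ren r1 ` trs A1 \<union> ren r2 ` trs A2) 0 (t # ts') q"
    "(q,Is) \<in> (\<lambda>(q,Is). (r1 q, Is)) ` fins A1 \<union> (\<lambda>(q,Is). (r2 q, Is)) ` fins A2"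
    "\<forall>I\<in>set Is. in_ivl (tm S (i + length ts - 1) - tm S i) I" using q0 by auto
  have tg1: "\<forall>t\<in>trs A1. tg t \<noteq> 0" and tg2: "\<forall>t\<in>trs A2. tg t \<noteq> 0"
    and f1: "\<forall>(q,Is)\<in>fins A1. q \<noteq> 0" and f2: "\<forall>(q,Is)\<in>fins A2. q \<noteq> 0"
    using assms unfolding ainv_def by auto
  have "t \<in> ren r1 ` trs A1 \<or> t \<in> ren r2 ` trs A2" using q(2) by auto
  then show "C \<in> lang A1 S \<union> lang A2 S"
  proof
    assume t: "t \<in> ren r1 ` trs A1"
    have "\<forall>u\<in>ren r2 ` trs A2. \<forall>m. m \<noteq> 0 \<longrightarrow> sr u \<noteq> r1 m"
    proof (intro ballI allI impI)
      fix u m assume "u \<in> ren r2 ` trs A2" "m \<noteq> (0::nat)"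
      then obtain t' where "u = ren r2 t'" by blast
      then show "sr u \<noteq> r1 m" using r12_ne[of m "sr t'"] \<open>m \<noteq> 0\<close> by auto
    qed
    then have "\<exists>ts0 q0. t # ts' = map (ren r1) ts0 \<and> path (trs A1) 0 ts0 q0 \<and> q = r1 q0"
      by (rule path_side[OF inj_r1 r1_0 tg1 _ q(2) t])
    then obtain ts0 q0 where "t # ts' = map (ren r1) ts0 \<and> path (trs A1) 0 ts0 q0 \<and> q = r1 q0"
      by (elim exE)
    then have "ts = map (ren r1) ts0" "path (trs A1) 0 ts0 q0" "q = r1 q0" using q(1) by simp_all
    moreover have "(q0, Is) \<in> fins A1"
    proof -
      have "(q, Is) \<notin> (\<lambda>(q,Is). (r2 q, Is)) ` fins A2"
      proof
        assume "(q, Is) \<in> (\<lambda>(q,Is). (r2 q, Is)) ` fins A2"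
        then obtain q2 where "(q2, Is) \<in> fins A2" "q = r2 q2" by auto
        then show False using f2 r12_ne[of q0 q2] r12_ne[of q2 q0] \<open>q = r1 q0\<close> by auto
      qed
      then have "(q, Is) \<in> (\<lambda>(q,Is). (r1 q, Is)) ` fins A1" using q(3) by blast
      then show ?thesis using \<open>q = r1 q0\<close> inj_r1 by (auto simp: inj_eq)
    qed
    moreover have "length ts = length ts0" "ts0 \<noteq> []" "rok S i None ts0"
      using \<open>ts = map (ren r1) ts0\<close> C(2) unfolding acc_def by auto
    moreover have "1 \<le> i" "i + length ts \<le> Suc (length S)" using C(2) unfolding acc_def by auto
    ultimately have "acc A1 S i ts0" using q(4) unfolding acc_def
      by (intro conjI exI[of _ q0] exI[of _ Is]) simp_all
    moreover have "C = (i, i + length ts0 - 1, outmu i ts0)"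
      using C(1) \<open>ts = map (ren r1) ts0\<close> by simp
    ultimately show ?thesis unfolding lang_def by blast
  next
    assume t: "t \<in> ren r2 ` trs A2"
    have "\<forall>u\<in>ren r1 ` trs A1. \<forall>m. m \<noteq> 0 \<longrightarrow> sr u \<noteq> r2 m"
    proof (intro ballI allI impI)
      fix u m assume "u \<in> ren r1 ` trs A1" "m \<noteq> (0::nat)"
      then obtain t' where "u = ren r1 t'" by blast
      then show "sr u \<noteq> r2 m" using r12_ne[of "sr t'" m] \<open>m \<noteq> 0\<close> by auto
    qed
    then obtain ts0 q0 where "ts = map (ren r2) ts0" "path (trs A2) 0 ts0 q0" "q = r2 q0"
    proof -
      have "ren r1 ` trs A1 \<union> ren r2 ` trs A2 = ren r2 ` trs A2 \<union> ren r1 ` trs A1" by blast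
      then have "path (ren r2 ` trs A2 \<union> ren r1 ` trs A1) 0 (t # ts') q" using q(2) by simp
      then have "\<exists>ts0 q0. t # ts' = map (ren r2) ts0 \<and> path (trs A2) 0 ts0 q0 \<and> q = r2 q0"
        by (rule path_side[OF inj_r2 r2_0 tg2 \<open>\<forall>u\<in>ren r1 ` trs A1. \<forall>m. m \<noteq> 0 \<longrightarrow> sr u \<noteq> r2 m\<close> _ t])
      then obtain ts0 q0 where "t # ts' = map (ren r2) ts0 \<and> path (trs A2) 0 ts0 q0 \<and> q = r2 q0"
        by (elim exE)
      then show ?thesis using q(1) by (intro that[of ts0 q0]) auto
    qed
    moreover have "(q0, Is) \<in> fins A2"
    proof -
      have "(q, Is) \<notin> (\<lambda>(q,Is). (r1 q, Is)) ` fins A1"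
      proof
        assume "(q, Is) \<in> (\<lambda>(q,Is). (r1 q, Is)) ` fins A1"
        then obtain q2 where "(q2, Is) \<in> fins A1" "q = r1 q2" by auto
        then show False using f1 r12_ne[of q0 q2] r12_ne[of q2 q0] \<open>q = r2 q0\<close> by auto
      qed
      then have "(q, Is) \<in> (\<lambda>(q,Is). (r2 q, Is)) ` fins A2" using q(3) by blast
      then show ?thesis using \<open>q = r2 q0\<close> inj_r2 by (auto simp: inj_eq)
    qed
    moreover have "length ts = length ts0" "ts0 \<noteq> []" "rok S i None ts0"
      using \<open>ts = map (ren r2) ts0\<close> C(2) unfolding acc_def by auto
    moreover have "1 \<le> i" "i + length ts \<le> Suc (length S)" using C(2) unfolding acc_def by auto
    ultimately have "acc A2 S i ts0" using q(4) unfolding acc_def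
      by (intro conjI exI[of _ q0] exI[of _ Is]) simp_all
    moreover have "C = (i, i + length ts0 - 1, outmu i ts0)"
      using C(1) \<open>ts = map (ren r2) ts0\<close> by simp
    ultimately show ?thesis unfolding lang_def by blast
  qed
next
  fix C assume "C \<in> lang A1 S \<union> lang A2 S"
  then show "C \<in> lang (aor A1 A2) S"
  proof
    assume "C \<in> lang A1 S"
    then obtain i ts where C: "C = (i, i + length ts - 1, outmu i ts)" "acc A1 S i ts"
      unfolding lang_def by blast
    have "acc (aor A1 A2) S i (map (ren r1) ts)"
      by (rule acc_ren_fwd[OF C(2)]) (auto simp: aor_def)
    moreover have "C = (i, i + length (map (ren r1) ts) - 1, outmu i (map (ren r1) ts))"
      using C(1) by simp
    ultimately show ?thesis unfolding lang_def by blast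
  next
    assume "C \<in> lang A2 S"
    then obtain i ts where C: "C = (i, i + length ts - 1, outmu i ts)" "acc A2 S i ts"
      unfolding lang_def by blast
    have "acc (aor A1 A2) S i (map (ren r2) ts)"
      by (rule acc_ren_fwd[OF C(2)]) (auto simp: aor_def)
    moreover have "C = (i, i + length (map (ren r2) ts) - 1, outmu i (map (ren r2) ts))"
      using C(1) by simp
    ultimately show ?thesis unfolding lang_def by blast
  qed
qed

definition pe :: "nat \<Rightarrow> nat \<Rightarrow> nat" where "pe a b = prod_encode (a, b)"

lemma pe_inj[simp]: "pe a b = pe c d \<longleftrightarrow> a = c \<and> b = d"
  unfolding pe_def using prod_encode_eq by blast

lemma pe_0[simp]: "pe 0 0 = 0" by (simp add: pe_def prod_encode_def)

lemma pe_eq0: "pe a b = 0 \<longleftrightarrow> a = 0 \<and> b = 0"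
  using pe_inj[of a b 0 0] by simp

definition prodt :: "('x,'ev) tr \<Rightarrow> ('x,'ev) tr \<Rightarrow> ('x,'ev) tr" where
  "prodt t1 t2 = Tr (pe (sr t1) (sr t2)) (pr t1 \<inter> pr t2) (gr t1 @ gr t2) (lr t1) (pe (tg t1) (tg t2))"

lemma prodt_simps[simp]: "sr (prodt t1 t2) = pe (sr t1) (sr t2)" "tg (prodt t1 t2) = pe (tg t1) (tg t2)"
  "pr (prodt t1 t2) = pr t1 \<inter> pr t2" "gr (prodt t1 t2) = gr t1 @ gr t2" "lr (prodt t1 t2) = lr t1"
  by (auto simp: prodt_def)

definition aand :: "('x,'ev) aut \<Rightarrow> ('x,'ev) aut \<Rightarrow> ('x,'ev) aut" where
  "aand A1 A2 = Aut {prodt t1 t2 | t1 t2. t1 \<in> trs A1 \<and> t2 \<in> trs A2 \<and> lr t1 = lr t2}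
     {(pe q1 q2, Is1 @ Is2) | q1 Is1 q2 Is2. (q1, Is1) \<in> fins A1 \<and> (q2, Is2) \<in> fins A2}"

abbreviation samel :: "('x,'ev) tr list \<Rightarrow> ('x,'ev) tr list \<Rightarrow> bool" where
  "samel ts1 ts2 \<equiv> list_all2 (\<lambda>a b. lr a = lr b) ts1 ts2"

lemma path_prod_fwd:
  "samel ts1 ts2 \<Longrightarrow> path T1 q1 ts1 q1' \<Longrightarrow> path T2 q2 ts2 q2' \<Longrightarrow>
   path {prodt t1 t2 | t1 t2. t1 \<in> T1 \<and> t2 \<in> T2 \<and> lr t1 = lr t2} (pe q1 q2) (map2 prodt ts1 ts2) (pe q1' q2')"
proof (induction ts1 ts2 arbitrary: q1 q2 rule: list_all2_induct)
  case Nil then show ?case by simp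
next
  case (Cons x xs y ys) then show ?case by auto
qed

lemma path_prod_inv:
  "path {prodt t1 t2 | t1 t2. t1 \<in> T1 \<and> t2 \<in> T2 \<and> lr t1 = lr t2} (pe q1 q2) ts q \<Longrightarrow>
   \<exists>ts1 ts2 q1' q2'. samel ts1 ts2 \<and> ts = map2 prodt ts1 ts2 \<and> path T1 q1 ts1 q1' \<and>
       path T2 q2 ts2 q2' \<and> q = pe q1' q2'"
proof (induction ts arbitrary: q1 q2)
  case Nil then show ?case by force
next
  case (Cons t ts)
  then obtain t1 t2 where t: "t = prodt t1 t2" "t1 \<in> T1" "t2 \<in> T2" "lr t1 = lr t2"
    "pe (sr t1) (sr t2) = pe q1 q2"
    "path {prodt t1 t2 | t1 t2. t1 \<in> T1 \<and> t2 \<in> T2 \<and> lr t1 = lr t2} (pe (tg t1) (tg t2)) ts q"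
    by auto
  obtain ts1 ts2 q1' q2' where r: "samel ts1 ts2" "ts = map2 prodt ts1 ts2" "path T1 (tg t1) ts1 q1'"
       "path T2 (tg t2) ts2 q2'" "q = pe q1' q2'"
    using Cons.IH[OF t(6)] by (elim exE conjE)
  show ?case
    apply (rule exI[of _ "t1 # ts1"], rule exI[of _ "t2 # ts2"], rule exI[of _ q1'], rule exI[of _ q2'])
    using t r by auto
qed

lemma gcond_append: "gcond S k p (G1 @ G2) \<longleftrightarrow> gcond S k p G1 \<and> gcond S k p G2"
  unfolding gcond_def by auto

lemma rok_prod: "samel ts1 ts2 \<Longrightarrow> rok S k p (map2 prodt ts1 ts2) \<longleftrightarrow> rok S k p ts1 \<and> rok S k p ts2"
proof (induction ts1 ts2 arbitrary: k p rule: list_all2_induct)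
  case Nil then show ?case by simp
next
  case (Cons x xs y ys) then show ?case by (auto simp: gcond_append)
qed

lemma outmu_prod: "samel ts1 ts2 \<Longrightarrow> outmu k (map2 prodt ts1 ts2) = outmu k ts1"
proof (induction ts1 ts2 arbitrary: k rule: list_all2_induct)
  case Nil then show ?case by simp
next
  case (Cons x xs y ys) then show ?case by simp
qed

lemma outmu_samel_eq: "samel ts1 ts2 \<Longrightarrow> outmu k ts1 = outmu k ts2"
proof (induction ts1 ts2 arbitrary: k rule: list_all2_induct)
  case Nil then show ?case by simp
next
  case (Cons x xs y ys) then show ?case by simp
qed

lemma outmu_samel:
  assumes "outmu k ts1 = outmu k ts2" "length ts1 = length ts2"
  shows "samel ts1 ts2"
proof -
  have "lr (ts1 ! m) = lr (ts2 ! m)" if "m < length ts1" for m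
  proof -
    have "X \<in> lr (ts1 ! m) \<longleftrightarrow> X \<in> lr (ts2 ! m)" for X
      using outmu_nth[of "k + m" k ts1 X] outmu_nth[of "k + m" k ts2 X] assms that by auto
    then show ?thesis by blast
  qed
  then show ?thesis using assms(2) by (simp add: list_all2_conv_all_nth)
qed

lemma lang_and:
  shows "lang (aand A1 A2) S = lang A1 S \<inter> lang A2 S"
proof (intro set_eqI iffI)
  fix C assume "C \<in> lang (aand A1 A2) S"
  then obtain i ts q Is where C: "C = (i, i + length ts - 1, outmu i ts)" "ts \<noteq> []" "1 \<le> i"
      "i + length ts \<le> Suc (length S)" "rok S i None ts"
      "path {prodt t1 t2 | t1 t2. t1 \<in> trs A1 \<and> t2 \<in> trs A2 \<and> lr t1 = lr t2} 0 ts q"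
      "(q, Is) \<in> fins (aand A1 A2)"
      "\<forall>I\<in>set Is. in_ivl (tm S (i + length ts - 1) - tm S i) I"
    unfolding lang_def acc_def aand_def aut.sel by blast
  have "path {prodt t1 t2 | t1 t2. t1 \<in> trs A1 \<and> t2 \<in> trs A2 \<and> lr t1 = lr t2} (pe 0 0) ts q"
    using C(6) by simp
  from path_prod_inv[OF this] obtain ts1 ts2 q1 q2 where
    P: "samel ts1 ts2" "ts = map2 prodt ts1 ts2" "path (trs A1) 0 ts1 q1" "path (trs A2) 0 ts2 q2" "q = pe q1 q2"
    by (elim exE conjE)
  obtain Is1 Is2 where F: "(q1, Is1) \<in> fins A1" "(q2, Is2) \<in> fins A2" "Is = Is1 @ Is2"
    using C(7) P(5) unfolding aand_def by auto
  have len: "length ts1 = length ts" "length ts2 = length ts"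
    using P(1,2) list_all2_lengthD by fastforce+
  have rk: "rok S i None ts1" "rok S i None ts2" using rok_prod[OF P(1)] C(5) P(2) by auto
  have a1: "acc A1 S i ts1" unfolding acc_def
    using C(2,3,4,8) len rk F P(3) by (intro conjI exI[of _ q1] exI[of _ Is1]) auto
  have a2: "acc A2 S i ts2" unfolding acc_def
    using C(2,3,4,8) len rk F P(4) by (intro conjI exI[of _ q2] exI[of _ Is2]) auto
  have o1: "outmu i ts = outmu i ts1" using outmu_prod[OF P(1)] P(2) by simp
  have o2: "outmu i ts1 = outmu i ts2" using outmu_samel_eq[OF P(1)] .
  have "C = (i, i + length ts1 - 1, outmu i ts1)" using C(1) len o1 by simp
  moreover have "C = (i, i + length ts2 - 1, outmu i ts2)" using C(1) len o1 o2 by simp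
  ultimately show "C \<in> lang A1 S \<inter> lang A2 S" using a1 a2 unfolding lang_def by blast
next
  fix C assume "C \<in> lang A1 S \<inter> lang A2 S"
  then obtain i1 ts1 i2 ts2 where C: "C = (i1, i1 + length ts1 - 1, outmu i1 ts1)" "acc A1 S i1 ts1"
      "C = (i2, i2 + length ts2 - 1, outmu i2 ts2)" "acc A2 S i2 ts2"
    unfolding lang_def by blast
  have "i1 = i2" using C(1,3) by simp
  moreover have "length ts1 = length ts2" using C(1,2,3,4) \<open>i1 = i2\<close> unfolding acc_def
    by (cases ts1; cases ts2) auto
  moreover have "outmu i1 ts1 = outmu i2 ts2" using C(1,3) by (metis prod.inject)
  ultimately have sl: "samel ts1 ts2" using outmu_samel by metis
  obtain q1 Is1 q2 Is2 where q: "path (trs A1) 0 ts1 q1" "(q1,Is1) \<in> fins A1"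
      "\<forall>I\<in>set Is1. in_ivl (tm S (i1 + length ts1 - 1) - tm S i1) I"
      "path (trs A2) 0 ts2 q2" "(q2,Is2) \<in> fins A2"
      "\<forall>I\<in>set Is2. in_ivl (tm S (i2 + length ts2 - 1) - tm S i2) I"
    using C(2,4) unfolding acc_def by blast
  have p: "path (trs (aand A1 A2)) 0 (map2 prodt ts1 ts2) (pe q1 q2)"
    using path_prod_fwd[OF sl q(1) q(4)] unfolding aand_def by simp
  have f: "(pe q1 q2, Is1 @ Is2) \<in> fins (aand A1 A2)" using q(2,5) unfolding aand_def by auto
  have len: "length (map2 prodt ts1 ts2) = length ts1" using sl list_all2_lengthD by fastforce
  have "acc (aand A1 A2) S i1 (map2 prodt ts1 ts2)" unfolding acc_def
    using C(2,4) \<open>i1 = i2\<close> rok_prod[OF sl] p f q(3,6) len \<open>length ts1 = length ts2\<close> unfolding acc_def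
    by (intro conjI exI[of _ "pe q1 q2"] exI[of _ "Is1 @ Is2"]) auto
  moreover have "C = (i1, i1 + length (map2 prodt ts1 ts2) - 1, outmu i1 (map2 prodt ts1 ts2))"
    using C(1) len outmu_prod[OF sl] by simp
  ultimately show "C \<in> lang (aand A1 A2) S" unfolding lang_def by blast
qed

definition sim :: "('x,'ev) tr \<Rightarrow> ('x,'ev) tr \<Rightarrow> bool" where
  "sim a b \<longleftrightarrow> pr a = pr b \<and> gr a = gr b \<and> lr a = lr b"

abbreviation simL where "simL \<equiv> list_all2 sim"

lemma simL_rok: "simL xs ys \<Longrightarrow> rok S k p xs = rok S k p ys"
proof (induction xs ys arbitrary: k p rule: list_all2_induct)
  case Nil then show ?case by simp
next
  case (Cons x xs y ys) then show ?case by (simp add: sim_def)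
qed

lemma simL_lastp: "simL xs ys \<Longrightarrow> lastp k p xs = lastp k p ys"
proof (induction xs ys arbitrary: k p rule: list_all2_induct)
  case Nil then show ?case by simp
next
  case (Cons x xs y ys) then show ?case by (simp add: sim_def)
qed

lemma simL_outmu: "simL xs ys \<Longrightarrow> outmu k xs = outmu k ys"
proof (induction xs ys arbitrary: k rule: list_all2_induct)
  case Nil then show ?case by simp
next
  case (Cons x xs y ys) then show ?case by (simp add: sim_def)
qed

lemma simL_refl: "simL xs xs"
  by (simp add: list_all2_refl sim_def)

lemma simL_map: "(\<forall>t\<in>set xs. sim t (f t)) \<Longrightarrow> simL xs (map f xs)"
  by (induction xs) auto

lemma simL_map2: "(\<forall>t\<in>set xs. sim (f t) t) \<Longrightarrow> simL (map f xs) xs"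
  by (induction xs) auto

lemma simL_ren: "simL xs (map (ren r) xs)"
  by (rule simL_map) (simp add: sim_def)

lemma simL_len: "simL xs ys \<Longrightarrow> length xs = length ys"
  by (rule list_all2_lengthD)

definition skipT :: "('x,'ev) tr" where "skipT = Tr 1 UNIV [] {} 1"

lemma skipT_simps[simp]: "sr skipT = 1" "tg skipT = 1" "pr skipT = UNIV" "gr skipT = []" "lr skipT = {}"
  by (auto simp: skipT_def)

lemma rok_skips[simp]: "rok S k p (replicate n skipT) = True"
  by (induction n arbitrary: k) (auto simp: gcond_def)

lemma lastp_skips[simp]: "lastp k p (replicate n skipT) = p"
  by (induction n arbitrary: k) auto

lemma outmu_skips[simp]: "outmu k (replicate n skipT) X = {}"
  by (induction n arbitrary: k) auto

lemma lastp_snoc_lab: "lr x \<noteq> {} \<Longrightarrow> lastp k p (xs @ [x]) = Some (k + length xs)"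
  by simp

lemma rok_head_change:
  assumes "lr y \<noteq> {} \<or> gfl rest"
  shows "rok S k p (y # rest) \<longleftrightarrow> ev S k \<in> pr y \<and> gcond S k p (gr y) \<and>
           rok S (Suc k) (if lr y = {} then p' else Some k) rest"
  using assms rok_gfree[of rest S "Suc k"] by auto

lemma rok_glue:
  assumes sx: "simL xs xs'" and sr': "simL rest rest'"
    and y: "pr y' = pr y" "lr y' = lr y" "gr y = []" "gr y' = gg"
    and ind: "lr y \<noteq> {} \<or> (gfl rest \<and> gfl rest')"
    and pos: "i + length xs + n = i2"
    and gapc: "gg \<noteq> [] \<Longrightarrow> xs \<noteq> [] \<and> lr (last xs) \<noteq> {}"
  shows "rok S i None (xs' @ replicate n skipT @ y' # rest') \<longleftrightarrow>
         rok S i None xs \<and> rok S i2 None (y # rest) \<and> (\<forall>I\<in>set gg. in_ivl (tm S i2 - tm S (i2 - n - 1)) I)"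
proof -
  have a: "rok S i None (xs' @ replicate n skipT @ y' # rest') \<longleftrightarrow>
        rok S i None xs \<and> rok S i2 (lastp i None xs) (y' # rest')"
    using simL_rok[OF sx] simL_lastp[OF sx] simL_len[OF sx] pos by (simp add: add.assoc)
  have g: "gcond S i2 (lastp i None xs) gg \<longleftrightarrow> (\<forall>I\<in>set gg. in_ivl (tm S i2 - tm S (i2 - n - 1)) I)"
  proof (cases "gg = []")
    case True then show ?thesis by (simp add: gcond_def)
  next
    case False
    then obtain xs0 x where "xs = xs0 @ [x]" "lr x \<noteq> {}"
      using gapc by (metis append_butlast_last_id)
    moreover have "i2 - n - 1 = i + length xs0" using pos \<open>xs = xs0 @ [x]\<close> by simp
    ultimately show ?thesis using False by (simp add: gcond_def)
  qed
  have b: "rok S i2 p (y' # rest') \<longleftrightarrow> ev S i2 \<in> pr y \<and> gcond S i2 p gg \<and> rok S (Suc i2) (if lr y = {} then None else Some i2) rest"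
    for p
  proof -
    have "rok S (Suc i2) (if lr y = {} then p else Some i2) rest' = rok S (Suc i2) (if lr y = {} then None else Some i2) rest'"
      using ind rok_gfree[of rest' S "Suc i2"] by auto
    then show ?thesis using y simL_rok[OF sr'] by simp
  qed
  have c: "rok S i2 None (y # rest) \<longleftrightarrow> ev S i2 \<in> pr y \<and> rok S (Suc i2) (if lr y = {} then None else Some i2) rest"
    using y by (simp add: gcond_def)
  show ?thesis using a b c g by blast
qed

lemma outmu_glue:
  assumes "simL xs xs'" "simL rest rest'" "lr y' = lr y" "i + length xs + n = i2"
  shows "outmu i (xs' @ replicate n skipT @ y' # rest') X = outmu i xs X \<union> outmu i2 (y # rest) X"
  using assms simL_outmu[OF assms(1)] simL_outmu[OF assms(2)] simL_len[OF assms(1)]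
  by (simp add: add.assoc)

lemma skips_split:
  "path T 1 ys q' \<Longrightarrow> q' \<noteq> 1 \<Longrightarrow>
   \<exists>n u zs. ys = replicate n skipT @ u # zs \<and> u \<noteq> skipT \<and> sr u = 1 \<and> u \<in> T \<and> path T (tg u) zs q' \<and>
      (n > 0 \<longrightarrow> skipT \<in> T)"
proof (induction ys)
  case Nil then show ?case by simp
next
  case (Cons y ys)
  show ?case
  proof (cases "y = skipT")
    case True
    then have "path T 1 ys q'" "skipT \<in> T" using Cons.prems by auto
    then obtain n u zs where "ys = replicate n skipT @ u # zs" "u \<noteq> skipT" "sr u = 1" "u \<in> T"
      "path T (tg u) zs q'" using Cons.IH Cons.prems(2) by blast
    then show ?thesis using True \<open>skipT \<in> T\<close>
      by (intro exI[of _ "Suc n"] exI[of _ u] exI[of _ zs]) auto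
  next
    case False
    then show ?thesis using Cons.prems by (intro exI[of _ 0] exI[of _ y] exI[of _ ys]) auto
  qed
qed

lemma split_first:
  "path T q ts q' \<Longrightarrow> \<Phi> q \<Longrightarrow> \<not> \<Phi> q' \<Longrightarrow>
   \<exists>xs t ys. ts = xs @ t # ys \<and> path {u\<in>T. \<Phi> (sr u) \<and> \<Phi> (tg u)} q xs (sr t) \<and> t \<in> T \<and> \<Phi> (sr t) \<and>
     \<not> \<Phi> (tg t) \<and> path T (tg t) ys q'"
proof (induction ts arbitrary: q)
  case Nil then show ?case by simp
next
  case (Cons t ts)
  show ?case
  proof (cases "\<Phi> (tg t)")
    case True
    have "path T (tg t) ts q'" using Cons.prems by auto
    from Cons.IH[OF this True Cons.prems(3)]
    obtain xs t' ys where "ts = xs @ t' # ys" "path {u\<in>T. \<Phi> (sr u) \<and> \<Phi> (tg u)} (tg t) xs (sr t')"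
      "t' \<in> T" "\<Phi> (sr t')" "\<not> \<Phi> (tg t')" "path T (tg t') ys q'" by (elim exE conjE)
    then show ?thesis using Cons.prems True by (intro exI[of _ "t # xs"] exI[of _ t'] exI[of _ ys]) auto
  next
    case False
    then show ?thesis using Cons.prems by (intro exI[of _ "[]"] exI[of _ t] exI[of _ ts]) auto
  qed
qed

lemma path_all:
  "path T q ts q' \<Longrightarrow> \<Phi> q \<Longrightarrow> (\<forall>t\<in>T. \<Phi> (sr t) \<longrightarrow> \<Phi> (tg t)) \<Longrightarrow> path {u\<in>T. \<Phi> (sr u) \<and> \<Phi> (tg u)} q ts q'"
  by (induction ts arbitrary: q) auto

lemma path_mono: "path T q ts q' \<Longrightarrow> T \<subseteq> T' \<Longrightarrow> path T' q ts q'"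
  by (induction ts arbitrary: q) auto

lemma path_skips: "skipT \<in> T \<or> n = 0 \<Longrightarrow> path T 1 (replicate n skipT) 1"
  by (induction n) auto

lemma rok_first_gr: "rok S k None (y # ys) \<Longrightarrow> gr y = []"
  by (simp add: gcond_def)

definition labA :: "('x,'ev) aut \<Rightarrow> bool" where
  "labA A \<longleftrightarrow> (\<forall>t\<in>trs A. (sr t = 0 \<or> tg t \<in> fst ` fins A) \<longrightarrow> lr t \<noteq> {})"

definition nowin :: "('x,'ev) aut \<Rightarrow> bool" where
  "nowin A \<longleftrightarrow> (\<forall>(q,Is)\<in>fins A. Is = [])"

definition seqc :: "bool \<Rightarrow> 'ev tstream \<Rightarrow> interval list \<Rightarrow> 'x cevent \<Rightarrow> 'x cevent \<Rightarrow> bool" where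
  "seqc sk S gg C1 C2 \<longleftrightarrow> (if sk then cend C1 < cstart C2 else cend C1 + 1 = cstart C2) \<and>
     (\<forall>I\<in>set gg. in_ivl (tm S (cstart C2) - tm S (cend C1)) I)"

lemma cunion_simp: "i \<le> j1 \<Longrightarrow> j1 < i2 \<Longrightarrow> i2 \<le> j2 \<Longrightarrow>
  cunion (i, j1, mu1) (i2, j2, mu2) = (i, j2, \<lambda>X. mu1 X \<union> mu2 X)"
  by (simp add: cunion_def cstart_def cend_def cmu_def)

definition into1 :: "('x,'ev) tr \<Rightarrow> ('x,'ev) tr" where
  "into1 t = Tr (r1 (sr t)) (pr t) (gr t) (lr t) 1"

definition fromM :: "interval list \<Rightarrow> (nat \<Rightarrow> nat) \<Rightarrow> ('x,'ev) tr \<Rightarrow> ('x,'ev) tr" where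
  "fromM gg r t = Tr 1 (pr t) gg (lr t) (r (tg t))"

lemma into1_simps[simp]: "sr (into1 t) = r1 (sr t)" "tg (into1 t) = 1" "pr (into1 t) = pr t"
  "gr (into1 t) = gr t" "lr (into1 t) = lr t"
  by (auto simp: into1_def)

lemma fromM_simps[simp]: "sr (fromM gg r t) = 1" "tg (fromM gg r t) = r (tg t)" "pr (fromM gg r t) = pr t"
  "gr (fromM gg r t) = gg" "lr (fromM gg r t) = lr t"
  by (auto simp: fromM_def)

lemma r1_even: "even (r1 n)" by (simp add: r1_def)
lemma r2_odd: "n \<noteq> 0 \<Longrightarrow> odd (r2 n) \<and> r2 n \<noteq> 1" by (simp add: r2_def)

definition aseq :: "bool \<Rightarrow> interval list \<Rightarrow> ('x,'ev) aut \<Rightarrow> ('x,'ev) aut \<Rightarrow> ('x,'ev) aut" where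
  "aseq sk gg A1 A2 = Aut (ren r1 ` trs A1 \<union> into1 ` {t\<in>trs A1. tg t \<in> fst ` fins A1} \<union> {t. t = skipT \<and> sk}
      \<union> fromM gg r2 ` {t\<in>trs A2. sr t = 0 \<and> gr t = []} \<union> ren r2 ` {t\<in>trs A2. sr t \<noteq> 0})
     ((\<lambda>(q,Is). (r2 q, [])) ` fins A2)"

lemma not_ren1: "odd (sr u) \<Longrightarrow> u \<notin> ren r1 ` X"
  using r1_even by auto
lemma not_into1: "odd (sr u) \<Longrightarrow> u \<notin> into1 ` X"
  using r1_even by auto
lemma not_ren2: "even (sr u) \<or> sr u = 1 \<Longrightarrow> u \<notin> ren r2 ` {t\<in>X. sr t \<noteq> 0}"
  using r2_odd by fastforce
lemma not_fromM: "sr u \<noteq> 1 \<Longrightarrow> u \<notin> fromM gg r ` X"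
  by auto

lemma path_nonzero:
  assumes "\<forall>t\<in>T. tg t \<noteq> 0" "path T q ts q'" "q \<noteq> 0"
  shows "path {t\<in>T. sr t \<noteq> 0} q ts q'"
proof -
  have "path {u\<in>T. sr u \<noteq> 0 \<and> tg u \<noteq> 0} q ts q'"
    using path_all[OF assms(2), of "\<lambda>n. n \<noteq> 0"] assms(1,3) by blast
  then show ?thesis by (rule path_mono) auto
qed

lemma seq_decomp:
  assumes inv1: "ainv A1" and inv2: "ainv A2"
    and p: "path (trs (aseq sk gg A1 A2)) 0 ts q" and q: "q = r2 q2" "q2 \<noteq> 0"
  shows "\<exists>xs0 x n z zs0. ts = map (ren r1) xs0 @ [into1 x] @ replicate n skipT @ fromM gg r2 z # map (ren r2) zs0 \<and>
     path (trs A1) 0 (xs0 @ [x]) (tg x) \<and> tg x \<in> fst ` fins A1 \<and> (n > 0 \<longrightarrow> sk) \<and>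
     path (trs A2) 0 (z # zs0) q2 \<and> gr z = []"
proof -
  let ?T = "trs (aseq sk gg A1 A2)"
  have tg1: "\<forall>t\<in>trs A1. tg t \<noteq> 0" and tg2: "\<forall>t\<in>trs A2. tg t \<noteq> 0" using inv1 inv2 by (auto simp: ainv_def)
  have odd_q: "\<not> even q" using q r2_odd by auto
  obtain xs t ys where s1: "ts = xs @ t # ys" "path {u\<in>?T. even (sr u) \<and> even (tg u)} 0 xs (sr t)"
    "t \<in> ?T" "even (sr t)" "\<not> even (tg t)" "path ?T (tg t) ys q"
    using split_first[OF p, of even, OF even_zero odd_q] by (elim exE conjE)
  have "{u\<in>?T. even (sr u) \<and> even (tg u)} \<subseteq> ren r1 ` trs A1"
  proof
    fix u assume u: "u \<in> {u\<in>?T. even (sr u) \<and> even (tg u)}"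
    then have "u \<notin> into1 ` {t\<in>trs A1. tg t \<in> fst ` fins A1}" by auto
    moreover have "u \<notin> {t. t = skipT \<and> sk}" using u by auto
    moreover have "u \<notin> fromM gg r2 ` {t\<in>trs A2. sr t = 0 \<and> gr t = []}" using u by auto
    moreover have "u \<notin> ren r2 ` {t\<in>trs A2. sr t \<noteq> 0}" using u r2_odd by auto
    ultimately show "u \<in> ren r1 ` trs A1" using u unfolding aseq_def by auto
  qed
  then have "path (ren r1 ` trs A1) (r1 0) xs (sr t)" using path_mono[OF s1(2)] by simp
  then obtain xs0 p0 where x0: "xs = map (ren r1) xs0" "path (trs A1) 0 xs0 p0" "sr t = r1 p0"
    using path_ren_inv[OF inj_r1] by (metis)
  have "t \<in> into1 ` {t\<in>trs A1. tg t \<in> fst ` fins A1}"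
  proof -
    have "t \<notin> ren r1 ` trs A1" using s1(5) r1_even by auto
    moreover have "t \<notin> {t. t = skipT \<and> sk}" using s1(4) by auto
    moreover have "t \<notin> fromM gg r2 ` {t\<in>trs A2. sr t = 0 \<and> gr t = []}" using s1(4) by auto
    moreover have "t \<notin> ren r2 ` {t\<in>trs A2. sr t \<noteq> 0}" using s1(4) r2_odd by auto
    ultimately show ?thesis using s1(3) unfolding aseq_def by auto
  qed
  then obtain x where x: "t = into1 x" "x \<in> trs A1" "tg x \<in> fst ` fins A1" by auto
  have "sr x = p0" using x0(3) x(1) inj_r1 by (auto simp: inj_eq)
  then have pA1: "path (trs A1) 0 (xs0 @ [x]) (tg x)" using x0(2) x(2) by auto
  have "q \<noteq> 1" using odd_q q r2_odd by auto
  have "path ?T 1 ys q" using s1(6) x(1) by simp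
  from skips_split[OF this \<open>q \<noteq> 1\<close>] obtain n u zs where s2: "ys = replicate n skipT @ u # zs" "u \<noteq> skipT"
    "sr u = 1" "u \<in> ?T" "path ?T (tg u) zs q" "n > 0 \<longrightarrow> skipT \<in> ?T"
    by (elim exE conjE)
  have "n > 0 \<longrightarrow> sk" using s2(6) unfolding aseq_def by (auto simp: r1_def r2_def into1_def ren_def skipT_def fromM_def split: if_splits)
  have "u \<in> fromM gg r2 ` {t\<in>trs A2. sr t = 0 \<and> gr t = []}"
  proof -
    have "u \<notin> ren r1 ` trs A1" using s2(3) by (intro not_ren1) simp
    moreover have "u \<notin> into1 ` {t\<in>trs A1. tg t \<in> fst ` fins A1}" using s2(3) by (intro not_into1) simp
    moreover have "u \<notin> {t. t = skipT \<and> sk}" using s2(2) by auto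
    moreover have "u \<notin> ren r2 ` {t\<in>trs A2. sr t \<noteq> 0}" using s2(3) by (intro not_ren2) simp
    ultimately show ?thesis using s2(4) unfolding aseq_def by auto
  qed
  then obtain z where z: "u = fromM gg r2 z" "z \<in> trs A2" "sr z = 0" "gr z = []" by auto
  have "tg z \<noteq> 0" using tg2 z(2) by auto
  let ?P = "\<lambda>n. odd n \<and> n \<noteq> 1"
  have cl: "\<forall>v\<in>?T. ?P (sr v) \<longrightarrow> v \<in> ren r2 ` {t\<in>trs A2. sr t \<noteq> 0} \<and> ?P (tg v)"
  proof (intro ballI impI)
    fix v assume v: "v \<in> ?T" "?P (sr v)"
    have "v \<notin> ren r1 ` trs A1" using v(2) by (intro not_ren1) simp
    moreover have "v \<notin> into1 ` {t\<in>trs A1. tg t \<in> fst ` fins A1}" using v(2) by (intro not_into1) simp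
    moreover have "v \<notin> {t. t = skipT \<and> sk}" using v(2) by auto
    moreover have "v \<notin> fromM gg r2 ` {t\<in>trs A2. sr t = 0 \<and> gr t = []}" using v(2) by (intro not_fromM) simp
    ultimately have "v \<in> ren r2 ` {t\<in>trs A2. sr t \<noteq> 0}" using v(1) unfolding aseq_def by auto
    then show "v \<in> ren r2 ` {t\<in>trs A2. sr t \<noteq> 0} \<and> ?P (tg v)" using tg2 r2_odd by auto
  qed
  have "?P (tg u)" using z(1) \<open>tg z \<noteq> 0\<close> r2_odd by auto
  then have "path (ren r2 ` {t\<in>trs A2. sr t \<noteq> 0}) (r2 (tg z)) zs q"
    using path_restrict[OF s2(5) _ cl] z(1) by auto
  from path_ren_inv[OF inj_r2 this]
  obtain zs0 q0 where zs0: "zs = map (ren r2) zs0" "path {t\<in>trs A2. sr t \<noteq> 0} (tg z) zs0 q0" "q = r2 q0"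
    by (elim exE conjE)
  have "q0 = q2" using zs0(3) q(1) inj_r2 by (auto simp: inj_eq)
  have pA2: "path (trs A2) 0 (z # zs0) q2" using path_mono[OF zs0(2)] z \<open>q0 = q2\<close> by auto
  have "ts = map (ren r1) xs0 @ [into1 x] @ replicate n skipT @ fromM gg r2 z # map (ren r2) zs0"
    using s1(1) x0(1) x(1) s2(1) z(1) zs0(1) by simp
  then show ?thesis using pA1 x(3) \<open>n > 0 \<longrightarrow> sk\<close> pA2 z(4) by blast
qed

lemma path_appendI: "path T q xs r \<Longrightarrow> path T r ys q' \<Longrightarrow> path T q (xs @ ys) q'"
  by auto

lemma path_snoc: "path T q (xs @ [x]) q' \<longleftrightarrow> path T q xs (sr x) \<and> x \<in> T \<and> tg x = q'"
  by auto

lemma simL_glue1: "simL (xs0 @ [x]) (map (ren r1) xs0 @ [into1 x])"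
  by (rule list_all2_appendI) (auto simp: simL_ren sim_def)

lemma gfl_map_ren: "gfl xs \<Longrightarrow> gfl (map (ren r) xs)"
  by (auto simp: gfl_def)

lemma acc_intro:
  assumes "ts \<noteq> []" "1 \<le> i" "i + length ts \<le> Suc (length S)" "rok S i None ts"
    "path (trs A) 0 ts q" "(q, []) \<in> fins A"
  shows "acc A S i ts"
  unfolding acc_def using assms by (intro conjI exI[of _ q] exI[of _ "[]"]) auto

lemma acc_nowin:
  assumes "acc A S i ts" "nowin A"
  obtains q where "ts \<noteq> []" "1 \<le> i" "i + length ts \<le> Suc (length S)" "rok S i None ts"
    "path (trs A) 0 ts q" "(q, []) \<in> fins A"
proof -
  obtain q Is where "ts \<noteq> []" "1 \<le> i" "i + length ts \<le> Suc (length S)" "rok S i None ts"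
    "path (trs A) 0 ts q" "(q, Is) \<in> fins A" using assms(1) unfolding acc_def by blast
  moreover then have "Is = []" using assms(2) unfolding nowin_def by auto
  ultimately show ?thesis using that by blast
qed

lemma lang_seq:
  assumes inv1: "ainv A1" and inv2: "ainv A2" and nw1: "nowin A1" and nw2: "nowin A2"
    and lab1: "gg \<noteq> [] \<longrightarrow> labA A1" and lab2: "labA A2 \<or> gfA A2"
  shows "lang (aseq sk gg A1 A2) S = seqop (seqc sk S gg) (lang A1 S) (lang A2 S)"
proof (intro set_eqI iffI)
  fix C assume "C \<in> lang (aseq sk gg A1 A2) S"
  then obtain i ts q Is where C: "C = (i, i + length ts - 1, outmu i ts)" "ts \<noteq> []" "1 \<le> i"
      "i + length ts \<le> Suc (length S)" "rok S i None ts" "path (trs (aseq sk gg A1 A2)) 0 ts q"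
      "(q, Is) \<in> fins (aseq sk gg A1 A2)"
    unfolding lang_def acc_def by blast
  obtain q2 Is2 where q2: "(q2, Is2) \<in> fins A2" "q = r2 q2" using C(7) unfolding aseq_def by auto
  have "q2 \<noteq> 0" using q2(1) inv2 unfolding ainv_def by auto
  have Is2: "Is2 = []" using q2(1) nw2 unfolding nowin_def by auto
  from seq_decomp[OF inv1 inv2 C(6) q2(2) \<open>q2 \<noteq> 0\<close>]
  obtain xs0 x n z zs0 where D: "ts = map (ren r1) xs0 @ [into1 x] @ replicate n skipT @ fromM gg r2 z # map (ren r2) zs0"
     "path (trs A1) 0 (xs0 @ [x]) (tg x)" "tg x \<in> fst ` fins A1" "n > 0 \<longrightarrow> sk"
     "path (trs A2) 0 (z # zs0) q2" "gr z = []"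
    by (elim exE conjE)
  define xs where "xs = xs0 @ [x]"
  define i2 where "i2 = i + length xs + n"
  have xA1: "x \<in> trs A1" using D(2) by simp
  have zA2: "z \<in> trs A2" "sr z = 0" using D(5) by auto
  have ind: "lr z \<noteq> {} \<or> (gfl zs0 \<and> gfl (map (ren r2) zs0))"
  proof (cases "labA A2")
    case True then show ?thesis using zA2 unfolding labA_def by auto
  next
    case False
    then have "gfA A2" using lab2 by blast
    then have "gfl zs0" using gfA_path[of A2] D(5) by (auto simp: gfl_def)
    then show ?thesis using gfl_map_ren by blast
  qed
  have gapc: "xs \<noteq> [] \<and> lr (last xs) \<noteq> {}" if "gg \<noteq> []"
    using that lab1 xA1 D(3) unfolding labA_def xs_def by auto
  have ts_eq: "ts = (map (ren r1) xs0 @ [into1 x]) @ replicate n skipT @ fromM gg r2 z # map (ren r2) zs0"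
    using D(1) by simp
  have R: "rok S i None xs \<and> rok S i2 None (z # zs0) \<and> (\<forall>I\<in>set gg. in_ivl (tm S i2 - tm S (i2 - n - 1)) I)"
    using rok_glue[OF simL_glue1[of xs0 x] simL_ren[of zs0 r2], of "fromM gg r2 z" z gg i n i2 S] D(6) ind
      i2_def gapc C(5) ts_eq unfolding xs_def by auto
  have len: "length ts = length xs + n + Suc (length zs0)" using D(1) unfolding xs_def by simp
  have "(tg x, []) \<in> fins A1" using D(3) nw1 unfolding nowin_def by auto
  then have a1: "acc A1 S i xs" using C(3,4) R D(2) len unfolding xs_def by (intro acc_intro) auto
  have a2: "acc A2 S i2 (z # zs0)" using C(3,4) R D(5) len q2(1) Is2 unfolding i2_def by (intro acc_intro) auto
  define C1 where "C1 = (i, i + length xs - 1, outmu i xs)"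
  define C2 where "C2 = (i2, i2 + length (z # zs0) - 1, outmu i2 (z # zs0))"
  have "C1 \<in> lang A1 S" using a1 unfolding C1_def lang_def by blast
  moreover have "C2 \<in> lang A2 S" using a2 unfolding C2_def lang_def by blast
  moreover have "seqc sk S gg C1 C2"
  proof -
    have "cend C1 = i + length xs0" "cstart C2 = i2" "i2 - n - 1 = i + length xs0"
      unfolding C1_def C2_def cend_def cstart_def i2_def xs_def by auto
    then show ?thesis using R D(4) unfolding seqc_def i2_def xs_def by auto
  qed
  moreover have "C = cunion C1 C2"
  proof -
    have o: "outmu i ts X = outmu i xs X \<union> outmu i2 (z # zs0) X" for X
      using outmu_glue[OF simL_glue1[of xs0 x] simL_ren[of zs0 r2], of "fromM gg r2 z" z i n i2 X]
        ts_eq i2_def unfolding xs_def by simp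
    have "cunion C1 C2 = (i, i2 + length (z # zs0) - 1, \<lambda>X. outmu i xs X \<union> outmu i2 (z # zs0) X)"
      unfolding C1_def C2_def by (rule cunion_simp) (auto simp: xs_def i2_def)
    then show ?thesis using C(1) o len i2_def by auto
  qed
  ultimately show "C \<in> seqop (seqc sk S gg) (lang A1 S) (lang A2 S)" unfolding seqop_def by blast
next
  fix C assume "C \<in> seqop (seqc sk S gg) (lang A1 S) (lang A2 S)"
  then obtain C1 C2 where CC: "C = cunion C1 C2" "C1 \<in> lang A1 S" "C2 \<in> lang A2 S" "seqc sk S gg C1 C2"
    unfolding seqop_def by blast
  obtain i xs where C1: "C1 = (i, i + length xs - 1, outmu i xs)" "acc A1 S i xs"
    using CC(2) unfolding lang_def by blast
  obtain i2 ys where C2: "C2 = (i2, i2 + length ys - 1, outmu i2 ys)" "acc A2 S i2 ys"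
    using CC(3) unfolding lang_def by blast
  obtain q1 where a1: "xs \<noteq> []" "1 \<le> i" "i + length xs \<le> Suc (length S)" "rok S i None xs"
    "path (trs A1) 0 xs q1" "(q1, []) \<in> fins A1" using acc_nowin[OF C1(2) nw1] by blast
  obtain q2 where a2: "ys \<noteq> []" "1 \<le> i2" "i2 + length ys \<le> Suc (length S)" "rok S i2 None ys"
    "path (trs A2) 0 ys q2" "(q2, []) \<in> fins A2" using acc_nowin[OF C2(2) nw2] by blast
  obtain xs0 x where xs: "xs = xs0 @ [x]" using a1(1) by (cases xs rule: rev_cases) auto
  obtain z zs0 where ys: "ys = z # zs0" using a2(1) by (cases ys) auto
  have px: "path (trs A1) 0 xs0 (sr x)" "x \<in> trs A1" "tg x = q1" using a1(5) xs by auto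
  have pz: "z \<in> trs A2" "sr z = 0" "path (trs A2) (tg z) zs0 q2" using a2(5) ys by auto
  have gz: "gr z = []" using rok_first_gr a2(4) ys by blast
  have tgz: "tg z \<noteq> 0" using pz(1) inv2 unfolding ainv_def by auto
  have sq: "(if sk then i + length xs0 < i2 else i + length xs0 + 1 = i2)"
    and gap: "\<forall>I\<in>set gg. in_ivl (tm S i2 - tm S (i + length xs0)) I"
    using CC(4) C1(1) C2(1) xs unfolding seqc_def cend_def cstart_def by auto
  define n where "n = i2 - (i + length xs)"
  have pos: "i + length xs + n = i2" using sq xs unfolding n_def by (auto split: if_splits)
  have nsk: "skipT \<in> trs (aseq sk gg A1 A2) \<or> n = 0"
    using sq xs unfolding n_def aseq_def by (auto split: if_splits)
  define ts where "ts = map (ren r1) xs0 @ [into1 x] @ replicate n skipT @ fromM gg r2 z # map (ren r2) zs0"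
  let ?T = "trs (aseq sk gg A1 A2)"
  have p1: "path ?T 0 (map (ren r1) xs0) (r1 (sr x))"
  proof (rule path_mono)
    show "path (ren r1 ` trs A1) 0 (map (ren r1) xs0) (r1 (sr x))" using path_ren[OF px(1), of r1] by simp
    show "ren r1 ` trs A1 \<subseteq> ?T" unfolding aseq_def by auto
  qed
  have "x \<in> {t\<in>trs A1. tg t \<in> fst ` fins A1}" using px a1(6) by force
  then have "into1 x \<in> ?T" unfolding aseq_def aut.sel by blast
  then have p2: "path ?T (r1 (sr x)) [into1 x] 1" by simp
  have p3: "path ?T 1 (replicate n skipT) 1" using path_skips nsk by blast
  have "z \<in> {t\<in>trs A2. sr t = 0 \<and> gr t = []}" using pz gz by blast
  then have "fromM gg r2 z \<in> ?T" unfolding aseq_def aut.sel by blast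
  then have p4: "path ?T 1 [fromM gg r2 z] (r2 (tg z))" by simp
  have "path {t\<in>trs A2. sr t \<noteq> 0} (tg z) zs0 q2"
    using path_nonzero[OF _ pz(3) tgz] inv2 unfolding ainv_def by blast
  then have p5: "path ?T (r2 (tg z)) (map (ren r2) zs0) (r2 q2)"
  proof (rule path_mono[OF path_ren])
    show "ren r2 ` {t\<in>trs A2. sr t \<noteq> 0} \<subseteq> ?T" unfolding aseq_def by auto
  qed
  have pts: "path ?T 0 ts (r2 q2)" unfolding ts_def
  proof -
    have "path ?T 1 (fromM gg r2 z # map (ren r2) zs0) (r2 q2)" using p4 p5 by simp
    then show "path ?T 0 (map (ren r1) xs0 @ [into1 x] @ replicate n skipT @ fromM gg r2 z # map (ren r2) zs0) (r2 q2)"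
      by (rule path_appendI[OF p1 path_appendI[OF p2 path_appendI[OF p3]]])
  qed
  have fin: "(r2 q2, []) \<in> fins (aseq sk gg A1 A2)" using a2(6) unfolding aseq_def by force
  have ind: "lr z \<noteq> {} \<or> (gfl zs0 \<and> gfl (map (ren r2) zs0))"
  proof (cases "labA A2")
    case True then show ?thesis using pz unfolding labA_def by auto
  next
    case False
    then have "gfA A2" using lab2 by blast
    then have "gfl zs0" using gfA_path[of A2] pz(3) by blast
    then show ?thesis using gfl_map_ren by blast
  qed
  have gapc: "xs \<noteq> [] \<and> lr (last xs) \<noteq> {}" if "gg \<noteq> []"
    using that lab1 px a1(6) xs unfolding labA_def by force
  have ts_eq: "ts = (map (ren r1) xs0 @ [into1 x]) @ replicate n skipT @ fromM gg r2 z # map (ren r2) zs0"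
    unfolding ts_def by simp
  have "i2 - n - 1 = i + length xs0" using pos xs by auto
  then have R: "rok S i None ts"
    using rok_glue[OF simL_glue1[of xs0 x] simL_ren[of zs0 r2], of "fromM gg r2 z" z gg i n i2 S] gz ind
      pos gapc a1(4) a2(4) gap ts_eq xs ys by auto
  have len: "length ts = length xs + n + length ys" unfolding ts_def using xs ys by simp
  have acc: "acc (aseq sk gg A1 A2) S i ts"
    using a1(2) a2(3) R pts fin len pos unfolding ts_def by (intro acc_intro) auto
  have o: "outmu i ts X = outmu i xs X \<union> outmu i2 ys X" for X
    using outmu_glue[OF simL_glue1[of xs0 x] simL_ren[of zs0 r2], of "fromM gg r2 z" z i n i2 X]
      ts_eq pos xs ys by simp
  have "C = (i, i2 + length ys - 1, \<lambda>X. outmu i xs X \<union> outmu i2 ys X)"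
    using CC(1) C1(1) C2(1) by (simp add: cunion_simp pos[symmetric] a1(1) a2(1) xs ys)
  also have "\<dots> = (i, i + length ts - 1, outmu i ts)" using o len pos by auto
  finally show "C \<in> lang (aseq sk gg A1 A2) S" using acc unfolding lang_def by blast
qed

definition loopM :: "interval list \<Rightarrow> ('x,'ev) tr \<Rightarrow> ('x,'ev) tr" where
  "loopM gg t = Tr 1 (pr t) gg (lr t) 1"

definition aplus :: "bool \<Rightarrow> interval list \<Rightarrow> ('x,'ev) aut \<Rightarrow> ('x,'ev) aut" where
  "aplus sk gg A = Aut (ren r1 ` trs A \<union> into1 ` {t\<in>trs A. tg t \<in> fst ` fins A} \<union> {t. t = skipT \<and> sk}
      \<union> fromM gg r1 ` {t\<in>trs A. sr t = 0 \<and> gr t = []}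
      \<union> loopM gg ` {t\<in>trs A. sr t = 0 \<and> gr t = [] \<and> tg t \<in> fst ` fins A})
     ((\<lambda>(q,Is). (r1 q, [])) ` fins A)"

definition redir :: "interval list \<Rightarrow> ('x,'ev) tr \<Rightarrow> ('x,'ev) tr" where
  "redir gg y = Tr 1 (pr y) gg (lr y) (tg y)"

definition unredir :: "('x,'ev) tr \<Rightarrow> ('x,'ev) tr" where
  "unredir u = Tr 0 (pr u) [] (lr u) (tg u)"

lemma redir_simps[simp]: "sr (redir gg y) = 1" "tg (redir gg y) = tg y" "pr (redir gg y) = pr y"
  "gr (redir gg y) = gg" "lr (redir gg y) = lr y"
  by (auto simp: redir_def)

lemma unredir_simps[simp]: "sr (unredir y) = 0" "tg (unredir y) = tg y" "pr (unredir y) = pr y"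
  "gr (unredir y) = []" "lr (unredir y) = lr y"
  by (auto simp: unredir_def)

lemma loopM_simps[simp]: "sr (loopM gg t) = 1" "tg (loopM gg t) = 1" "pr (loopM gg t) = pr t"
  "gr (loopM gg t) = gg" "lr (loopM gg t) = lr t"
  by (auto simp: loopM_def)

lemma plus_init_cases:
  assumes "y \<in> trs (aplus sk gg A)" "sr y = 0"
  obtains z where "z \<in> trs A" "sr z = 0" "y = ren r1 z"
  | z where "z \<in> trs A" "sr z = 0" "tg z \<in> fst ` fins A" "y = into1 z"
proof -
  have "y \<in> ren r1 ` trs A \<or> y \<in> into1 ` {t\<in>trs A. tg t \<in> fst ` fins A}"
    using assms unfolding aplus_def by auto
  then show ?thesis
  proof
    assume "y \<in> ren r1 ` trs A"
    then obtain z where "z \<in> trs A" "y = ren r1 z" by blast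
    moreover then have "sr z = 0" using assms(2) by (simp add: r1_def)
    ultimately show ?thesis using that by blast
  next
    assume "y \<in> into1 ` {t\<in>trs A. tg t \<in> fst ` fins A}"
    then obtain z where "z \<in> trs A" "tg z \<in> fst ` fins A" "y = into1 z" by blast
    moreover then have "sr z = 0" using assms(2) by (simp add: r1_def)
    ultimately show ?thesis using that by blast
  qed
qed

lemma redir_in:
  assumes "y \<in> trs (aplus sk gg A)" "sr y = 0" "gr y = []"
  shows "redir gg y \<in> trs (aplus sk gg A)"
  using assms(1,2)
proof (cases rule: plus_init_cases)
  case (1 z)
  then have "redir gg y = fromM gg r1 z" "gr z = []" using assms(3) by (auto simp: redir_def fromM_def)
  then show ?thesis using 1 unfolding aplus_def aut.sel by blast
next
  case (2 z)
  then have "redir gg y = loopM gg z" "gr z = []" using assms(3) by (auto simp: redir_def loopM_def)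
  then show ?thesis using 2 unfolding aplus_def aut.sel by blast
qed

lemma redir_lab:
  assumes "y \<in> trs (aplus sk gg A)" "sr y = 0" "labA A"
  shows "lr y \<noteq> {}"
  using assms(1,2)
proof (cases rule: plus_init_cases)
  case (1 z) then show ?thesis using assms(3) unfolding labA_def by auto
next
  case (2 z) then show ?thesis using assms(3) unfolding labA_def by auto
qed

lemma unredir_in:
  assumes "u \<in> trs (aplus sk gg A)" "sr u = 1" "sk \<longrightarrow> u \<noteq> skipT"
  shows "unredir u \<in> trs (aplus sk gg A) \<and> gr u = gg \<and> u = redir gg (unredir u) \<and> (labA A \<longrightarrow> lr u \<noteq> {})"
proof -
  have "u \<notin> ren r1 ` trs A" using assms(2) by (intro not_ren1) simp
  moreover have "u \<notin> into1 ` {t\<in>trs A. tg t \<in> fst ` fins A}" using assms(2) by (intro not_into1) simp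
  moreover have "u \<notin> {t. t = skipT \<and> sk}" using assms(3) by auto
  ultimately have "u \<in> fromM gg r1 ` {t\<in>trs A. sr t = 0 \<and> gr t = []} \<or>
      u \<in> loopM gg ` {t\<in>trs A. sr t = 0 \<and> gr t = [] \<and> tg t \<in> fst ` fins A}"
    using assms(1) unfolding aplus_def by auto
  then show ?thesis
  proof
    assume "u \<in> fromM gg r1 ` {t\<in>trs A. sr t = 0 \<and> gr t = []}"
    then obtain z where z: "z \<in> trs A" "sr z = 0" "gr z = []" "u = fromM gg r1 z" by blast
    then have "unredir u = ren r1 z" by (simp add: unredir_def ren_def fromM_def)
    then show ?thesis using z unfolding aplus_def labA_def
      by (auto simp: redir_def fromM_def)
  next
    assume "u \<in> loopM gg ` {t\<in>trs A. sr t = 0 \<and> gr t = [] \<and> tg t \<in> fst ` fins A}"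
    then obtain z where z: "z \<in> trs A" "sr z = 0" "gr z = []" "tg z \<in> fst ` fins A" "u = loopM gg z" by blast
    then have "unredir u = into1 z" by (simp add: unredir_def into1_def loopM_def)
    then show ?thesis using z unfolding aplus_def labA_def
      by (auto simp: redir_def loopM_def)
  qed
qed

lemma gfA_plus: "gfA A \<Longrightarrow> gfA (aplus sk [] A)"
  unfolding gfA_def aplus_def by (auto simp: fromM_def loopM_def)

lemma split_first2:
  "path T q ts q' \<Longrightarrow> \<Phi> q \<Longrightarrow> path {u\<in>T. \<Phi> (sr u) \<and> \<Phi> (tg u)} q ts q' \<or>
   (\<exists>xs t ys. ts = xs @ t # ys \<and> path {u\<in>T. \<Phi> (sr u) \<and> \<Phi> (tg u)} q xs (sr t) \<and> t \<in> T \<and> \<Phi> (sr t) \<and>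
     \<not> \<Phi> (tg t) \<and> path T (tg t) ys q')"
proof (induction ts arbitrary: q)
  case Nil then show ?case by simp
next
  case (Cons t ts)
  show ?case
  proof (cases "\<Phi> (tg t)")
    case True
    have "path T (tg t) ts q'" using Cons.prems by auto
    from Cons.IH[OF this True] show ?thesis
    proof
      assume "path {u\<in>T. \<Phi> (sr u) \<and> \<Phi> (tg u)} (tg t) ts q'"
      then show ?thesis using Cons.prems True by auto
    next
      assume "\<exists>xs t' ys. ts = xs @ t' # ys \<and> path {u\<in>T. \<Phi> (sr u) \<and> \<Phi> (tg u)} (tg t) xs (sr t') \<and> t' \<in> T \<and>
         \<Phi> (sr t') \<and> \<not> \<Phi> (tg t') \<and> path T (tg t') ys q'"
      then obtain xs t' ys where "ts = xs @ t' # ys" "path {u\<in>T. \<Phi> (sr u) \<and> \<Phi> (tg u)} (tg t) xs (sr t')"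
        "t' \<in> T" "\<Phi> (sr t')" "\<not> \<Phi> (tg t')" "path T (tg t') ys q'" by (elim exE conjE)
      then show ?thesis using Cons.prems True
        by (intro disjI2 exI[of _ "t # xs"] exI[of _ t'] exI[of _ ys]) auto
    qed
  next
    case False
    then show ?thesis using Cons.prems by (intro disjI2 exI[of _ "[]"] exI[of _ t] exI[of _ ts]) auto
  qed
qed

lemma plus_decomp:
  assumes inv: "ainv A" and p: "path (trs (aplus sk gg A)) 0 ts q" and q: "q = r1 q1"
  shows "(\<exists>xs0. ts = map (ren r1) xs0 \<and> path (trs A) 0 xs0 q1) \<or>
    (\<exists>xs0 x n u zs. ts = map (ren r1) xs0 @ [into1 x] @ replicate n skipT @ u # zs \<and>
     path (trs A) 0 (xs0 @ [x]) (tg x) \<and> tg x \<in> fst ` fins A \<and> (n > 0 \<longrightarrow> sk) \<and>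
     u \<in> trs (aplus sk gg A) \<and> sr u = 1 \<and> (sk \<longrightarrow> u \<noteq> skipT) \<and> path (trs (aplus sk gg A)) (tg u) zs q)"
proof -
  let ?T = "trs (aplus sk gg A)"
  have ev_sub: "{u\<in>?T. even (sr u) \<and> even (tg u)} \<subseteq> ren r1 ` trs A"
  proof
    fix u assume u: "u \<in> {u\<in>?T. even (sr u) \<and> even (tg u)}"
    then have "u \<notin> into1 ` {t\<in>trs A. tg t \<in> fst ` fins A}" by auto
    moreover have "u \<notin> {t. t = skipT \<and> sk}" using u by auto
    moreover have "u \<notin> fromM gg r1 ` {t\<in>trs A. sr t = 0 \<and> gr t = []}" using u by auto
    moreover have "u \<notin> loopM gg ` {t\<in>trs A. sr t = 0 \<and> gr t = [] \<and> tg t \<in> fst ` fins A}" using u by auto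
    ultimately show "u \<in> ren r1 ` trs A" using u unfolding aplus_def by auto
  qed
  from split_first2[where \<Phi> = even, OF p even_zero] show ?thesis
  proof
    assume "path {u\<in>?T. even (sr u) \<and> even (tg u)} 0 ts q"
    then have "path (ren r1 ` trs A) (r1 0) ts (r1 q1)" using path_mono ev_sub q by simp
    from path_ren_inv[OF inj_r1 this] obtain xs0 q' where "ts = map (ren r1) xs0" "path (trs A) 0 xs0 q'" "r1 q1 = r1 q'"
      by (elim exE conjE)
    moreover then have "q' = q1" using inj_r1 by (auto simp: inj_eq)
    ultimately show ?thesis by blast
  next
    assume "\<exists>xs t ys. ts = xs @ t # ys \<and> path {u\<in>?T. even (sr u) \<and> even (tg u)} 0 xs (sr t) \<and> t \<in> ?T \<and>
      even (sr t) \<and> \<not> even (tg t) \<and> path ?T (tg t) ys q"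
    then obtain xs t ys where s1: "ts = xs @ t # ys" "path {u\<in>?T. even (sr u) \<and> even (tg u)} 0 xs (sr t)"
      "t \<in> ?T" "even (sr t)" "\<not> even (tg t)" "path ?T (tg t) ys q" by (elim exE conjE)
    have "path (ren r1 ` trs A) (r1 0) xs (sr t)" using path_mono[OF s1(2) ev_sub] by simp
    from path_ren_inv[OF inj_r1 this] obtain xs0 p0 where x0: "xs = map (ren r1) xs0" "path (trs A) 0 xs0 p0" "sr t = r1 p0"
      by (elim exE conjE)
    have "t \<in> into1 ` {t\<in>trs A. tg t \<in> fst ` fins A}"
    proof -
      have "t \<notin> ren r1 ` trs A" using s1(5) r1_even by auto
      moreover have "t \<notin> {t. t = skipT \<and> sk}" using s1(4) by auto
      moreover have "t \<notin> fromM gg r1 ` {t\<in>trs A. sr t = 0 \<and> gr t = []}" using s1(4) by auto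
      moreover have "t \<notin> loopM gg ` {t\<in>trs A. sr t = 0 \<and> gr t = [] \<and> tg t \<in> fst ` fins A}" using s1(4) by auto
      ultimately show ?thesis using s1(3) unfolding aplus_def by auto
    qed
    then obtain x where x: "t = into1 x" "x \<in> trs A" "tg x \<in> fst ` fins A" by auto
    have "sr x = p0" using x0(3) x(1) inj_r1 by (auto simp: inj_eq)
    then have pA: "path (trs A) 0 (xs0 @ [x]) (tg x)" using x0(2) x(2) by auto
    have "q \<noteq> 1" using q r1_even[of q1] by auto
    have "path ?T 1 ys q" using s1(6) x(1) by simp
    have "\<exists>n u zs. ys = replicate n skipT @ u # zs \<and> (sk \<longrightarrow> u \<noteq> skipT) \<and>
      sr u = 1 \<and> u \<in> ?T \<and> path ?T (tg u) zs q \<and> (n > 0 \<longrightarrow> sk)"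
    proof (cases sk)
      case True
      from skips_split[OF \<open>path ?T 1 ys q\<close> \<open>q \<noteq> 1\<close>] obtain n u zs where "ys = replicate n skipT @ u # zs" "u \<noteq> skipT"
        "sr u = 1" "u \<in> ?T" "path ?T (tg u) zs q" by (elim exE conjE)
      then show ?thesis using True by blast
    next
      case False
      obtain u zs where "ys = u # zs" using \<open>path ?T 1 ys q\<close> \<open>q \<noteq> 1\<close> by (cases ys) auto
      then show ?thesis using False \<open>path ?T 1 ys q\<close> by (intro exI[of _ 0] exI[of _ u] exI[of _ zs]) auto
    qed
    then obtain n u zs where s2: "ys = replicate n skipT @ u # zs" "sk \<longrightarrow> u \<noteq> skipT"
      "sr u = 1" "u \<in> ?T" "path ?T (tg u) zs q" "n > 0 \<longrightarrow> sk"
      by (elim exE conjE)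
    have "ts = map (ren r1) xs0 @ [into1 x] @ replicate n skipT @ u # zs"
      using s1(1) x0(1) x(1) s2(1) by simp
    then show ?thesis using pA x(3) s2 by blast
  qed
qed

lemma mono_seqF: "mono (\<lambda>Y. B \<union> seqop c B Y)"
  unfolding mono_def seqop_def by blast

lemma lfp_char:
  assumes sub: "B \<union> seqop c B L \<subseteq> L" and wfL: "\<forall>C\<in>L. cstart C \<le> cend C"
    and dec: "\<forall>C\<in>L. C \<in> B \<or> (\<exists>C1\<in>B. \<exists>C2\<in>L. c C1 C2 \<and> C = cunion C1 C2 \<and> cstart C < cstart C2 \<and> cend C2 = cend C)"
  shows "lfp (\<lambda>Y. B \<union> seqop c B Y) = L"
proof
  show "lfp (\<lambda>Y. B \<union> seqop c B Y) \<subseteq> L" by (rule lfp_lowerbound) (rule sub)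
next
  let ?F = "\<lambda>Y. B \<union> seqop c B Y"
  have "\<forall>C. C \<in> L \<longrightarrow> cend C - cstart C = m \<longrightarrow> C \<in> lfp ?F" for m
  proof (induction m rule: less_induct)
    case (less m)
    show ?case
    proof (intro allI impI)
      fix C assume C: "C \<in> L" "cend C - cstart C = m"
      have B: "B \<subseteq> lfp ?F" using lfp_unfold[OF mono_seqF, of B c] by blast
      have "C \<in> B \<or> (\<exists>C1\<in>B. \<exists>C2\<in>L. c C1 C2 \<and> C = cunion C1 C2 \<and> cstart C < cstart C2 \<and> cend C2 = cend C)"
        using dec C(1) by blast
      then show "C \<in> lfp ?F"
      proof
        assume "C \<in> B" then show ?thesis using B by blast
      next
        assume "\<exists>C1\<in>B. \<exists>C2\<in>L. c C1 C2 \<and> C = cunion C1 C2 \<and> cstart C < cstart C2 \<and> cend C2 = cend C"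
        then obtain C1 C2 where D: "C1 \<in> B" "C2 \<in> L" "c C1 C2" "C = cunion C1 C2" "cstart C < cstart C2"
          "cend C2 = cend C" by blast
        have "cstart C2 \<le> cend C2" using wfL D(2) by blast
        then have "cend C2 - cstart C2 < m" using D(5,6) C(2) by linarith
        then have "C2 \<in> lfp ?F" using less.IH D(2) by blast
        then have "C \<in> seqop c B (lfp ?F)" using D unfolding seqop_def by blast
        then show ?thesis using lfp_unfold[OF mono_seqF, of B c] by blast
      qed
    qed
  qed
  then show "L \<subseteq> lfp ?F" by blast
qed

lemma nowin_plus: "nowin (aplus sk gg A)"
  unfolding nowin_def aplus_def by auto

lemma lang_plus:
  assumes inv: "ainv A" and nw: "nowin A" and lab: "labA A \<or> (gfA A \<and> gg = [])"
  shows "lang (aplus sk gg A) S = lfp (\<lambda>Y. lang A S \<union> seqop (seqc sk S gg) (lang A S) Y)"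
proof (rule lfp_char[symmetric])
  let ?T = "trs (aplus sk gg A)"
  let ?L = "lang (aplus sk gg A) S"
  have gfl_all: "gfl ts" if "\<not> labA A" "path ?T q ts q'" for ts q q'
  proof -
    have "gfA A" "gg = []" using lab that(1) by auto
    then have "gfA (aplus sk gg A)" using gfA_plus by blast
    then show ?thesis using gfA_path that(2) by blast
  qed
  show "lang A S \<union> seqop (seqc sk S gg) (lang A S) ?L \<subseteq> ?L"
  proof (intro Un_least subsetI)
    fix C assume "C \<in> lang A S"
    then obtain i xs where C: "C = (i, i + length xs - 1, outmu i xs)" "acc A S i xs" unfolding lang_def by blast
    have "acc (aplus sk gg A) S i (map (ren r1) xs)"
    proof (rule acc_ren_fwd[OF C(2)])
      show "\<forall>(q,Is)\<in>fins A. (r1 q, Is) \<in> fins (aplus sk gg A)" using nw unfolding nowin_def aplus_def by force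
      show "ren r1 ` trs A \<subseteq> trs (aplus sk gg A)" unfolding aplus_def by auto
    qed simp
    moreover have "C = (i, i + length (map (ren r1) xs) - 1, outmu i (map (ren r1) xs))" using C(1) by simp
    ultimately show "C \<in> ?L" unfolding lang_def by blast
  next
    fix C assume "C \<in> seqop (seqc sk S gg) (lang A S) ?L"
    then obtain C1 C2 where CC: "C = cunion C1 C2" "C1 \<in> lang A S" "C2 \<in> ?L" "seqc sk S gg C1 C2"
      unfolding seqop_def by blast
    obtain i xs where C1: "C1 = (i, i + length xs - 1, outmu i xs)" "acc A S i xs"
      using CC(2) unfolding lang_def by blast
    obtain i2 ys where C2: "C2 = (i2, i2 + length ys - 1, outmu i2 ys)" "acc (aplus sk gg A) S i2 ys"
      using CC(3) unfolding lang_def by blast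
    obtain q1 where a1: "xs \<noteq> []" "1 \<le> i" "i + length xs \<le> Suc (length S)" "rok S i None xs"
      "path (trs A) 0 xs q1" "(q1, []) \<in> fins A" using acc_nowin[OF C1(2) nw] by blast
    obtain q2 where a2: "ys \<noteq> []" "1 \<le> i2" "i2 + length ys \<le> Suc (length S)" "rok S i2 None ys"
      "path ?T 0 ys q2" "(q2, []) \<in> fins (aplus sk gg A)" using acc_nowin[OF C2(2) nowin_plus] by blast
    obtain xs0 x where xs: "xs = xs0 @ [x]" using a1(1) by (cases xs rule: rev_cases) auto
    obtain y ys' where ys: "ys = y # ys'" using a2(1) by (cases ys) auto
    have px: "path (trs A) 0 xs0 (sr x)" "x \<in> trs A" "tg x = q1" using a1(5) xs by auto
    have py: "y \<in> ?T" "sr y = 0" "path ?T (tg y) ys' q2" using a2(5) ys by auto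
    have gy: "gr y = []" using rok_first_gr a2(4) ys by blast
    have sq: "(if sk then i + length xs0 < i2 else i + length xs0 + 1 = i2)"
      and gap: "\<forall>I\<in>set gg. in_ivl (tm S i2 - tm S (i + length xs0)) I"
      using CC(4) C1(1) C2(1) xs unfolding seqc_def cend_def cstart_def by auto
    define n where "n = i2 - (i + length xs)"
    have pos: "i + length xs + n = i2" using sq xs unfolding n_def by (auto split: if_splits)
    have nsk: "skipT \<in> ?T \<or> n = 0"
      using sq xs unfolding n_def aplus_def by (auto split: if_splits)
    define ts where "ts = map (ren r1) xs0 @ [into1 x] @ replicate n skipT @ redir gg y # ys'"
    have p1: "path ?T 0 (map (ren r1) xs0) (r1 (sr x))"
    proof (rule path_mono)
      show "path (ren r1 ` trs A) 0 (map (ren r1) xs0) (r1 (sr x))" using path_ren[OF px(1), of r1] by simp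
      show "ren r1 ` trs A \<subseteq> ?T" unfolding aplus_def by auto
    qed
    have "x \<in> {t\<in>trs A. tg t \<in> fst ` fins A}" using px a1(6) by force
    then have "into1 x \<in> ?T" unfolding aplus_def aut.sel by blast
    then have p2: "path ?T (r1 (sr x)) [into1 x] 1" by simp
    have p3: "path ?T 1 (replicate n skipT) 1" using path_skips nsk by blast
    have p4: "path ?T 1 (redir gg y # ys') q2" using redir_in[OF py(1,2) gy] py(3) by simp
    have pts: "path ?T 0 ts q2" unfolding ts_def
      by (rule path_appendI[OF p1 path_appendI[OF p2 path_appendI[OF p3 p4]]])
    have ind: "lr y \<noteq> {} \<or> (gfl ys' \<and> gfl ys')"
      using redir_lab[OF py(1,2)] gfl_all[OF _ py(3)] by blast
    have gapc: "xs \<noteq> [] \<and> lr (last xs) \<noteq> {}" if "gg \<noteq> []"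
    proof -
      have "labA A" using lab that by blast
      then show ?thesis using px a1(6) xs unfolding labA_def by force
    qed
    have ts_eq: "ts = (map (ren r1) xs0 @ [into1 x]) @ replicate n skipT @ redir gg y # ys'"
      unfolding ts_def by simp
    have "i2 - n - 1 = i + length xs0" using pos xs by auto
    then have R: "rok S i None ts"
      using rok_glue[OF simL_glue1[of xs0 x] simL_refl[of ys'], of "redir gg y" y gg i n i2 S] gy ind
        pos gapc a1(4) a2(4) gap ts_eq xs ys by auto
    have len: "length ts = length xs + n + length ys" unfolding ts_def using xs ys by simp
    have acc: "acc (aplus sk gg A) S i ts"
      using a1(2) a2(3,6) R pts len pos unfolding ts_def by (intro acc_intro) auto
    have o: "outmu i ts X = outmu i xs X \<union> outmu i2 ys X" for X
      using outmu_glue[OF simL_glue1[of xs0 x] simL_refl[of ys'], of "redir gg y" y i n i2 X]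
        ts_eq pos xs ys by simp
    have "C = (i, i2 + length ys - 1, \<lambda>X. outmu i xs X \<union> outmu i2 ys X)"
      using CC(1) C1(1) C2(1) by (simp add: cunion_simp pos[symmetric] a1(1) a2(1) xs ys)
    also have "\<dots> = (i, i + length ts - 1, outmu i ts)" using o len pos by auto
    finally show "C \<in> ?L" using acc unfolding lang_def by blast
  qed
  show "\<forall>C\<in>?L. cstart C \<le> cend C"
    unfolding lang_def acc_def cstart_def cend_def by (auto simp: neq_Nil_conv)
  show "\<forall>C\<in>?L. C \<in> lang A S \<or> (\<exists>C1\<in>lang A S. \<exists>C2\<in>?L. seqc sk S gg C1 C2 \<and> C = cunion C1 C2 \<and>
           cstart C < cstart C2 \<and> cend C2 = cend C)"
  proof
    fix C assume "C \<in> ?L"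
    then obtain i ts q Is where C: "C = (i, i + length ts - 1, outmu i ts)" "ts \<noteq> []" "1 \<le> i"
      "i + length ts \<le> Suc (length S)" "rok S i None ts" "path ?T 0 ts q" "(q, Is) \<in> fins (aplus sk gg A)"
      unfolding lang_def acc_def by blast
    obtain q1 Is1 where q1: "(q1, Is1) \<in> fins A" "q = r1 q1" "Is = []" using C(7) unfolding aplus_def by auto
    have Is1: "Is1 = []" using q1(1) nw unfolding nowin_def by auto
    from plus_decomp[OF inv C(6) q1(2)]
    show "C \<in> lang A S \<or> (\<exists>C1\<in>lang A S. \<exists>C2\<in>?L. seqc sk S gg C1 C2 \<and> C = cunion C1 C2 \<and>
           cstart C < cstart C2 \<and> cend C2 = cend C)"
    proof
      assume "\<exists>xs0. ts = map (ren r1) xs0 \<and> path (trs A) 0 xs0 q1"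
      then obtain xs0 where X: "ts = map (ren r1) xs0" "path (trs A) 0 xs0 q1" by blast
      have "acc A S i xs0" using X C(2,3,4,5) q1(1) Is1 by (intro acc_intro) auto
      moreover have "C = (i, i + length xs0 - 1, outmu i xs0)" using C(1) X(1) by simp
      ultimately show ?thesis unfolding lang_def by blast
    next
      assume "\<exists>xs0 x n u zs. ts = map (ren r1) xs0 @ [into1 x] @ replicate n skipT @ u # zs \<and>
       path (trs A) 0 (xs0 @ [x]) (tg x) \<and> tg x \<in> fst ` fins A \<and> (n > 0 \<longrightarrow> sk) \<and>
       u \<in> ?T \<and> sr u = 1 \<and> (sk \<longrightarrow> u \<noteq> skipT) \<and> path ?T (tg u) zs q"
      then obtain xs0 x n u zs where D: "ts = map (ren r1) xs0 @ [into1 x] @ replicate n skipT @ u # zs"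
       "path (trs A) 0 (xs0 @ [x]) (tg x)" "tg x \<in> fst ` fins A" "n > 0 \<longrightarrow> sk"
       "u \<in> ?T" "sr u = 1" "sk \<longrightarrow> u \<noteq> skipT" "path ?T (tg u) zs q" by (elim exE conjE)
      have U: "unredir u \<in> ?T" "gr u = gg" "u = redir gg (unredir u)" "labA A \<longrightarrow> lr u \<noteq> {}"
        using unredir_in[OF D(5,6,7)] by auto
      define xs where "xs = xs0 @ [x]"
      define i2 where "i2 = i + length xs + n"
      have xA: "x \<in> trs A" using D(2) by simp
      have ind: "lr (unredir u) \<noteq> {} \<or> (gfl zs \<and> gfl zs)"
        using U(4) gfl_all[OF _ D(8)] by auto
      have gapc: "xs \<noteq> [] \<and> lr (last xs) \<noteq> {}" if "gg \<noteq> []"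
      proof -
        have "labA A" using lab that by blast
        then show ?thesis using xA D(3) unfolding labA_def xs_def by auto
      qed
      have ts_eq: "ts = (map (ren r1) xs0 @ [into1 x]) @ replicate n skipT @ u # zs"
        using D(1) by simp
      have R: "rok S i None xs \<and> rok S i2 None (unredir u # zs) \<and> (\<forall>I\<in>set gg. in_ivl (tm S i2 - tm S (i2 - n - 1)) I)"
        using rok_glue[OF simL_glue1[of xs0 x] simL_refl[of zs], of u "unredir u" gg i n i2 S] U(2) ind
          i2_def gapc C(5) ts_eq unfolding xs_def by auto
      have len: "length ts = length xs + n + Suc (length zs)" using D(1) unfolding xs_def by simp
      have "(tg x, []) \<in> fins A" using D(3) nw unfolding nowin_def by auto
      then have a1: "acc A S i xs" using C(3,4) R D(2) len unfolding xs_def by (intro acc_intro) auto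
      have "path ?T 0 (unredir u # zs) q" using U(1) D(8) by simp
      then have a2: "acc (aplus sk gg A) S i2 (unredir u # zs)" using C(3,4,7) R len q1(3) unfolding i2_def
        by (intro acc_intro) auto
      define C1 where "C1 = (i, i + length xs - 1, outmu i xs)"
      define C2 where "C2 = (i2, i2 + length (unredir u # zs) - 1, outmu i2 (unredir u # zs))"
      have "C1 \<in> lang A S" using a1 unfolding C1_def lang_def by blast
      moreover have "C2 \<in> ?L" using a2 unfolding C2_def lang_def by blast
      moreover have "seqc sk S gg C1 C2"
      proof -
        have "cend C1 = i + length xs0" "cstart C2 = i2" "i2 - n - 1 = i + length xs0"
          unfolding C1_def C2_def cend_def cstart_def i2_def xs_def by auto
        then show ?thesis using R D(4) unfolding seqc_def i2_def xs_def by auto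
      qed
      moreover have "C = cunion C1 C2"
      proof -
        have o: "outmu i ts X = outmu i xs X \<union> outmu i2 (unredir u # zs) X" for X
          using outmu_glue[OF simL_glue1[of xs0 x] simL_refl[of zs], of u "unredir u" i n i2 X]
            ts_eq i2_def unfolding xs_def by simp
        have "cunion C1 C2 = (i, i2 + length (unredir u # zs) - 1, \<lambda>X. outmu i xs X \<union> outmu i2 (unredir u # zs) X)"
          unfolding C1_def C2_def by (rule cunion_simp) (auto simp: xs_def i2_def)
        then show ?thesis using C(1) o len i2_def by auto
      qed
      moreover have "cstart C < cstart C2" "cend C2 = cend C"
        using C(1) len unfolding C2_def cstart_def cend_def i2_def xs_def by auto
      ultimately show ?thesis by blast
    qed
  qed
qed

definition wfA :: "'ev set set \<Rightarrow> ('x,'ev) aut \<Rightarrow> bool" where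
  "wfA Ps A \<longleftrightarrow> (\<forall>t\<in>trs A. pr t \<in> Ps \<and> (\<forall>I\<in>set (gr t). ivl_wf I)) \<and>
      (\<forall>q Is. (q,Is)\<in>fins A \<longrightarrow> (\<forall>I\<in>set Is. ivl_wf I))"

lemma pe_pos: "0 < pe a b \<longleftrightarrow> (a \<noteq> 0 \<or> b \<noteq> 0)"
  using pe_eq0[of a b] by auto

lemma inv_atom: "ainv (aatom tp R)" "nowin (aatom tp R)" "labA (aatom tp R)" "gfA (aatom tp R)"
  "{e. tp e = R} \<in> Ps \<Longrightarrow> wfA Ps (aatom tp R)"
  by (auto simp: ainv_def nowin_def labA_def gfA_def wfA_def aatom_def)

lemma inv_amap:
  assumes "\<forall>t. sr (f t) = sr t \<and> tg (f t) = tg t"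
  shows "ainv A \<Longrightarrow> ainv (amap f A)" "nowin A \<Longrightarrow> nowin (amap f A)"
    "(\<forall>t. gr (f t) = gr t) \<Longrightarrow> gfA A \<Longrightarrow> gfA (amap f A)"
    "(\<forall>t. lr t \<noteq> {} \<longrightarrow> lr (f t) \<noteq> {}) \<Longrightarrow> labA A \<Longrightarrow> labA (amap f A)"
    "(\<forall>t. pr t \<in> Ps \<longrightarrow> pr (f t) \<in> Ps) \<Longrightarrow> (\<forall>t. gr (f t) = gr t) \<Longrightarrow> wfA Ps A \<Longrightarrow> wfA Ps (amap f A)"
  using assms by (auto simp: ainv_def nowin_def labA_def gfA_def wfA_def amap_def)

lemma inv_or:
  assumes "ainv A1" "ainv A2"
  shows "ainv (aor A1 A2)" "nowin A1 \<Longrightarrow> nowin A2 \<Longrightarrow> nowin (aor A1 A2)"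
    "gfA A1 \<Longrightarrow> gfA A2 \<Longrightarrow> gfA (aor A1 A2)"
    "labA A1 \<Longrightarrow> labA A2 \<Longrightarrow> labA (aor A1 A2)"
    "wfA Ps A1 \<Longrightarrow> wfA Ps A2 \<Longrightarrow> wfA Ps (aor A1 A2)"
proof -
  show "ainv (aor A1 A2)" using assms unfolding ainv_def aor_def
    by (auto simp: r1_def r2_def)
  show "nowin A1 \<Longrightarrow> nowin A2 \<Longrightarrow> nowin (aor A1 A2)" unfolding nowin_def aor_def by auto
  show "gfA A1 \<Longrightarrow> gfA A2 \<Longrightarrow> gfA (aor A1 A2)" unfolding gfA_def aor_def by auto
  show "wfA Ps A1 \<Longrightarrow> wfA Ps A2 \<Longrightarrow> wfA Ps (aor A1 A2)" unfolding wfA_def aor_def by auto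
  assume l: "labA A1" "labA A2"
  show "labA (aor A1 A2)" unfolding labA_def
  proof
    fix t assume t: "t \<in> trs (aor A1 A2)"
    show "(sr t = 0 \<or> tg t \<in> fst ` fins (aor A1 A2)) \<longrightarrow> lr t \<noteq> {}"
    proof
      assume h: "sr t = 0 \<or> tg t \<in> fst ` fins (aor A1 A2)"
      from t have "t \<in> ren r1 ` trs A1 \<or> t \<in> ren r2 ` trs A2" unfolding aor_def by auto
      then show "lr t \<noteq> {}"
      proof
        assume "t \<in> ren r1 ` trs A1"
        then obtain t0 where t0: "t0 \<in> trs A1" "t = ren r1 t0" by blast
        have "sr t0 = 0 \<or> tg t0 \<in> fst ` fins A1"
        proof (cases "sr t = 0")
          case True then show ?thesis using t0 by (simp add: r1_def)
        next
          case False
          then obtain Is where "(tg t, Is) \<in> fins (aor A1 A2)" using h by force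
          then have "(tg t, Is) \<in> (\<lambda>(q,Is). (r1 q, Is)) ` fins A1 \<or> (tg t, Is) \<in> (\<lambda>(q,Is). (r2 q, Is)) ` fins A2"
            unfolding aor_def by auto
          then show ?thesis
          proof
            assume "(tg t, Is) \<in> (\<lambda>(q,Is). (r1 q, Is)) ` fins A1"
            then obtain q where "(q, Is) \<in> fins A1" "r1 (tg t0) = r1 q" using t0 by auto
            then show ?thesis using inj_r1 by (force simp: inj_eq)
          next
            assume "(tg t, Is) \<in> (\<lambda>(q,Is). (r2 q, Is)) ` fins A2"
            then obtain q where "(q, Is) \<in> fins A2" "r1 (tg t0) = r2 q" using t0 by auto
            moreover have "q \<noteq> 0" using assms(2) \<open>(q, Is) \<in> fins A2\<close> unfolding ainv_def by auto
            ultimately show ?thesis using r12_ne[of "tg t0" q] by auto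
          qed
        qed
        then show ?thesis using l(1) t0 unfolding labA_def by auto
      next
        assume "t \<in> ren r2 ` trs A2"
        then obtain t0 where t0: "t0 \<in> trs A2" "t = ren r2 t0" by blast
        have "sr t0 = 0 \<or> tg t0 \<in> fst ` fins A2"
        proof (cases "sr t = 0")
          case True then show ?thesis using t0 by (simp add: r2_def split: if_splits)
        next
          case False
          then obtain Is where "(tg t, Is) \<in> fins (aor A1 A2)" using h by force
          then have "(tg t, Is) \<in> (\<lambda>(q,Is). (r1 q, Is)) ` fins A1 \<or> (tg t, Is) \<in> (\<lambda>(q,Is). (r2 q, Is)) ` fins A2"
            unfolding aor_def by auto
          then show ?thesis
          proof
            assume "(tg t, Is) \<in> (\<lambda>(q,Is). (r2 q, Is)) ` fins A2"
            then obtain q where "(q, Is) \<in> fins A2" "r2 (tg t0) = r2 q" using t0 by auto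
            then show ?thesis using inj_r2 by (force simp: inj_eq)
          next
            assume "(tg t, Is) \<in> (\<lambda>(q,Is). (r1 q, Is)) ` fins A1"
            then obtain q where "(q, Is) \<in> fins A1" "r2 (tg t0) = r1 q" using t0 by auto
            moreover have "tg t0 \<noteq> 0" using assms(2) t0(1) unfolding ainv_def by auto
            ultimately show ?thesis using r12_ne[of q "tg t0"] by auto
          qed
        qed
        then show ?thesis using l(2) t0 unfolding labA_def by auto
      qed
    qed
  qed
qed

lemma inv_and:
  assumes "ainv A1" "ainv A2"
  shows "ainv (aand A1 A2)" "nowin A1 \<Longrightarrow> nowin A2 \<Longrightarrow> nowin (aand A1 A2)"
    "gfA A1 \<Longrightarrow> gfA A2 \<Longrightarrow> gfA (aand A1 A2)"
    "labA A1 \<Longrightarrow> labA A2 \<Longrightarrow> labA (aand A1 A2)"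
    "\<forall>P\<in>Ps. \<forall>P'\<in>Ps. P \<inter> P' \<in> Ps \<Longrightarrow> wfA Ps A1 \<Longrightarrow> wfA Ps A2 \<Longrightarrow> wfA Ps (aand A1 A2)"
proof -
  have f1: "finite (trs A1)" "finite (trs A2)" "finite (fins A1)" "finite (fins A2)"
    using assms unfolding ainv_def by auto
  have "{prodt t1 t2 | t1 t2. t1 \<in> trs A1 \<and> t2 \<in> trs A2 \<and> lr t1 = lr t2} \<subseteq> (\<lambda>(a,b). prodt a b) ` (trs A1 \<times> trs A2)"
    by auto
  then have "finite {prodt t1 t2 | t1 t2. t1 \<in> trs A1 \<and> t2 \<in> trs A2 \<and> lr t1 = lr t2}"
    using f1 finite_subset by blast
  moreover have "{(pe q1 q2, Is1 @ Is2) | q1 Is1 q2 Is2. (q1, Is1) \<in> fins A1 \<and> (q2, Is2) \<in> fins A2}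
     \<subseteq> (\<lambda>((q1,Is1),(q2,Is2)). (pe q1 q2, Is1 @ Is2)) ` (fins A1 \<times> fins A2)" by force
  then have "finite {(pe q1 q2, Is1 @ Is2) | q1 Is1 q2 Is2. (q1, Is1) \<in> fins A1 \<and> (q2, Is2) \<in> fins A2}"
    using f1 finite_subset by blast
  ultimately show "ainv (aand A1 A2)" using assms unfolding ainv_def aand_def by (auto simp: pe_eq0 pe_pos)
  show "nowin A1 \<Longrightarrow> nowin A2 \<Longrightarrow> nowin (aand A1 A2)" unfolding nowin_def aand_def by auto
  show "gfA A1 \<Longrightarrow> gfA A2 \<Longrightarrow> gfA (aand A1 A2)" unfolding gfA_def aand_def by auto
  show "\<forall>P\<in>Ps. \<forall>P'\<in>Ps. P \<inter> P' \<in> Ps \<Longrightarrow> wfA Ps A1 \<Longrightarrow> wfA Ps A2 \<Longrightarrow> wfA Ps (aand A1 A2)"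
    unfolding wfA_def aand_def by auto
  show "labA A1 \<Longrightarrow> labA A2 \<Longrightarrow> labA (aand A1 A2)"
    unfolding labA_def aand_def by (force simp: pe_eq0)
qed

lemma inv_seq:
  assumes "ainv A1" "ainv A2"
  shows "ainv (aseq sk gg A1 A2)" "nowin (aseq sk gg A1 A2)"
    "gfA A1 \<Longrightarrow> gfA A2 \<Longrightarrow> gfA (aseq sk [] A1 A2)"
    "labA A1 \<Longrightarrow> labA A2 \<Longrightarrow> labA (aseq sk gg A1 A2)"
    "UNIV \<in> Ps \<Longrightarrow> \<forall>I\<in>set gg. ivl_wf I \<Longrightarrow> wfA Ps A1 \<Longrightarrow> wfA Ps A2 \<Longrightarrow> wfA Ps (aseq sk gg A1 A2)"
proof -
  have f1: "finite (trs A1)" "finite (trs A2)" "finite (fins A1)" "finite (fins A2)"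
    using assms unfolding ainv_def by auto
  have tg: "\<forall>t\<in>trs A2. tg t \<noteq> 0" using assms unfolding ainv_def by auto
  show "ainv (aseq sk gg A1 A2)" using assms f1 unfolding ainv_def aseq_def
    by (auto simp: r1_def r2_def)
  show "nowin (aseq sk gg A1 A2)" unfolding nowin_def aseq_def by auto
  show "gfA A1 \<Longrightarrow> gfA A2 \<Longrightarrow> gfA (aseq sk [] A1 A2)" unfolding gfA_def aseq_def by auto
  show "UNIV \<in> Ps \<Longrightarrow> \<forall>I\<in>set gg. ivl_wf I \<Longrightarrow> wfA Ps A1 \<Longrightarrow> wfA Ps A2 \<Longrightarrow> wfA Ps (aseq sk gg A1 A2)"
    unfolding wfA_def aseq_def by auto
  assume l: "labA A1" "labA A2"
  show "labA (aseq sk gg A1 A2)" unfolding labA_def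
  proof (intro ballI impI)
    fix t assume t: "t \<in> trs (aseq sk gg A1 A2)" and h: "sr t = 0 \<or> tg t \<in> fst ` fins (aseq sk gg A1 A2)"
    have h': "sr t = 0 \<or> (\<exists>q\<in>fst ` fins A2. tg t = r2 q)" using h unfolding aseq_def by force
    have q0: "\<forall>q\<in>fst ` fins A2. q \<noteq> 0" using assms(2) unfolding ainv_def by auto
    from t consider (a) "t \<in> ren r1 ` trs A1" | (b) "t \<in> into1 ` {t\<in>trs A1. tg t \<in> fst ` fins A1}"
      | (c) "t = skipT \<and> sk" | (d) "t \<in> fromM gg r2 ` {t\<in>trs A2. sr t = 0 \<and> gr t = []}"
      | (e) "t \<in> ren r2 ` {t\<in>trs A2. sr t \<noteq> 0}" unfolding aseq_def by auto
    then show "lr t \<noteq> {}"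
    proof cases
      case a
      then obtain t0 where "t0 \<in> trs A1" "t = ren r1 t0" by blast
      moreover have "sr t0 = 0"
      proof (cases "sr t = 0")
        case True then show ?thesis using calculation by (simp add: r1_def)
      next
        case False
        then have "\<exists>q\<in>fst ` fins A2. tg t = r2 q" using h' by simp
        then obtain q where "q \<in> fst ` fins A2" "tg t = r2 q" by (elim bexE)
        then show ?thesis using r12_ne[of "tg t0" q] q0 calculation by auto
      qed
      ultimately show ?thesis using l(1) unfolding labA_def by auto
    next
      case b then show ?thesis using l(1) unfolding labA_def by auto
    next
      case c
      then have "sr t \<noteq> 0" "tg t = 1" by auto
      then have "\<exists>q\<in>fst ` fins A2. tg t = r2 q" using h' by simp
      then obtain q where "q \<in> fst ` fins A2" "1 = r2 q" using \<open>tg t = 1\<close> by (elim bexE) simp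
      then show ?thesis using r2_odd[of q] q0 by auto
    next
      case d then show ?thesis using l(2) unfolding labA_def by auto
    next
      case e
      then obtain t0 where t0: "t0 \<in> trs A2" "sr t0 \<noteq> 0" "t = ren r2 t0" by blast
      then have "sr t \<noteq> 0" by (simp add: r2_def)
      then obtain q where "q \<in> fst ` fins A2" "r2 (tg t0) = r2 q" using h' t0 by auto
      then have "tg t0 \<in> fst ` fins A2" using inj_r2 by (auto simp: inj_eq)
      then show ?thesis using l(2) t0 unfolding labA_def by auto
    qed
  qed
qed

lemma inv_plus:
  assumes "ainv A"
  shows "ainv (aplus sk gg A)" "nowin (aplus sk gg A)"
    "gfA A \<Longrightarrow> gfA (aplus sk [] A)"
    "labA A \<Longrightarrow> labA (aplus sk gg A)"
    "UNIV \<in> Ps \<Longrightarrow> \<forall>I\<in>set gg. ivl_wf I \<Longrightarrow> wfA Ps A \<Longrightarrow> wfA Ps (aplus sk gg A)"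
proof -
  have f1: "finite (trs A)" "finite (fins A)" using assms unfolding ainv_def by auto
  show "ainv (aplus sk gg A)" using assms f1 unfolding ainv_def aplus_def
    by (auto simp: r1_def)
  show "nowin (aplus sk gg A)" by (rule nowin_plus)
  show "gfA A \<Longrightarrow> gfA (aplus sk [] A)" by (rule gfA_plus)
  show "UNIV \<in> Ps \<Longrightarrow> \<forall>I\<in>set gg. ivl_wf I \<Longrightarrow> wfA Ps A \<Longrightarrow> wfA Ps (aplus sk gg A)"
    unfolding wfA_def aplus_def by auto
  assume l: "labA A"
  show "labA (aplus sk gg A)" unfolding labA_def
  proof (intro ballI impI)
    fix t assume t: "t \<in> trs (aplus sk gg A)" and h: "sr t = 0 \<or> tg t \<in> fst ` fins (aplus sk gg A)"
    have h': "sr t = 0 \<or> (\<exists>q\<in>fst ` fins A. tg t = r1 q)" using h unfolding aplus_def by force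
    have q0: "\<forall>q\<in>fst ` fins A. q \<noteq> 0" using assms unfolding ainv_def by auto
    from t consider (a) "t \<in> ren r1 ` trs A" | (b) "t \<in> into1 ` {t\<in>trs A. tg t \<in> fst ` fins A}"
      | (c) "t = skipT \<and> sk" | (d) "t \<in> fromM gg r1 ` {t\<in>trs A. sr t = 0 \<and> gr t = []}"
      | (e) "t \<in> loopM gg ` {t\<in>trs A. sr t = 0 \<and> gr t = [] \<and> tg t \<in> fst ` fins A}" unfolding aplus_def by auto
    then show "lr t \<noteq> {}"
    proof cases
      case a
      then obtain t0 where t0: "t0 \<in> trs A" "t = ren r1 t0" by blast
      have "sr t0 = 0 \<or> tg t0 \<in> fst ` fins A"
        using h' t0 inj_r1 by (auto simp: inj_eq r1_def)
      then show ?thesis using l t0 unfolding labA_def by auto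
    next
      case b then show ?thesis using l unfolding labA_def by auto
    next
      case c then show ?thesis using h' q0 by (auto simp: r1_def)
    next
      case d then show ?thesis using l unfolding labA_def by auto
    next
      case e then show ?thesis using l unfolding labA_def by auto
    qed
  qed
qed

lemma inv_win: "ainv A \<Longrightarrow> ainv (awin I A)" "gfA A \<Longrightarrow> gfA (awin I A)"
  "ivl_wf I \<Longrightarrow> wfA Ps A \<Longrightarrow> wfA Ps (awin I A)"
  by (auto simp: ainv_def gfA_def wfA_def awin_def)

lemma seqc_eqs:
  "seq_c = seqc True S []" "next_c = seqc False S []"
  "(\<lambda>C1 C2. seq_c C1 C2 \<and> gap_in S I C1 C2) = seqc True S [I]"
  "(\<lambda>C1 C2. next_c C1 C2 \<and> gap_in S I C1 C2) = seqc False S [I]"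
  by (auto intro!: ext simp: seq_c_def next_c_def seqc_def gap_in_def)

definition good :: "'ev set set \<Rightarrow> ('x,'ev) aut \<Rightarrow> bool" where
  "good Ps A \<longleftrightarrow> ainv A \<and> nowin A \<and> wfA Ps A"

lemma wf_filt: "\<forall>P\<in>Ps. \<forall>P'\<in>Ps. P \<inter> P' \<in> Ps \<Longrightarrow> P \<in> Ps \<Longrightarrow> \<forall>t. pr t \<in> Ps \<longrightarrow> pr (filt X P t) \<in> Ps"
  by auto

lemma inv_relab:
  "ainv A \<Longrightarrow> ainv (amap (relab X) A)" "nowin A \<Longrightarrow> nowin (amap (relab X) A)"
  "gfA A \<Longrightarrow> gfA (amap (relab X) A)" "labA A \<Longrightarrow> labA (amap (relab X) A)"
  "wfA Ps A \<Longrightarrow> wfA Ps (amap (relab X) A)"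
  by (auto simp: ainv_def nowin_def labA_def gfA_def wfA_def amap_def)

lemma inv_filt:
  "ainv A \<Longrightarrow> ainv (amap (filt X P) A)" "nowin A \<Longrightarrow> nowin (amap (filt X P) A)"
  "gfA A \<Longrightarrow> gfA (amap (filt X P) A)" "labA A \<Longrightarrow> labA (amap (filt X P) A)"
  "\<forall>P\<in>Ps. \<forall>P'\<in>Ps. P \<inter> P' \<in> Ps \<Longrightarrow> P \<in> Ps \<Longrightarrow> wfA Ps A \<Longrightarrow> wfA Ps (amap (filt X P) A)"
  by (auto simp: ainv_def nowin_def labA_def gfA_def wfA_def amap_def)

lemma inv_prj:
  "ainv A \<Longrightarrow> ainv (amap (prj L) A)" "nowin A \<Longrightarrow> nowin (amap (prj L) A)"
  "gfA A \<Longrightarrow> gfA (amap (prj L) A)"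
  "wfA Ps A \<Longrightarrow> wfA Ps (amap (prj L) A)"
  by (auto simp: ainv_def nowin_def labA_def gfA_def wfA_def amap_def)

lemma notime_aut:
  fixes tp :: "'ev \<Rightarrow> 'x"
  assumes P_univ: "UNIV \<in> Ps" and P_int: "\<forall>P\<in>Ps. \<forall>P'\<in>Ps. P \<inter> P' \<in> Ps"
    and P_types: "\<forall>R\<in>T. {e. tp e = R} \<in> Ps"
  shows "no_time \<phi> \<Longrightarrow> cel_wf T Ps \<phi> \<Longrightarrow>
    \<exists>A. good Ps A \<and> gfA A \<and> (\<forall>S. lang A S = cel_sem tp S \<phi>)"
proof (induction \<phi>)
  case (CAtom R)
  then show ?case using inv_atom(1-4)[of tp R] inv_atom(5)[of tp R Ps] P_types lang_atom[of tp R] unfolding good_def by auto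
next
  case (CAs f X)
  then obtain A where A: "good Ps A" "gfA A" "\<forall>S. lang A S = cel_sem tp S f" by auto
  have e: "\<forall>t. sr (relab X t) = sr t \<and> tg (relab X t) = tg t" by simp
  show ?case using A inv_relab unfolding good_def
    by (intro exI[of _ "amap (relab X) A"]) (auto simp: lang_as)
next
  case (CFilter f X P)
  then obtain A where A: "good Ps A" "gfA A" "\<forall>S. lang A S = cel_sem tp S f" by auto
  have e: "\<forall>t. sr (filt X P t) = sr t \<and> tg (filt X P t) = tg t" by simp
  have "P \<in> Ps" using CFilter.prems by simp
  then show ?case using A inv_filt P_int unfolding good_def
    by (intro exI[of _ "amap (filt X P) A"]) (auto simp: lang_filter cmu_def)
next
  case (COr f g)
  then obtain A1 A2 where A: "good Ps A1" "gfA A1" "\<forall>S. lang A1 S = cel_sem tp S f"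
     "good Ps A2" "gfA A2" "\<forall>S. lang A2 S = cel_sem tp S g" by auto
  then show ?case using inv_or[of A1 A2] unfolding good_def
    by (intro exI[of _ "aor A1 A2"]) (auto simp: lang_or[of A1 A2])
next
  case (CAnd f g)
  then obtain A1 A2 where A: "good Ps A1" "gfA A1" "\<forall>S. lang A1 S = cel_sem tp S f"
     "good Ps A2" "gfA A2" "\<forall>S. lang A2 S = cel_sem tp S g" by auto
  then show ?case using inv_and[of A1 A2] P_int unfolding good_def
    by (intro exI[of _ "aand A1 A2"]) (auto simp: lang_and[of A1 A2])
next
  case (CSeq f g)
  then obtain A1 A2 where A: "good Ps A1" "gfA A1" "\<forall>S. lang A1 S = cel_sem tp S f"
     "good Ps A2" "gfA A2" "\<forall>S. lang A2 S = cel_sem tp S g" by auto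
  then show ?case using inv_seq[of A1 A2] P_univ unfolding good_def
    by (intro exI[of _ "aseq True [] A1 A2"]) (auto simp: lang_seq seqc_eqs[symmetric])
next
  case (CNext f g)
  then obtain A1 A2 where A: "good Ps A1" "gfA A1" "\<forall>S. lang A1 S = cel_sem tp S f"
     "good Ps A2" "gfA A2" "\<forall>S. lang A2 S = cel_sem tp S g" by auto
  then show ?case using inv_seq[of A1 A2] P_univ unfolding good_def
    by (intro exI[of _ "aseq False [] A1 A2"]) (auto simp: lang_seq seqc_eqs[symmetric])
next
  case (CPlus f)
  then obtain A where A: "good Ps A" "gfA A" "\<forall>S. lang A S = cel_sem tp S f" by auto
  then show ?case using inv_plus[of A] P_univ unfolding good_def
    by (intro exI[of _ "aplus True [] A"]) (auto simp: lang_plus seqc_eqs[symmetric])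
next
  case (COPlus f)
  then obtain A where A: "good Ps A" "gfA A" "\<forall>S. lang A S = cel_sem tp S f" by auto
  then show ?case using inv_plus[of A] P_univ unfolding good_def
    by (intro exI[of _ "aplus False [] A"]) (auto simp: lang_plus seqc_eqs[symmetric])
next
  case (CProj L f)
  then obtain A where A: "good Ps A" "gfA A" "\<forall>S. lang A S = cel_sem tp S f" by auto
  have e: "\<forall>t. sr (prj L t) = sr t \<and> tg (prj L t) = tg t" by simp
  show ?case using A inv_prj unfolding good_def
    by (intro exI[of _ "amap (prj L) A"]) (auto simp: lang_proj[OF A(2)])
qed auto

lemma simple_aut:
  fixes tp :: "'ev \<Rightarrow> 'x"
  assumes P_univ: "UNIV \<in> Ps" and P_int: "\<forall>P\<in>Ps. \<forall>P'\<in>Ps. P \<inter> P' \<in> Ps"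
    and P_types: "\<forall>R\<in>T. {e. tp e = R} \<in> Ps"
  shows "simple \<phi> \<Longrightarrow> cel_wf T Ps \<phi> \<Longrightarrow>
    \<exists>A. good Ps A \<and> labA A \<and> (\<forall>S. lang A S = cel_sem tp S \<phi>)"
proof (induction \<phi>)
  case (CAtom R)
  then show ?case using inv_atom(1-4)[of tp R] inv_atom(5)[of tp R Ps] P_types lang_atom[of tp R] unfolding good_def by auto
next
  case (CAs f X)
  then obtain A where A: "good Ps A" "labA A" "\<forall>S. lang A S = cel_sem tp S f" by auto
  have e: "\<forall>t. sr (relab X t) = sr t \<and> tg (relab X t) = tg t" by simp
  show ?case using A inv_relab unfolding good_def
    by (intro exI[of _ "amap (relab X) A"]) (auto simp: lang_as)
next
  case (CFilter f X P)
  then obtain A where A: "good Ps A" "labA A" "\<forall>S. lang A S = cel_sem tp S f" by auto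
  have e: "\<forall>t. sr (filt X P t) = sr t \<and> tg (filt X P t) = tg t" by simp
  have "P \<in> Ps" using CFilter.prems by simp
  then show ?case using A inv_filt P_int unfolding good_def
    by (intro exI[of _ "amap (filt X P) A"]) (auto simp: lang_filter cmu_def)
next
  case (COr f g)
  then obtain A1 A2 where A: "good Ps A1" "labA A1" "\<forall>S. lang A1 S = cel_sem tp S f"
     "good Ps A2" "labA A2" "\<forall>S. lang A2 S = cel_sem tp S g" by auto
  then show ?case using inv_or[of A1 A2] unfolding good_def
    by (intro exI[of _ "aor A1 A2"]) (auto simp: lang_or[of A1 A2])
next
  case (CAnd f g)
  then obtain A1 A2 where A: "good Ps A1" "labA A1" "\<forall>S. lang A1 S = cel_sem tp S f"
     "good Ps A2" "labA A2" "\<forall>S. lang A2 S = cel_sem tp S g" by auto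
  then show ?case using inv_and[of A1 A2] P_int unfolding good_def
    by (intro exI[of _ "aand A1 A2"]) (auto simp: lang_and[of A1 A2])
next
  case (CSeq f g)
  then obtain A1 A2 where A: "good Ps A1" "labA A1" "\<forall>S. lang A1 S = cel_sem tp S f"
     "good Ps A2" "labA A2" "\<forall>S. lang A2 S = cel_sem tp S g" by auto
  then show ?case using inv_seq[of A1 A2] P_univ unfolding good_def
    by (intro exI[of _ "aseq True [] A1 A2"]) (auto simp: lang_seq seqc_eqs[symmetric])
next
  case (CNext f g)
  then obtain A1 A2 where A: "good Ps A1" "labA A1" "\<forall>S. lang A1 S = cel_sem tp S f"
     "good Ps A2" "labA A2" "\<forall>S. lang A2 S = cel_sem tp S g" by auto
  then show ?case using inv_seq[of A1 A2] P_univ unfolding good_def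
    by (intro exI[of _ "aseq False [] A1 A2"]) (auto simp: lang_seq seqc_eqs[symmetric])
next
  case (CPlus f)
  then obtain A where A: "good Ps A" "labA A" "\<forall>S. lang A S = cel_sem tp S f" by auto
  then show ?case using inv_plus[of A] P_univ unfolding good_def
    by (intro exI[of _ "aplus True [] A"]) (auto simp: lang_plus seqc_eqs[symmetric])
next
  case (COPlus f)
  then obtain A where A: "good Ps A" "labA A" "\<forall>S. lang A S = cel_sem tp S f" by auto
  then show ?case using inv_plus[of A] P_univ unfolding good_def
    by (intro exI[of _ "aplus False [] A"]) (auto simp: lang_plus seqc_eqs[symmetric])
next
  case (CSeqI f I g)
  then obtain A1 A2 where A: "good Ps A1" "labA A1" "\<forall>S. lang A1 S = cel_sem tp S f"
     "good Ps A2" "labA A2" "\<forall>S. lang A2 S = cel_sem tp S g" by auto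
  have "ivl_wf I" using CSeqI.prems by simp
  then show ?case using A inv_seq[of A1 A2] P_univ unfolding good_def
    by (intro exI[of _ "aseq True [I] A1 A2"]) (auto simp: lang_seq seqc_eqs[symmetric])
next
  case (CNextI f I g)
  then obtain A1 A2 where A: "good Ps A1" "labA A1" "\<forall>S. lang A1 S = cel_sem tp S f"
     "good Ps A2" "labA A2" "\<forall>S. lang A2 S = cel_sem tp S g" by auto
  have "ivl_wf I" using CNextI.prems by simp
  then show ?case using A inv_seq[of A1 A2] P_univ unfolding good_def
    by (intro exI[of _ "aseq False [I] A1 A2"]) (auto simp: lang_seq seqc_eqs[symmetric])
next
  case (CPlusI f I)
  then obtain A where A: "good Ps A" "labA A" "\<forall>S. lang A S = cel_sem tp S f" by auto
  have "ivl_wf I" using CPlusI.prems by simp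
  then show ?case using A inv_plus[of A] P_univ unfolding good_def
    by (intro exI[of _ "aplus True [I] A"]) (auto simp: lang_plus seqc_eqs[symmetric])
next
  case (COPlusI f I)
  then obtain A where A: "good Ps A" "labA A" "\<forall>S. lang A S = cel_sem tp S f" by auto
  have "ivl_wf I" using COPlusI.prems by simp
  then show ?case using A inv_plus[of A] P_univ unfolding good_def
    by (intro exI[of _ "aplus False [I] A"]) (auto simp: lang_plus seqc_eqs[symmetric])
qed auto

lemma windowed_aut:
  fixes tp :: "'ev \<Rightarrow> 'x"
  assumes P_univ: "UNIV \<in> Ps" and P_int: "\<forall>P\<in>Ps. \<forall>P'\<in>Ps. P \<inter> P' \<in> Ps"
    and P_types: "\<forall>R\<in>T. {e. tp e = R} \<in> Ps"
  shows "windowed \<phi> \<Longrightarrow> cel_wf T Ps \<phi> \<Longrightarrow>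
    \<exists>A. ainv A \<and> wfA Ps A \<and> (\<forall>S. lang A S = cel_sem tp S \<phi>)"
proof (induction \<phi> rule: windowed.induct)
  case (w_notime f)
  then show ?case using notime_aut[OF assms] unfolding good_def by blast
next
  case (w_simple f)
  then show ?case using simple_aut[OF assms] unfolding good_def by blast
next
  case (w_as f X)
  then obtain A where A: "ainv A" "wfA Ps A" "\<forall>S. lang A S = cel_sem tp S f" by auto
  have e: "\<forall>t. sr (relab X t) = sr t \<and> tg (relab X t) = tg t" by simp
  show ?case using A inv_relab
    by (intro exI[of _ "amap (relab X) A"]) (auto simp: lang_as)
next
  case (w_filter f X P)
  then obtain A where A: "ainv A" "wfA Ps A" "\<forall>S. lang A S = cel_sem tp S f" by auto
  have e: "\<forall>t. sr (filt X P t) = sr t \<and> tg (filt X P t) = tg t" by simp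
  have "P \<in> Ps" using w_filter.prems by simp
  then show ?case using A inv_filt P_int
    by (intro exI[of _ "amap (filt X P) A"]) (auto simp: lang_filter cmu_def)
next
  case (w_or f g)
  then obtain A1 A2 where A: "ainv A1" "wfA Ps A1" "\<forall>S. lang A1 S = cel_sem tp S f"
     "ainv A2" "wfA Ps A2" "\<forall>S. lang A2 S = cel_sem tp S g" by auto
  then show ?case using inv_or[of A1 A2]
    by (intro exI[of _ "aor A1 A2"]) (auto simp: lang_or[of A1 A2])
next
  case (w_and f g)
  then obtain A1 A2 where A: "ainv A1" "wfA Ps A1" "\<forall>S. lang A1 S = cel_sem tp S f"
     "ainv A2" "wfA Ps A2" "\<forall>S. lang A2 S = cel_sem tp S g" by auto
  then show ?case using inv_and[of A1 A2] P_int
    by (intro exI[of _ "aand A1 A2"]) (auto simp: lang_and[of A1 A2])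
next
  case (w_win f I)
  then obtain A where A: "ainv A" "wfA Ps A" "\<forall>S. lang A S = cel_sem tp S f" by auto
  have "ivl_wf I" using w_win.prems by simp
  then show ?case using A inv_win
    by (intro exI[of _ "awin I A"]) (auto simp: lang_win)
qed

fun ivG :: "nat \<Rightarrow> interval \<Rightarrow> nat guard" where
  "ivG z (Ivl a ac u) = GAnd (GCmp z (if ac then CmpGe else CmpGt) a)
     (case u of None \<Rightarrow> GTrue | Some (b, bc) \<Rightarrow> GCmp z (if bc then CmpLe else CmpLt) b)"

fun gG :: "nat \<Rightarrow> interval list \<Rightarrow> nat guard" where
  "gG z [] = GTrue"
| "gG z (I # Is) = GAnd (ivG z I) (gG z Is)"

lemma gclocks_ivG: "gclocks (ivG z I) = {z}"
  by (cases I) (auto split: option.splits)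

lemma gclocks_gG: "gclocks (gG z Is) = (if Is = [] then {} else {z})"
  by (induction Is) (auto simp: gclocks_ivG)

lemma gconsts_ivG: "ivl_wf I \<Longrightarrow> gconsts_ok (ivG z I)"
  by (cases I) (auto split: option.splits)

lemma gconsts_gG: "\<forall>I\<in>set Is. ivl_wf I \<Longrightarrow> gconsts_ok (gG z Is)"
  by (induction Is) (auto simp: gconsts_ivG)

lemma models_GAnd: "models \<nu> (GAnd g h) \<longleftrightarrow> models \<nu> g \<and> models \<nu> h"
  by (auto simp: models_def)

lemma gholds_ivG: "0 \<le> q \<Longrightarrow> \<nu> z = Some (of_rat q) \<Longrightarrow> gholds \<nu> (ivG z I) \<longleftrightarrow> in_ivl q I"
  by (cases I) (auto simp: of_rat_less_eq of_rat_less split: option.splits)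

lemma models_gG:
  assumes "0 \<le> q" "\<nu> z = Some (of_rat q)"
  shows "models \<nu> (gG z Is) \<longleftrightarrow> (\<forall>I\<in>set Is. in_ivl q I)"
proof -
  have "gholds \<nu> (gG z Is) \<longleftrightarrow> (\<forall>I\<in>set Is. in_ivl q I)"
    using gholds_ivG[where \<nu>=\<nu> and z=z and q=q, OF assms] by (induction Is) auto
  then show ?thesis using assms(2) by (auto simp: models_def gclocks_gG)
qed

lemma models_gG_None:
  assumes "\<nu> z = None"
  shows "models \<nu> (gG z Is) \<longleftrightarrow> Is = []"
  using assms by (auto simp: models_def gclocks_gG)

lemma tm_mono:
  assumes "timed_stream S" "a \<le> b" "b \<le> length S"
  shows "tm S a \<le> tm S b"
  using assms(2,3)
proof (induction b)
  case 0 then show ?case by simp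
next
  case (Suc b)
  show ?case
  proof (cases "a = Suc b")
    case True then show ?thesis by simp
  next
    case False
    then have "tm S a \<le> tm S b" using Suc by auto
    moreover have "tm S b \<le> tm S (Suc b)"
    proof (cases b)
      case 0
      then have "0 < length S" using Suc.prems by (cases S) auto
      then show ?thesis using assms(1) 0 unfolding timed_stream_def tm_def by auto
    next
      case (Suc b')
      then have "snd (S ! b') < snd (S ! Suc b')" using assms(1) Suc.prems unfolding timed_stream_def by auto
      then show ?thesis using Suc unfolding tm_def by auto
    qed
    ultimately show ?thesis by simp
  qed
qed

lemma rok_nth:
  "rok S k p ts \<longleftrightarrow> (\<forall>m<length ts. ev S (k+m) \<in> pr (ts!m) \<and> gcond S (k+m) (lastp k p (take m ts)) (gr (ts!m)))"
proof (induction ts arbitrary: k p)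
  case Nil then show ?case by simp
next
  case (Cons t ts)
  show ?case
    unfolding rok.simps Cons length_Cons All_less_Suc2
    by simp
qed

fun lastl :: "(nat \<Rightarrow> ('q,'z,'x,'ev) trans) \<Rightarrow> nat \<Rightarrow> nat \<Rightarrow> nat option" where
  "lastl \<rho> i 0 = None"
| "lastl \<rho> i (Suc m) = (if tlabels (\<rho> (i+m)) = {} then lastl \<rho> i m else Some (i+m))"

lemma of_rat_telescope: "(of_rat (a - b) :: real) + of_rat (c - a) = of_rat (c - b)"
  by (simp add: of_rat_add[symmetric])

lemma vals_char:
  fixes \<rho> :: "nat \<Rightarrow> ('q, nat, 'x, 'ev) trans"
  assumes r0: "\<forall>k<m. (0 \<in> tresets (\<rho> (i+k)) \<longleftrightarrow> tlabels (\<rho> (i+k)) \<noteq> {})"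
    and r1: "\<forall>k<m. (1 \<in> tresets (\<rho> (i+k)) \<longleftrightarrow> k = 0)"
  shows "vshift (vals S \<rho> i m) (of_rat (dt S (i+m))) 0 = map_option (\<lambda>p. of_rat (tm S (i+m) - tm S p)) (lastl \<rho> i m) \<and>
         vshift (vals S \<rho> i m) (of_rat (dt S (i+m))) 1 = (if m = 0 then None else Some (of_rat (tm S (i+m) - tm S i)))"
  using r0 r1
proof (induction m)
  case 0 then show ?case by (simp add: vshift_def)
next
  case (Suc m)
  let ?V = "vshift (vals S \<rho> i m) (of_rat (dt S (i+m)))"
  have IH: "?V 0 = map_option (\<lambda>p. of_rat (tm S (i+m) - tm S p)) (lastl \<rho> i m)"
    "?V 1 = (if m = 0 then None else Some (of_rat (tm S (i+m) - tm S i)))"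
    using Suc by auto
  have dt: "dt S (i + Suc m) = tm S (i + Suc m) - tm S (i + m)" by (simp add: dt_def)
  have v: "vals S \<rho> i (Suc m) = vreset (tresets (\<rho> (i+m))) ?V" by simp
  have z0: "0 \<in> tresets (\<rho> (i+m)) \<longleftrightarrow> tlabels (\<rho> (i+m)) \<noteq> {}" using Suc.prems(1) by auto
  have z1: "1 \<in> tresets (\<rho> (i+m)) \<longleftrightarrow> m = 0" using Suc.prems(2) by auto
  show ?case
  proof
    show "vshift (vals S \<rho> i (Suc m)) (of_rat (dt S (i + Suc m))) 0 =
      map_option (\<lambda>p. of_rat (tm S (i + Suc m) - tm S p)) (lastl \<rho> i (Suc m))"
      using z0 IH(1) unfolding v dt
      by (cases "lastl \<rho> i m") (auto simp: vshift_def vreset_def of_rat_telescope)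
    show "vshift (vals S \<rho> i (Suc m)) (of_rat (dt S (i + Suc m))) 1 =
      (if Suc m = 0 then None else Some (of_rat (tm S (i + Suc m) - tm S i)))"
      using z1 IH(2) unfolding v dt
      by (auto simp: vshift_def vreset_def of_rat_telescope)
  qed
qed

definition rsets :: "nat \<Rightarrow> 'x set \<Rightarrow> nat set" where
  "rsets p L = (if L = {} then {} else {0}) \<union> (if p = 0 then {1} else {})"

definition cnorm :: "('x,'ev) tr \<Rightarrow> (nat, nat, 'x, 'ev) trans" where
  "cnorm t = (2 * sr t, pr t, gG 0 (gr t), lr t, rsets (sr t) (lr t), 2 * tg t)"

definition cfin :: "('x,'ev) tr \<Rightarrow> interval list \<Rightarrow> (nat, nat, 'x, 'ev) trans" where
  "cfin t Is = (2 * sr t, pr t, GAnd (gG 0 (gr t)) (gG 1 Is), lr t, rsets (sr t) (lr t), 1)"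

definition cfin0 :: "('x,'ev) tr \<Rightarrow> (nat, nat, 'x, 'ev) trans" where
  "cfin0 t = (0, pr t, gG 0 (gr t), lr t, rsets 0 (lr t), 1)"

lemma conv_simps[simp]:
  "tsrc (cnorm t) = 2 * sr t" "ttgt (cnorm t) = 2 * tg t" "tpred (cnorm t) = pr t"
  "tguard (cnorm t) = gG 0 (gr t)" "tlabels (cnorm t) = lr t" "tresets (cnorm t) = rsets (sr t) (lr t)"
  "tsrc (cfin t Is) = 2 * sr t" "ttgt (cfin t Is) = 1" "tpred (cfin t Is) = pr t"
  "tguard (cfin t Is) = GAnd (gG 0 (gr t)) (gG 1 Is)" "tlabels (cfin t Is) = lr t" "tresets (cfin t Is) = rsets (sr t) (lr t)"
  "tsrc (cfin0 t) = 0" "ttgt (cfin0 t) = 1" "tpred (cfin0 t) = pr t"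
  "tguard (cfin0 t) = gG 0 (gr t)" "tlabels (cfin0 t) = lr t" "tresets (cfin0 t) = rsets 0 (lr t)"
  by (auto simp: cnorm_def cfin_def cfin0_def tsrc_def ttgt_def tpred_def tguard_def tlabels_def tresets_def)

definition cfins :: "('x,'ev) aut \<Rightarrow> (nat, nat, 'x, 'ev) trans set" where
  "cfins A = {cfin t Is | t Is. t \<in> trs A \<and> (tg t, Is) \<in> fins A \<and> sr t \<noteq> 0}"

definition cfins0 :: "('x,'ev) aut \<Rightarrow> (nat, nat, 'x, 'ev) trans set" where
  "cfins0 A = {cfin0 t | t Is. t \<in> trs A \<and> (tg t, Is) \<in> fins A \<and> sr t = 0 \<and> (\<forall>I\<in>set Is. in_ivl 0 I)}"

definition toT :: "('x,'ev) aut \<Rightarrow> (nat, nat, 'x, 'ev) tcea" where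
  "toT A = \<lparr>states = {0,1} \<union> (\<lambda>t. 2 * sr t) ` trs A \<union> (\<lambda>t. 2 * tg t) ` trs A, clocks = {0,1},
     delta = cnorm ` trs A \<union> cfins A \<union> cfins0 A, init = 0, final = {1}\<rparr>"

lemma toT_sel[simp]: "clocks (toT A) = {0,1}" "init (toT A) = 0" "final (toT A) = {1}"
  "delta (toT A) = cnorm ` trs A \<union> cfins A \<union> cfins0 A"
  "states (toT A) = {0,1} \<union> (\<lambda>t. 2 * sr t) ` trs A \<union> (\<lambda>t. 2 * tg t) ` trs A"
  by (auto simp: toT_def)

lemma delta_props:
  assumes "ainv A" "u \<in> delta (toT A)"
  shows "tresets u = (if tlabels u = {} then {} else {0}) \<union> (if tsrc u = 0 then {1} else {})"
    "ttgt u \<noteq> 0" "even (tsrc u)"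
proof -
  have tg: "\<forall>t\<in>trs A. tg t \<noteq> 0" using assms(1) unfolding ainv_def by auto
  from assms(2) consider (a) t where "t \<in> trs A" "u = cnorm t"
      | (b) t Is where "t \<in> trs A" "(tg t, Is) \<in> fins A" "sr t \<noteq> 0" "u = cfin t Is"
      | (c) t where "t \<in> trs A" "u = cfin0 t"
      unfolding toT_sel cfins_def cfins0_def by blast
  then have "tresets u = (if tlabels u = {} then {} else {0}) \<union> (if tsrc u = 0 then {1} else {}) \<and>
    ttgt u \<noteq> 0 \<and> even (tsrc u)"
    by cases (use tg in \<open>auto simp: rsets_def\<close>)
  then show "tresets u = (if tlabels u = {} then {} else {0}) \<union> (if tsrc u = 0 then {1} else {})"
    "ttgt u \<noteq> 0" "even (tsrc u)" by auto
qed

lemma toT_wf: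
  assumes "ainv A" "wfA Ps A"
  shows "tcea_wf Ps (toT A)"
proof -
  have f: "finite (trs A)" "finite (fins A)" using assms(1) unfolding ainv_def by auto
  have "cfins A \<subseteq> (\<lambda>(t, (q, Is)). cfin t Is) ` (trs A \<times> fins A)" unfolding cfins_def by force
  then have f1: "finite (cfins A)" using f finite_subset by blast
  have "cfins0 A \<subseteq> cfin0 ` trs A" unfolding cfins0_def by force
  then have f2: "finite (cfins0 A)" using f finite_subset by blast
  have w: "\<forall>t\<in>trs A. pr t \<in> Ps \<and> (\<forall>I\<in>set (gr t). ivl_wf I)" "\<forall>q Is. (q,Is)\<in>fins A \<longrightarrow> (\<forall>I\<in>set Is. ivl_wf I)"
    using assms(2) unfolding wfA_def by auto
  have T: "tsrc u \<in> states (toT A) \<and> ttgt u \<in> states (toT A) \<and> tpred u \<in> Ps \<and>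
        gclocks (tguard u) \<subseteq> clocks (toT A) \<and> gconsts_ok (tguard u) \<and> tresets u \<subseteq> clocks (toT A)"
    if u: "u \<in> delta (toT A)" for u
  proof -
    from u consider (a) t where "t \<in> trs A" "u = cnorm t"
      | (b) t Is where "t \<in> trs A" "(tg t, Is) \<in> fins A" "u = cfin t Is"
      | (c) t where "t \<in> trs A" "u = cfin0 t"
      unfolding toT_sel cfins_def cfins0_def by blast
    then show ?thesis
    proof cases
      case a then show ?thesis using w by (auto simp: gclocks_gG gconsts_gG rsets_def)
    next
      case b then show ?thesis using w by (auto simp: gclocks_gG gconsts_gG rsets_def)
    next
      case c then show ?thesis using w by (auto simp: gclocks_gG gconsts_gG rsets_def)
    qed
  qed
  have fs: "finite (states (toT A))" using f by simp
  have fd: "finite (delta (toT A))" using f f1 f2 by simp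
  show ?thesis unfolding tcea_wf_def using T fs fd by auto
qed

lemma toT_sync:
  assumes "ainv A"
  shows "sync_resets (toT A)"
  unfolding sync_resets_def
proof (intro allI impI ballI)
  fix S i j \<rho> \<rho>' k
  assume h: "timed_stream S \<and> is_run (toT A) S i j \<rho> \<and> is_run (toT A) S i j \<rho>' \<and>
       (\<forall>k\<in>{i..j}. tlabels (\<rho> k) = tlabels (\<rho>' k))" and k: "k \<in> {i..j}"
  have src: "tsrc (r k) = 0 \<longleftrightarrow> k = i" if "is_run (toT A) S i j r" for r
  proof (cases "k = i")
    case True then show ?thesis using that unfolding is_run_def by auto
  next
    case False
    then have "k - 1 \<in> {i..<j}" "Suc (k - 1) = k" using k by auto
    then have "tsrc (r k) = ttgt (r (k - 1))" using that unfolding is_run_def by metis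
    moreover have "r (k - 1) \<in> delta (toT A)" using that \<open>k - 1 \<in> {i..<j}\<close> unfolding is_run_def by auto
    ultimately show ?thesis using delta_props(2)[OF assms] False by auto
  qed
  have "\<rho> k \<in> delta (toT A)" "\<rho>' k \<in> delta (toT A)" using h k unfolding is_run_def by auto
  then show "tresets (\<rho> k) = tresets (\<rho>' k)"
    using delta_props(1)[OF assms] src h k by auto
qed

lemma lastp_range: "lastp k p0 xs = Some p \<Longrightarrow> p0 = Some p \<or> (k \<le> p \<and> p < k + length xs)"
  by (induction xs arbitrary: k p0) (fastforce split: if_splits)+

lemma lastl_lastp:
  assumes "\<forall>k<length ts. tlabels (\<rho> (i+k)) = lr (ts!k)" "m \<le> length ts"
  shows "lastl \<rho> i m = lastp i None (take m ts)"
  using assms(2)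
proof (induction m)
  case 0 then show ?case by simp
next
  case (Suc m)
  have "take (Suc m) ts = take m ts @ [ts ! m]" using Suc.prems by (simp add: take_Suc_conv_app_nth)
  then show ?case using Suc assms(1) by simp
qed

lemma guard_corr:
  fixes \<rho> :: "nat \<Rightarrow> ('q, nat, 'x, 'ev) trans"
  assumes ts: "timed_stream S" "1 \<le> i" "i + length ts \<le> Suc (length S)" "m < length ts"
    and lab: "\<forall>k<length ts. tlabels (\<rho> (i+k)) = lr (ts!k)"
    and rst: "\<forall>k<length ts. tresets (\<rho> (i+k)) = (if lr (ts!k) = {} then {} else {0}) \<union> (if k = 0 then {1} else {})"
  shows "models (vshift (vals S \<rho> i m) (of_rat (dt S (i+m)))) (gG 0 G) \<longleftrightarrow> gcond S (i+m) (lastp i None (take m ts)) G"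
    and "models (vshift (vals S \<rho> i m) (of_rat (dt S (i+m)))) (gG 1 Is) \<longleftrightarrow>
           (Is = [] \<or> (m > 0 \<and> (\<forall>I\<in>set Is. in_ivl (tm S (i+m) - tm S i) I)))"
proof -
  let ?\<nu> = "vshift (vals S \<rho> i m) (of_rat (dt S (i+m)))"
  have "\<forall>k<m. (0 \<in> tresets (\<rho> (i+k)) \<longleftrightarrow> tlabels (\<rho> (i+k)) \<noteq> {})"
    "\<forall>k<m. (1 \<in> tresets (\<rho> (i+k)) \<longleftrightarrow> k = 0)" using lab rst ts(4) by auto
  from vals_char[OF this]
  have V: "?\<nu> 0 = map_option (\<lambda>p. of_rat (tm S (i+m) - tm S p)) (lastl \<rho> i m)"
    "?\<nu> 1 = (if m = 0 then None else Some (of_rat (tm S (i+m) - tm S i)))" by auto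
  have L: "lastl \<rho> i m = lastp i None (take m ts)" using lastl_lastp[OF lab] ts(4) by simp
  show "models ?\<nu> (gG 0 G) \<longleftrightarrow> gcond S (i+m) (lastp i None (take m ts)) G"
  proof (cases "lastp i None (take m ts)")
    case None
    then show ?thesis using V(1) L models_gG_None[of ?\<nu> 0 G] by (simp add: gcond_def)
  next
    case (Some p)
    then have "i \<le> p" "p < i + m" using lastp_range[OF Some] ts(4) by auto
    then have "0 \<le> tm S (i+m) - tm S p" using tm_mono[OF ts(1), of p "i+m"] ts by simp
    then show ?thesis using V(1) L Some models_gG[of "tm S (i+m) - tm S p" ?\<nu> 0 G] by (auto simp: gcond_def)
  qed
  show "models ?\<nu> (gG 1 Is) \<longleftrightarrow> (Is = [] \<or> (m > 0 \<and> (\<forall>I\<in>set Is. in_ivl (tm S (i+m) - tm S i) I)))"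
  proof (cases "m = 0")
    case True
    then show ?thesis using V(2) models_gG_None[of ?\<nu> 1 Is] by simp
  next
    case False
    have "0 \<le> tm S (i+m) - tm S i" using tm_mono[OF ts(1), of i "i+m"] ts by simp
    then show ?thesis using V(2) False models_gG[of "tm S (i+m) - tm S i" ?\<nu> 1 Is] by auto
  qed
qed

lemma path_nth:
  "path T q0 ts q \<longleftrightarrow> (ts = [] \<and> q0 = q) \<or> (ts \<noteq> [] \<and> (\<forall>m<length ts. ts!m \<in> T) \<and> sr (ts!0) = q0 \<and>
     (\<forall>m. Suc m < length ts \<longrightarrow> tg (ts!m) = sr (ts!Suc m)) \<and> tg (ts!(length ts - 1)) = q)"
proof (induction ts arbitrary: q0)
  case Nil then show ?case by simp
next
  case (Cons t ts)
  show ?case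
  proof (cases ts)
    case Nil then show ?thesis by auto
  next
    case (Cons t' ts')
    have "path T q0 (t # ts) q \<longleftrightarrow> t \<in> T \<and> sr t = q0 \<and> path T (tg t) ts q" by simp
    also have "\<dots> \<longleftrightarrow> t \<in> T \<and> sr t = q0 \<and> ((\<forall>m<length ts. ts!m \<in> T) \<and> sr (ts!0) = tg t \<and>
     (\<forall>m. Suc m < length ts \<longrightarrow> tg (ts!m) = sr (ts!Suc m)) \<and> tg (ts!(length ts - 1)) = q)"
      using Cons.IH Cons by simp
    also have "\<dots> \<longleftrightarrow> ((\<forall>m<length (t#ts). (t#ts)!m \<in> T) \<and> sr ((t#ts)!0) = q0 \<and>
     (\<forall>m. Suc m < length (t#ts) \<longrightarrow> tg ((t#ts)!m) = sr ((t#ts)!Suc m)) \<and> tg ((t#ts)!(length (t#ts) - 1)) = q)"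
      using Cons by (auto simp: All_less_Suc2 nth_Cons' split: nat.splits)
    finally show ?thesis by simp
  qed
qed

lemma rsets_eq: "rsets p L = (if L = {} then {} else {0}) \<union> (if p = 0 then {1} else {})"
  by (simp add: rsets_def)

lemma toT_complete:
  assumes inv: "ainv A" and tst: "timed_stream S" and ac: "acc A S i ts"
  shows "(i, i + length ts - 1, outmu i ts) \<in> cea_sem (toT A) S"
proof -
  obtain q Is where a: "ts \<noteq> []" "1 \<le> i" "i + length ts \<le> Suc (length S)" "rok S i None ts"
    "path (trs A) 0 ts q" "(q, Is) \<in> fins A" "\<forall>I\<in>set Is. in_ivl (tm S (i + length ts - 1) - tm S i) I"
    using ac unfolding acc_def by blast
  define n where "n = length ts"
  define j where "j = i + n - 1"
  define lt where "lt = ts ! (n - 1)"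
  have n1: "n \<ge> 1" using a(1) unfolding n_def by (cases ts) auto
  have P: "\<forall>m<n. ts!m \<in> trs A" "sr (ts!0) = 0" "\<forall>m. Suc m < n \<longrightarrow> tg (ts!m) = sr (ts!Suc m)" "tg lt = q"
    using a(1,5) unfolding path_nth[of "trs A" 0 ts q] n_def lt_def by auto
  have tg0: "\<forall>t\<in>trs A. tg t \<noteq> 0" using inv unfolding ainv_def by auto
  have sr0: "sr (ts!m) = 0 \<longleftrightarrow> m = 0" if "m < n" for m
  proof (cases m)
    case 0 then show ?thesis using P(2) by simp
  next
    case (Suc m')
    then have "sr (ts!m) = tg (ts!m')" using P(3) that by auto
    then show ?thesis using tg0 P(1) Suc that by auto
  qed
  define u where "u = (if n = 1 then cfin0 lt else cfin lt Is)"
  define \<rho> where "\<rho> = (\<lambda>k. if k < j then cnorm (ts!(k-i)) else u)"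
  have u_delta: "u \<in> delta (toT A)"
  proof (cases "n = 1")
    case True
    then have "\<forall>I\<in>set Is. in_ivl 0 I" using a(7) unfolding n_def by simp
    moreover have "sr lt = 0" using P(2) True unfolding lt_def by simp
    moreover have "lt \<in> trs A" using P(1) n1 unfolding lt_def by auto
    ultimately have "cfin0 lt \<in> cfins0 A" using a(6) P(4) unfolding cfins0_def by blast
    then show ?thesis using True unfolding u_def by simp
  next
    case False
    then have "sr lt \<noteq> 0" using sr0[of "n-1"] n1 unfolding lt_def by auto
    moreover have "lt \<in> trs A" using P(1) n1 unfolding lt_def by auto
    ultimately have "cfin lt Is \<in> cfins A" using a(6) P(4) unfolding cfins_def by blast
    then show ?thesis using False unfolding u_def by simp
  qed
  have rho: "\<rho> (i+m) = (if m < n - 1 then cnorm (ts!m) else u)" for m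
    unfolding \<rho>_def j_def using n1 by auto
  have lab: "\<forall>k<length ts. tlabels (\<rho> (i+k)) = lr (ts!k)"
  proof (intro allI impI)
    fix k assume k: "k < length ts"
    show "tlabels (\<rho> (i+k)) = lr (ts!k)"
    proof (cases "k < n - 1")
      case True then show ?thesis using rho[of k] by simp
    next
      case False then have "k = n - 1" using k unfolding n_def by auto
      then show ?thesis using rho[of k] unfolding u_def lt_def by auto
    qed
  qed
  have prd: "\<forall>k<length ts. tpred (\<rho> (i+k)) = pr (ts!k)"
  proof (intro allI impI)
    fix k assume k: "k < length ts"
    show "tpred (\<rho> (i+k)) = pr (ts!k)"
    proof (cases "k < n - 1")
      case True then show ?thesis using rho[of k] by simp
    next
      case False then have "k = n - 1" using k unfolding n_def by auto
      then show ?thesis using rho[of k] unfolding u_def lt_def by auto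
    qed
  qed
  have rst: "\<forall>k<length ts. tresets (\<rho> (i+k)) = (if lr (ts!k) = {} then {} else {0}) \<union> (if k = 0 then {1} else {})"
  proof (intro allI impI)
    fix k assume k: "k < length ts"
    have "tresets (\<rho> (i+k)) = rsets (sr (ts!k)) (lr (ts!k))"
    proof (cases "k < n - 1")
      case True then show ?thesis using rho[of k] by simp
    next
      case False then have kn: "k = n - 1" using k unfolding n_def by auto
      show ?thesis
      proof (cases "n = 1")
        case True then show ?thesis using rho[of k] kn sr0[of k] k unfolding u_def lt_def n_def by auto
      next
        case False then show ?thesis using rho[of k] kn unfolding u_def lt_def by auto
      qed
    qed
    then show "tresets (\<rho> (i+k)) = (if lr (ts!k) = {} then {} else {0}) \<union> (if k = 0 then {1} else {})"
      using sr0[of k] k unfolding rsets_eq n_def by auto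
  qed
  have R: "\<forall>m<n. ev S (i+m) \<in> pr (ts!m) \<and> gcond S (i+m) (lastp i None (take m ts)) (gr (ts!m))"
    using a(4) unfolding rok_nth n_def by simp
  have run: "is_run (toT A) S i j \<rho>"
    unfolding is_run_def
  proof (intro conjI ballI)
    show "1 \<le> i" "i \<le> j" "j \<le> length S" using a(2,3) n1 unfolding j_def n_def by auto
    show "tsrc (\<rho> i) = init (toT A)"
      using rho[of 0] P(2) n1 unfolding u_def lt_def by auto
  next
    fix k assume k: "k \<in> {i..j}"
    define m where "m = k - i"
    have km: "k = i + m" "m < n" using k n1 unfolding m_def j_def by auto
    show "\<rho> k \<in> delta (toT A)" using km u_delta P(1) rho[of m] by auto
    show "ev S k \<in> tpred (\<rho> k)" using km R prd unfolding n_def by auto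
    have G0: "models (vshift (vals S \<rho> i m) (of_rat (dt S (i+m)))) (gG 0 (gr (ts!m)))"
      using guard_corr(1)[OF tst a(2,3) km(2)[unfolded n_def] lab rst] R km(2) by blast
    show "models (vshift (vals S \<rho> i (k - i)) (of_rat (dt S k))) (tguard (\<rho> k))"
    proof (cases "m < n - 1")
      case True then show ?thesis using G0 km rho[of m] by (simp add: km(1))
    next
      case False
      then have mn: "m = n - 1" using km by auto
      show ?thesis
      proof (cases "n = 1")
        case True then show ?thesis using G0 km rho[of m] mn unfolding u_def lt_def by (simp add: km(1))
      next
        case nF: False
        have "models (vshift (vals S \<rho> i m) (of_rat (dt S (i+m)))) (gG 1 Is)"
          using guard_corr(2)[OF tst a(2,3) km(2)[unfolded n_def] lab rst, of Is] a(7) mn nF n1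
          unfolding n_def by auto
        then show ?thesis using G0 km rho[of m] mn nF unfolding u_def lt_def
          by (simp add: km(1) models_GAnd)
      qed
    qed
  next
    fix k assume k: "k \<in> {i..<j}"
    define m where "m = k - i"
    have km: "k = i + m" "m < n - 1" using k n1 unfolding m_def j_def by auto
    have "ttgt (\<rho> k) = 2 * sr (ts ! Suc m)" using km rho[of m] P(3) by auto
    moreover have "tsrc (\<rho> (Suc k)) = 2 * sr (ts ! Suc m)"
    proof (cases "Suc m < n - 1")
      case True then show ?thesis using km rho[of "Suc m"] by simp
    next
      case False
      then have sm: "Suc m = n - 1" "n \<noteq> 1" using km by auto
      have e: "Suc k = i + Suc m" using km by simp
      have "\<rho> (Suc k) = u" unfolding e rho using False by simp
      then show ?thesis using sm unfolding u_def lt_def by simp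
    qed
    ultimately show "ttgt (\<rho> k) = tsrc (\<rho> (Suc k))" by simp
  qed
  have fin: "ttgt (\<rho> j) \<in> final (toT A)" unfolding \<rho>_def u_def by simp
  have out: "run_output i j \<rho> = (i, i + length ts - 1, outmu i ts)"
  proof -
    have "{k \<in> {i..j}. X \<in> tlabels (\<rho> k)} = outmu i ts X" for X
    proof (intro set_eqI)
      fix k
      show "k \<in> {k \<in> {i..j}. X \<in> tlabels (\<rho> k)} \<longleftrightarrow> k \<in> outmu i ts X"
      proof (cases "i \<le> k \<and> k < i + length ts")
        case True
        then obtain m where m: "k = i + m" "m < length ts" by (metis add_diff_inverse_nat add_less_cancel_left not_le)
        then show ?thesis using lab n1 unfolding outmu_nth j_def n_def by auto
      next
        case False
        then show ?thesis using n1 unfolding outmu_nth j_def n_def by auto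
      qed
    qed
    then show ?thesis unfolding run_output_def j_def n_def by auto
  qed
  show ?thesis unfolding cea_sem_def
    by (intro CollectI exI[of _ i] exI[of _ j] exI[of _ \<rho>] conjI) (use run fin out in auto)
qed

lemma toT_sound:
  assumes inv: "ainv A" and tst: "timed_stream S" and run: "is_run (toT A) S i j \<rho>"
    and fin: "ttgt (\<rho> j) \<in> final (toT A)"
  shows "run_output i j \<rho> \<in> lang A S"
proof -
  have r: "1 \<le> i" "i \<le> j" "j \<le> length S" "tsrc (\<rho> i) = 0"
    "\<forall>k\<in>{i..j}. \<rho> k \<in> delta (toT A) \<and> ev S k \<in> tpred (\<rho> k) \<and>
         models (vshift (vals S \<rho> i (k - i)) (of_rat (dt S k))) (tguard (\<rho> k))"
    "\<forall>k\<in>{i..<j}. ttgt (\<rho> k) = tsrc (\<rho> (Suc k))"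
    using run unfolding is_run_def by auto
  have tg0: "\<forall>t\<in>trs A. tg t \<noteq> 0" using inv unfolding ainv_def by auto
  have srcz: "tsrc (\<rho> k) = 0 \<longleftrightarrow> k = i" if "k \<in> {i..j}" for k
  proof (cases "k = i")
    case True then show ?thesis using r(4) by simp
  next
    case False
    then have "k - 1 \<in> {i..<j}" "Suc (k - 1) = k" using that by auto
    then have "tsrc (\<rho> k) = ttgt (\<rho> (k - 1))" using r(6) by metis
    moreover have "\<rho> (k - 1) \<in> delta (toT A)" using r(5) \<open>k - 1 \<in> {i..<j}\<close> by auto
    ultimately show ?thesis using delta_props(2)[OF inv] False by auto
  qed
  have "\<forall>k\<in>{i..<j}. \<exists>t. t \<in> trs A \<and> \<rho> k = cnorm t"
  proof
    fix k assume k: "k \<in> {i..<j}"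
    have "\<rho> (Suc k) \<in> delta (toT A)" using r(5) k by auto
    then have "even (ttgt (\<rho> k))" using delta_props(3)[OF inv] r(6) k by auto
    moreover have "\<rho> k \<in> delta (toT A)" using r(5) k by auto
    ultimately show "\<exists>t. t \<in> trs A \<and> \<rho> k = cnorm t" unfolding toT_sel cfins_def cfins0_def by auto
  qed
  then obtain tt where tt: "\<forall>k\<in>{i..<j}. tt k \<in> trs A \<and> \<rho> k = cnorm (tt k)" by metis
  have "\<rho> j \<in> delta (toT A)" using r(5) r(2) by auto
  moreover have "ttgt (\<rho> j) = 1" using fin by simp
  ultimately obtain tj Is where tj: "tj \<in> trs A" "(tg tj, Is) \<in> fins A"
    "(sr tj \<noteq> 0 \<and> \<rho> j = cfin tj Is) \<or> (sr tj = 0 \<and> (\<forall>I\<in>set Is. in_ivl 0 I) \<and> \<rho> j = cfin0 tj)"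
    unfolding toT_sel cfins_def cfins0_def by auto
  have tjc: "(j = i \<and> sr tj = 0 \<and> (\<forall>I\<in>set Is. in_ivl 0 I) \<and> \<rho> j = cfin0 tj) \<or> (j \<noteq> i \<and> \<rho> j = cfin tj Is)"
    using tj(3) srcz[of j] r(2) by auto
  define n where "n = Suc j - i"
  define ts where "ts = map (\<lambda>k. if k < j then tt k else tj) [i..<Suc j]"
  have len: "length ts = n" unfolding ts_def n_def using r(2) by simp
  have n1: "n \<ge> 1" "j = i + n - 1" using r(2) unfolding n_def by auto
  have tsm: "ts ! m = (if m < n - 1 then tt (i+m) else tj)" if "m < n" for m
    using that n1 unfolding ts_def n_def by (auto simp: nth_map_upt simp del: upt_Suc)
  have rhom: "\<rho> (i+m) = (if m < n - 1 then cnorm (ts!m) else \<rho> j)" if "m < n" for m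
  proof (cases "m < n - 1")
    case True then show ?thesis using that tsm[OF that] tt n1 by auto
  next
    case False then have "i + m = j" using that n1 by auto
    then show ?thesis using False by simp
  qed
  have lab: "\<forall>k<length ts. tlabels (\<rho> (i+k)) = lr (ts!k)"
  proof (intro allI impI)
    fix k assume k: "k < length ts"
    show "tlabels (\<rho> (i+k)) = lr (ts!k)"
    proof (cases "k < n - 1")
      case True then show ?thesis using rhom[of k] k len by simp
    next
      case False then have "k = n - 1" using k len by auto
      then show ?thesis using rhom[of k] tsm[of k] k len tjc by auto
    qed
  qed
  have prd: "\<forall>k<length ts. tpred (\<rho> (i+k)) = pr (ts!k)"
  proof (intro allI impI)
    fix k assume k: "k < length ts"
    show "tpred (\<rho> (i+k)) = pr (ts!k)"
    proof (cases "k < n - 1")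
      case True then show ?thesis using rhom[of k] k len by simp
    next
      case False then have "k = n - 1" using k len by auto
      then show ?thesis using rhom[of k] tsm[of k] k len tjc by auto
    qed
  qed
  have rst: "\<forall>k<length ts. tresets (\<rho> (i+k)) = (if lr (ts!k) = {} then {} else {0}) \<union> (if k = 0 then {1} else {})"
  proof (intro allI impI)
    fix k assume k: "k < length ts"
    then have "i + k \<in> {i..j}" using len n1 by auto
    then have "tresets (\<rho> (i+k)) = (if tlabels (\<rho> (i+k)) = {} then {} else {0}) \<union> (if tsrc (\<rho> (i+k)) = 0 then {1} else {})"
      "tsrc (\<rho> (i+k)) = 0 \<longleftrightarrow> k = 0"
      using delta_props(1)[OF inv] r(5) srcz[of "i+k"] by auto
    then show "tresets (\<rho> (i+k)) = (if lr (ts!k) = {} then {} else {0}) \<union> (if k = 0 then {1} else {})"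
      using lab k by auto
  qed
  have bnd: "i + length ts \<le> Suc (length S)" using len n1 r(3) by auto
  have G: "models (vshift (vals S \<rho> i m) (of_rat (dt S (i+m)))) (tguard (\<rho> (i+m)))"
    "ev S (i+m) \<in> pr (ts!m)" if "m < n" for m
  proof -
    have "i + m \<in> {i..j}" using that n1 by auto
    then have "ev S (i+m) \<in> tpred (\<rho> (i+m)) \<and>
         models (vshift (vals S \<rho> i (i + m - i)) (of_rat (dt S (i+m)))) (tguard (\<rho> (i+m)))"
      using r(5) by blast
    then show "models (vshift (vals S \<rho> i m) (of_rat (dt S (i+m)))) (tguard (\<rho> (i+m)))"
      "ev S (i+m) \<in> pr (ts!m)" using prd that len by auto
  qed
  have rk: "rok S i None ts"
    unfolding rok_nth
  proof (intro allI impI conjI)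
    fix m assume m: "m < length ts"
    show "ev S (i+m) \<in> pr (ts!m)" using G(2) m len by auto
    have g0: "models (vshift (vals S \<rho> i m) (of_rat (dt S (i+m)))) (gG 0 (gr (ts!m)))"
    proof (cases "m < n - 1")
      case True then show ?thesis using G(1)[of m] rhom[of m] m len by simp
    next
      case False then have "m = n - 1" using m len by auto
      then show ?thesis using G(1)[of m] rhom[of m] tsm[of m] m len tjc by (auto simp: models_GAnd)
    qed
    then show "gcond S (i+m) (lastp i None (take m ts)) (gr (ts!m))"
      using guard_corr(1)[OF tst r(1) bnd m lab rst] by blast
  qed
  have win: "\<forall>I\<in>set Is. in_ivl (tm S (i + length ts - 1) - tm S i) I"
  proof (cases "j = i")
    case True then show ?thesis using tjc len n1 by auto
  next
    case False
    then have "n - 1 > 0" "n - 1 < n" using n1 by auto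
    then have "models (vshift (vals S \<rho> i (n-1)) (of_rat (dt S (i+(n-1))))) (gG 1 Is)"
      using G(1)[of "n-1"] rhom[of "n-1"] tjc False by (auto simp: models_GAnd)
    then show ?thesis using guard_corr(2)[OF tst r(1) bnd _ lab rst, of "n-1" Is] len \<open>n - 1 > 0\<close> \<open>n - 1 < n\<close>
      by auto
  qed
  have pth: "path (trs A) 0 ts (tg tj)"
    unfolding path_nth
  proof (intro disjI2 conjI allI impI)
    show "ts \<noteq> []" using len n1 by auto
  next
    fix m assume m: "m < length ts"
    then show "ts ! m \<in> trs A" using tsm[of m] tt tj(1) len n1 by auto
  next
    show "sr (ts ! 0) = 0"
    proof (cases "0 < n - 1")
      case True
      then have "\<rho> i = cnorm (ts ! 0)" using rhom[of 0] n1 by simp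
      then show ?thesis using r(4) by simp
    next
      case False then have "j = i" using n1 by auto
      then show ?thesis using tjc tsm[of 0] n1 False by auto
    qed
  next
    fix m assume m: "Suc m < length ts"
    then have "i + m \<in> {i..<j}" using len n1 by auto
    then have e: "ttgt (\<rho> (i+m)) = tsrc (\<rho> (Suc (i+m)))" using r(6) by blast
    have "m < n - 1" using m len by simp
    then have a: "ttgt (\<rho> (i+m)) = 2 * tg (ts!m)" using rhom[of m] m len by simp
    have b: "tsrc (\<rho> (Suc (i+m))) = 2 * sr (ts!Suc m)"
    proof (cases "Suc m < n - 1")
      case True then show ?thesis using rhom[of "Suc m"] by simp
    next
      case False
      then have "Suc m = n - 1" using m len by auto
      then have "j \<noteq> i" "Suc (i+m) = j" using n1 by auto
      then have "j \<noteq> i" "\<rho> (Suc (i+m)) = \<rho> j" by auto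
      then show ?thesis using tjc tsm[of "Suc m"] \<open>Suc m = n - 1\<close> n1 by auto
    qed
    show "tg (ts ! m) = sr (ts ! Suc m)" using e a b by simp
  next
    show "tg (ts ! (length ts - 1)) = tg tj" using tsm[of "n-1"] len n1 by simp
  qed
  have ac: "acc A S i ts" unfolding acc_def
    using len n1 r(1) bnd rk pth tj(2) win by (intro conjI exI[of _ "tg tj"] exI[of _ Is]) auto
  have out: "run_output i j \<rho> = (i, i + length ts - 1, outmu i ts)"
  proof -
    have "{k \<in> {i..j}. X \<in> tlabels (\<rho> k)} = outmu i ts X" for X
    proof (intro set_eqI)
      fix k
      show "k \<in> {k \<in> {i..j}. X \<in> tlabels (\<rho> k)} \<longleftrightarrow> k \<in> outmu i ts X"
      proof (cases "i \<le> k \<and> k < i + length ts")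
        case True
        then obtain m where m: "k = i + m" "m < length ts" by (metis add_diff_inverse_nat add_less_cancel_left not_le)
        then show ?thesis using lab n1 len unfolding outmu_nth by auto
      next
        case False
        then show ?thesis using n1 len unfolding outmu_nth by auto
      qed
    qed
    then show ?thesis unfolding run_output_def using n1 len by auto
  qed
  show ?thesis unfolding lang_def using ac out by blast
qed

lemma toT_sem:
  assumes "ainv A" "timed_stream S"
  shows "cea_sem (toT A) S = lang A S"
proof
  show "cea_sem (toT A) S \<subseteq> lang A S"
    unfolding cea_sem_def using toT_sound[OF assms] by blast
  show "lang A S \<subseteq> cea_sem (toT A) S"
    unfolding lang_def using toT_complete[OF assms] by blast
qed

theorem theorem4:
  fixes tp :: "'ev \<Rightarrow> 'x::finite" and T :: "'x set" and Ps :: "'ev set set"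
    and \<phi> :: "('x, 'ev) tcel"
  assumes types: "\<forall>e. tp e \<in> T"
    and P_univ: "UNIV \<in> Ps"
    and P_int: "\<forall>P\<in>Ps. \<forall>P'\<in>Ps. P \<inter> P' \<in> Ps"
    and P_compl: "\<forall>P\<in>Ps. - P \<in> Ps"
    and P_types: "\<forall>R\<in>T. {e. tp e = R} \<in> Ps"
    and wf: "cel_wf T Ps \<phi>"
    and win: "windowed \<phi>"
  shows "\<exists>A :: (nat, nat, 'x, 'ev) tcea.
           tcea_wf Ps A \<and> card (clocks A) = 2 \<and> sync_resets A \<and>
           (\<forall>S. timed_stream S \<longrightarrow> cea_sem A S = cel_sem tp S \<phi>)"
proof -
  obtain A :: "('x, 'ev) aut" where A: "ainv A" "wfA Ps A" "\<forall>S. lang A S = cel_sem tp S \<phi>"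
    using windowed_aut[OF P_univ P_int P_types win wf] by blast
  have "tcea_wf Ps (toT A)" by (rule toT_wf[OF A(1,2)])
  moreover have "card (clocks (toT A)) = 2" by simp
  moreover have "sync_resets (toT A)" by (rule toT_sync[OF A(1)])
  moreover have "\<forall>S. timed_stream S \<longrightarrow> cea_sem (toT A) S = cel_sem tp S \<phi>"
    using toT_sem[OF A(1)] A(3) by simp
  ultimately show ?thesis by blast
qed

end
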